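(* Let $1/n\ll\varepsilon\ll\varepsilon'\ll d'\ll\gamma\ll d,1/\Lambda,1/r,1/\Delta$. Suppose $(H,G,(X_i)_{i\in[r]},(V_i)_{i\in[r]})$ is an $(\varepsilon,d)$-super-regular blow-up instance. Assume further that (i) $\Delta(H)\le\Delta$ and $e_H(X_i,X_j)\ge\gamma^2n$ for all $ij\in\binom{[r]}{2}$; (ii) $|V_i|=(1\pm\varepsilon)n$ for all $i\in[r]$; (iii) $c\colon E(G)\to C$ is locally $\Lambda$-bounded and for all $\alpha\in C$, $$\sum_{ij\in\binom{[r]}{2}}e^\alpha_G(V_i,V_j)\,e_H(X_i,X_j)\le(1-\gamma)dn^2.$$ Then there exists a spanning subgraph $G'$ of $G$ such that (a) $(H,G',(X_i)_{i\in[r]},(V_i)_{i\in[r]})$ is an $(\varepsilon',d')$-super-regular blow-up instance; (b) $c$ restricted to $G'$ is colour-split with respect to $(V_i)_{i\in[r]}$; (c) $c$ restricted to $G'[V_i,V_j]$ is $(1-\frac{\gamma}{2})\frac{e_{G'}(V_i,V_j)}{e_H(X_i,X_j)}$-bounded for all $ij\in\binom{[r]}{2}$.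
   Context: Hierarchy convention: $a\ll b$ means there is an increasing function $f$ such that the statement holds whenever $a\le f(b)$; longer hierarchies are read right to left, each constant sufficiently small relative to those to its right. Write $a=b\pm c$ for $a\in[b-c,b+c]$. For disjoint vertex sets $S,T$, $e_G(S,T)$ is the number of edges between them, $d_G(S,T)=e_G(S,T)/(|S||T|)$, $e^\alpha_G(S,T)$ the number of such edges of colour $\alpha$, and $G[S,T]$ the bipartite subgraph of edges between $S$ and $T$. A bipartite graph with classes $(V_1,V_2)$ is $(\varepsilon,d)$-super-regular if $d_G(S,T)=d\pm\varepsilon$ for all $S\subseteq V_1,T\subseteq V_2$ with $|S|\ge\varepsilon|V_1|,|T|\ge\varepsilon|V_2|$, and $\deg_G(v)=(d\pm\varepsilon)|V_{3-i}|$ for all $v\in V_i$, $i\in[2]$. $(H,G,(X_i)_{i\in[r]},(V_i)_{i\in[r]})$ is an $(\varepsilon,d)$-super-regular blow-up instance if $(X_i)$ partitions $V(H)$ into independent sets, $(V_i)$ partitions $V(G)$, $|X_i|=|V_i|$, and every $G[V_i,V_j]$, $i\ne j$, is $(\varepsilon,d)$-super-regular. A colouring is $k$-bounded if every colour appears on at most $k$ edges, locally $\Lambda$-bounded if every colour class has maximum degree at most $\Lambda$. A colouring $c$ of $G$ is colour-split with respect to a partition $(V_i)_{i\in[r]}$ of $V(G)$ if $c(e)\neq c(f)$ whenever $e\in E(G[V_i,V_j])$ and $f\notin E(G[V_i,V_j])$ for some $i\ne j$. *)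

theory Defs
  imports Complex_Main "HOL-Library.Disjoint_Sets"
begin

definition simple_graph :: "'a set \<Rightarrow> 'a set set \<Rightarrow> bool" where
  "simple_graph V E \<longleftrightarrow> finite V \<and>
     (\<forall>e\<in>E. \<exists>u v. e = {u, v} \<and> u \<noteq> v \<and> u \<in> V \<and> v \<in> V)"

definition edges_between :: "'a set set \<Rightarrow> 'a set \<Rightarrow> 'a set \<Rightarrow> 'a set set" where
  "edges_between E S T = {e\<in>E. \<exists>u\<in>S. \<exists>v\<in>T. e = {u, v}}"

definition e_betw :: "'a set set \<Rightarrow> 'a set \<Rightarrow> 'a set \<Rightarrow> nat" where
  "e_betw E S T = card (edges_between E S T)"

definition dens :: "'a set set \<Rightarrow> 'a set \<Rightarrow> 'a set \<Rightarrow> real" where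
  "dens E S T = real (e_betw E S T) / (real (card S) * real (card T))"

definition e_col :: "('a set \<Rightarrow> 'c) \<Rightarrow> 'c \<Rightarrow> 'a set set \<Rightarrow> 'a set \<Rightarrow> 'a set \<Rightarrow> nat" where
  "e_col c \<alpha> E S T = card {e \<in> edges_between E S T. c e = \<alpha>}"

definition deg_into :: "'a set set \<Rightarrow> 'a \<Rightarrow> 'a set \<Rightarrow> nat" where
  "deg_into E v T = card {u\<in>T. {u, v} \<in> E}"

definition super_regular ::
  "'a set set \<Rightarrow> 'a set \<Rightarrow> 'a set \<Rightarrow> real \<Rightarrow> real \<Rightarrow> bool" where
  "super_regular E A B \<epsilon> d \<longleftrightarrow>
     (\<forall>S T. S \<subseteq> A \<longrightarrow> T \<subseteq> B \<longrightarrow> real (card S) \<ge> \<epsilon> * real (card A)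
        \<longrightarrow> real (card T) \<ge> \<epsilon> * real (card B)
        \<longrightarrow> \<bar>dens E S T - d\<bar> \<le> \<epsilon>) \<and>
     (\<forall>v\<in>A. \<bar>real (deg_into E v B) - d * real (card B)\<bar> \<le> \<epsilon> * real (card B)) \<and>
     (\<forall>v\<in>B. \<bar>real (deg_into E v A) - d * real (card A)\<bar> \<le> \<epsilon> * real (card A))"

definition independent :: "'a set set \<Rightarrow> 'a set \<Rightarrow> bool" where
  "independent E S \<longleftrightarrow> (\<forall>e\<in>E. \<not> e \<subseteq> S)"

definition blowup_instance ::
  "'a set \<Rightarrow> 'a set set \<Rightarrow> 'b set \<Rightarrow> 'b set set \<Rightarrow> nat \<Rightarrow> (nat \<Rightarrow> 'a set)
    \<Rightarrow> (nat \<Rightarrow> 'b set) \<Rightarrow> real \<Rightarrow> real \<Rightarrow> bool" where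
  "blowup_instance VH EH VG EG r X V \<epsilon> d \<longleftrightarrow>
     simple_graph VH EH \<and> simple_graph VG EG \<and>
     disjoint_family_on X {1..r} \<and> (\<Union>i\<in>{1..r}. X i) = VH \<and>
     (\<forall>i\<in>{1..r}. independent EH (X i)) \<and>
     disjoint_family_on V {1..r} \<and> (\<Union>i\<in>{1..r}. V i) = VG \<and>
     (\<forall>i\<in>{1..r}. card (X i) = card (V i)) \<and>
     (\<forall>i\<in>{1..r}. \<forall>j\<in>{1..r}. i \<noteq> j \<longrightarrow>
        super_regular (edges_between EG (V i) (V j)) (V i) (V j) \<epsilon> d)"

definition max_degree_le :: "'a set \<Rightarrow> 'a set set \<Rightarrow> nat \<Rightarrow> bool" where
  "max_degree_le V E \<Delta> \<longleftrightarrow> (\<forall>v\<in>V. card {e\<in>E. v \<in> e} \<le> \<Delta>)"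

definition k_bounded :: "('a set \<Rightarrow> 'c) \<Rightarrow> 'a set set \<Rightarrow> real \<Rightarrow> bool" where
  "k_bounded c E k \<longleftrightarrow> (\<forall>\<alpha>. real (card {e\<in>E. c e = \<alpha>}) \<le> k)"

definition locally_bounded :: "('a set \<Rightarrow> 'c) \<Rightarrow> 'a set set \<Rightarrow> nat \<Rightarrow> bool" where
  "locally_bounded c E \<Lambda> \<longleftrightarrow> (\<forall>\<alpha> v. card {e\<in>E. c e = \<alpha> \<and> v \<in> e} \<le> \<Lambda>)"

definition colour_split :: "('a set \<Rightarrow> 'c) \<Rightarrow> 'a set set \<Rightarrow> nat \<Rightarrow> (nat \<Rightarrow> 'a set) \<Rightarrow> bool" where
  "colour_split c E r V \<longleftrightarrow>
     (\<forall>i\<in>{1..r}. \<forall>j\<in>{1..r}. i \<noteq> j \<longrightarrow>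
        (\<forall>e\<in>edges_between E (V i) (V j). \<forall>f\<in>E - edges_between E (V i) (V j). c e \<noteq> c f))"

definition pairs :: "nat \<Rightarrow> (nat \<times> nat) set" where
  "pairs r = {(i, j). i \<in> {1..r} \<and> j \<in> {1..r} \<and> i < j}"

end

theory Submission
  imports Defs "HOL-Probability.Probability"
begin

lemma sq_sum_le_card:
  fixes f :: "'x \<Rightarrow> real"
  shows "(\<Sum>x\<in>X. f x)^2 \<le> real (card X) * (\<Sum>x\<in>X. (f x)^2)"
  using sum_squared_le_sum_of_squares[of f X] by (simp add: mult.commute)

lemma crit_alg:
  fixes a :: "'u \<Rightarrow> 'w \<Rightarrow> real"
  assumes A: "finite A" and B: "finite B" and SA: "S \<subseteq> A" and TB: "T \<subseteq> B"
  shows "(\<Sum>u\<in>S. \<Sum>w\<in>T. a u w - d)^4 \<le> (real (card A))^2 * (real (card B))^2 *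
          (\<Sum>w\<in>B. \<Sum>w'\<in>B. (\<Sum>u\<in>A. (a u w - d) * (a u w' - d))^2)"
proof -
  define h where "h u = (\<Sum>w\<in>T. a u w - d)" for u
  define g where "g w w' = (\<Sum>u\<in>A. (a u w - d) * (a u w' - d))" for w w'
  define D where "D = (\<Sum>u\<in>S. h u)"
  have fS: "finite S" using SA A finite_subset by blast
  have fT: "finite T" using TB B finite_subset by blast
  have "D^2 \<le> real (card S) * (\<Sum>u\<in>S. (h u)^2)" unfolding D_def by (rule sq_sum_le_card)
  also have "\<dots> \<le> real (card A) * (\<Sum>u\<in>A. (h u)^2)"
  proof (rule mult_mono)
    show "real (card S) \<le> real (card A)" using card_mono[OF A SA] by simp
    show "(\<Sum>u\<in>S. (h u)^2) \<le> (\<Sum>u\<in>A. (h u)^2)"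
      by (rule sum_mono2[OF A SA]) auto
  qed (auto intro: sum_nonneg)
  also have hg: "(\<Sum>u\<in>A. (h u)^2) = (\<Sum>w\<in>T. \<Sum>w'\<in>T. g w w')"
  proof -
    have "(\<Sum>u\<in>A. (h u)^2) = (\<Sum>u\<in>A. \<Sum>w\<in>T. \<Sum>w'\<in>T. (a u w - d) * (a u w' - d))"
      unfolding h_def power2_eq_square by (simp add: sum_product)
    also have "\<dots> = (\<Sum>w\<in>T. \<Sum>u\<in>A. \<Sum>w'\<in>T. (a u w - d) * (a u w' - d))"
      by (rule sum.swap)
    also have "\<dots> = (\<Sum>w\<in>T. \<Sum>w'\<in>T. \<Sum>u\<in>A. (a u w - d) * (a u w' - d))"
      by (intro sum.cong refl sum.swap)
    finally show ?thesis unfolding g_def .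
  qed
  finally have D2: "D^2 \<le> real (card A) * (\<Sum>w\<in>T. \<Sum>w'\<in>T. g w w')" .
  have Gnn: "0 \<le> (\<Sum>w\<in>T. \<Sum>w'\<in>T. g w w')"
    unfolding hg[symmetric] by (intro sum_nonneg) auto
  have "(\<Sum>w\<in>T. \<Sum>w'\<in>T. g w w')^2 = (\<Sum>p\<in>T\<times>T. g (fst p) (snd p))^2"
    by (simp add: sum.cartesian_product case_prod_beta)
  also have "\<dots> \<le> real (card (T\<times>T)) * (\<Sum>p\<in>T\<times>T. (g (fst p) (snd p))^2)"
    by (rule sq_sum_le_card)
  also have "\<dots> \<le> real (card (B\<times>B)) * (\<Sum>p\<in>B\<times>B. (g (fst p) (snd p))^2)"
  proof (rule mult_mono)
    show "real (card (T\<times>T)) \<le> real (card (B\<times>B))"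
      using card_mono[of "B\<times>B" "T\<times>T"] B TB by (auto simp flip: of_nat_mult)
    show "(\<Sum>p\<in>T\<times>T. (g (fst p) (snd p))^2) \<le> (\<Sum>p\<in>B\<times>B. (g (fst p) (snd p))^2)"
      by (rule sum_mono2) (use B TB in auto)
  qed (auto intro: sum_nonneg)
  also have "\<dots> = (real (card B))^2 * (\<Sum>w\<in>B. \<Sum>w'\<in>B. (g w w')^2)"
    by (simp add: sum.cartesian_product case_prod_beta card_cartesian_product power2_eq_square)
  finally have G2: "(\<Sum>w\<in>T. \<Sum>w'\<in>T. g w w')^2 \<le> (real (card B))^2 * (\<Sum>w\<in>B. \<Sum>w'\<in>B. (g w w')^2)" .
  have "D^4 = (D^2)^2" by simp
  also have "\<dots> \<le> (real (card A) * (\<Sum>w\<in>T. \<Sum>w'\<in>T. g w w'))^2"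
    using D2 by (intro power_mono) auto
  also have "\<dots> = (real (card A))^2 * (\<Sum>w\<in>T. \<Sum>w'\<in>T. g w w')^2" by (simp add: power_mult_distrib)
  also have "\<dots> \<le> (real (card A))^2 * ((real (card B))^2 * (\<Sum>w\<in>B. \<Sum>w'\<in>B. (g w w')^2))"
    using G2 by (intro mult_left_mono) auto
  finally show ?thesis unfolding D_def h_def g_def by simp
qed

lemma sq3: "((x::real) - y - z)^2 \<le> 3 * x^2 + 3 * y^2 + 3 * z^2"
proof -
  have eq: "3*x^2+3*y^2+3*z^2 - (x-y-z)^2 = (x+y)^2+(x+z)^2+(y-z)^2"
    by (simp add: power2_eq_square algebra_simps)
  have "0 \<le> (x+y)^2+(x+z)^2+(y-z)^2" by simp
  with eq show ?thesis by linarith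
qed

lemma crit_bound:
  fixes a :: "'u \<Rightarrow> 'w \<Rightarrow> real"
  assumes A: "finite A" and B: "finite B" and SA: "S \<subseteq> A" and TB: "T \<subseteq> B"
    and d: "0 \<le> d" "d \<le> 1"
    and degs: "\<forall>w\<in>B. \<bar>(\<Sum>u\<in>A. a u w) - d * real (card A)\<bar> \<le> \<theta> * real (card A)"
    and cod: "(\<Sum>w\<in>B. \<Sum>w'\<in>B. ((\<Sum>u\<in>A. a u w * a u w') - d^2 * real (card A))^2)
              \<le> \<delta> * (real (card A))^2 * (real (card B))^2"
  shows "(\<Sum>u\<in>S. \<Sum>w\<in>T. a u w - d)^4 \<le> (3 * \<delta> + 6 * \<theta>^2) * (real (card A))^4 * (real (card B))^4"
proof -
  define nA where "nA = real (card A)"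
  define nB where "nB = real (card B)"
  define X where "X w w' = (\<Sum>u\<in>A. a u w * a u w') - d^2 * nA" for w w'
  define Y where "Y w = (\<Sum>u\<in>A. a u w) - d * nA" for w
  have geq: "(\<Sum>u\<in>A. (a u w - d) * (a u w' - d)) = X w w' - d * Y w' - d * Y w" for w w'
    unfolding X_def Y_def nA_def
    by (simp add: algebra_simps sum.distrib sum_subtractf sum_distrib_left power2_eq_square)
  have Yb: "(d * Y w)^2 \<le> \<theta>^2 * nA^2" if "w \<in> B" for w
  proof -
    have "\<bar>d * Y w\<bar> \<le> \<theta> * nA"
    proof -
      have "\<bar>d * Y w\<bar> = d * \<bar>Y w\<bar>" using d by (simp add: abs_mult)
      also have "\<dots> \<le> 1 * \<bar>Y w\<bar>" using d by (intro mult_right_mono) auto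
      also have "\<dots> \<le> \<theta> * nA" using degs that unfolding Y_def nA_def by auto
      finally show ?thesis .
    qed
    then have "\<bar>d * Y w\<bar>^2 \<le> (\<theta> * nA)^2" by (intro power_mono) auto
    then show ?thesis by (simp add: power_mult_distrib)
  qed
  have "(\<Sum>w\<in>B. \<Sum>w'\<in>B. (\<Sum>u\<in>A. (a u w - d) * (a u w' - d))^2)
      \<le> (\<Sum>w\<in>B. \<Sum>w'\<in>B. 3 * (X w w')^2 + 6 * \<theta>^2 * nA^2)"
  proof (intro sum_mono)
    fix w w' assume w: "w \<in> B" and w': "w' \<in> B"
    have "(\<Sum>u\<in>A. (a u w - d) * (a u w' - d))^2 \<le> 3 * (X w w')^2 + 3 * (d * Y w')^2 + 3 * (d * Y w)^2"
      unfolding geq by (rule sq3)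
    also have "\<dots> \<le> 3 * (X w w')^2 + 6 * \<theta>^2 * nA^2" using Yb[OF w] Yb[OF w'] by simp
    finally show "(\<Sum>u\<in>A. (a u w - d) * (a u w' - d))^2 \<le> 3 * (X w w')^2 + 6 * \<theta>^2 * nA^2" .
  qed
  also have "\<dots> = 3 * (\<Sum>w\<in>B. \<Sum>w'\<in>B. (X w w')^2) + 6 * \<theta>^2 * nA^2 * nB^2"
    by (simp add: sum.distrib sum_distrib_left nB_def power2_eq_square algebra_simps)
  also have "\<dots> \<le> 3 * (\<delta> * nA^2 * nB^2) + 6 * \<theta>^2 * nA^2 * nB^2"
    using cod unfolding X_def nA_def nB_def by simp
  finally have H: "(\<Sum>w\<in>B. \<Sum>w'\<in>B. (\<Sum>u\<in>A. (a u w - d) * (a u w' - d))^2)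
      \<le> (3 * \<delta> + 6 * \<theta>^2) * nA^2 * nB^2" by (simp add: algebra_simps)
  have "(\<Sum>u\<in>S. \<Sum>w\<in>T. a u w - d)^4 \<le> nA^2 * nB^2 *
          (\<Sum>w\<in>B. \<Sum>w'\<in>B. (\<Sum>u\<in>A. (a u w - d) * (a u w' - d))^2)"
    unfolding nA_def nB_def by (rule crit_alg[OF A B SA TB])
  also have "\<dots> \<le> nA^2 * nB^2 * ((3 * \<delta> + 6 * \<theta>^2) * nA^2 * nB^2)"
    using H by (intro mult_left_mono) (auto simp: nA_def nB_def)
  finally show ?thesis by (simp add: nA_def nB_def algebra_simps power_def)
qed


definition adj :: "'a set set \<Rightarrow> 'a \<Rightarrow> 'a \<Rightarrow> real" where
  "adj E u w = (if {u, w} \<in> E then 1 else 0)"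

lemma adj_sym: "adj E u w = adj E w u"
  unfolding adj_def by (simp add: insert_commute)

lemma adj_01: "0 \<le> adj E u w" "adj E u w \<le> 1"
  unfolding adj_def by auto

lemma adj_sq: "adj E u w * adj E u w = adj E u w"
  unfolding adj_def by auto

lemma card_filter_sum: "finite A \<Longrightarrow> real (card {x\<in>A. P x}) = (\<Sum>x\<in>A. if P x then 1 else 0)"
proof -
  assume f: "finite A"
  have "{x\<in>A. P x} = A \<inter> Collect P" by blast
  then show ?thesis using f by (simp add: sum.If_cases)
qed

lemma edges_between_card:
  assumes disj: "S \<inter> T = {}"
  shows "card (edges_between F S T) = card {p\<in>S\<times>T. {fst p, snd p} \<in> F}"
proof -
  have "bij_betw (\<lambda>p. {fst p, snd p}) {p\<in>S\<times>T. {fst p, snd p} \<in> F} (edges_between F S T)"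
  proof (rule bij_betwI')
    fix x y assume x: "x \<in> {p\<in>S\<times>T. {fst p, snd p} \<in> F}" and y: "y \<in> {p\<in>S\<times>T. {fst p, snd p} \<in> F}"
    show "({fst x, snd x} = {fst y, snd y}) = (x = y)"
    proof
      assume eq: "{fst x, snd x} = {fst y, snd y}"
      have "fst x \<noteq> snd y" "snd x \<noteq> fst y" using x y disj by auto
      with eq have "fst x = fst y \<and> snd x = snd y" by (metis doubleton_eq_iff)
      then show "x = y" by (simp add: prod_eq_iff)
    qed simp
  next
    fix x assume "x \<in> {p\<in>S\<times>T. {fst p, snd p} \<in> F}"
    then have "fst x \<in> S" "snd x \<in> T" "{fst x, snd x} \<in> F" by auto
    then show "{fst x, snd x} \<in> edges_between F S T" unfolding edges_between_def by fast
  next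
    fix e assume "e \<in> edges_between F S T"
    then obtain u v where "u \<in> S" "v \<in> T" "e = {u, v}" "e \<in> F" unfolding edges_between_def by auto
    then show "\<exists>x\<in>{p\<in>S\<times>T. {fst p, snd p} \<in> F}. e = {fst x, snd x}"
      by (intro bexI[of _ "(u, v)"]) auto
  qed
  then show ?thesis by (rule bij_betw_same_card[symmetric])
qed

lemma e_betw_sum:
  assumes disj: "S \<inter> T = {}" and fS: "finite S" and fT: "finite T"
  shows "real (e_betw F S T) = (\<Sum>u\<in>S. \<Sum>w\<in>T. adj F u w)"
proof -
  have "real (e_betw F S T) = real (card {p\<in>S\<times>T. {fst p, snd p} \<in> F})"
    unfolding e_betw_def using edges_between_card[OF disj] by simp
  also have "\<dots> = (\<Sum>p\<in>S\<times>T. if {fst p, snd p} \<in> F then 1 else 0)"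
    using fS fT by (intro card_filter_sum) auto
  also have "\<dots> = (\<Sum>u\<in>S. \<Sum>w\<in>T. adj F u w)"
    by (simp add: sum.cartesian_product adj_def case_prod_beta)
  finally show ?thesis .
qed

lemma edges_between_edges_between:
  assumes "S \<subseteq> X" "T \<subseteq> Y"
  shows "edges_between (edges_between E X Y) S T = edges_between E S T"
  using assms unfolding edges_between_def by blast

lemma adj_edges_between:
  assumes "u \<in> X" "w \<in> Y"
  shows "adj (edges_between E X Y) u w = adj E u w"
  using assms unfolding adj_def edges_between_def by auto

lemma deg_into_sum:
  assumes fT: "finite T"
  shows "real (deg_into F v T) = (\<Sum>u\<in>T. adj F v u)"
proof -
  have "real (deg_into F v T) = (\<Sum>u\<in>T. if {u, v} \<in> F then 1 else 0)"
    unfolding deg_into_def using fT by (rule card_filter_sum)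
  then show ?thesis by (simp add: adj_def insert_commute)
qed

lemma deg_into_eb1:
  assumes "v \<in> X" "finite Y"
  shows "real (deg_into (edges_between E X Y) v Y) = (\<Sum>u\<in>Y. adj E v u)"
  using assms by (simp add: deg_into_sum adj_edges_between)

lemma deg_into_eb2:
  assumes "v \<in> Y" "finite X"
  shows "real (deg_into (edges_between E X Y) v X) = (\<Sum>u\<in>X. adj E u v)"
  using assms by (simp add: deg_into_sum adj_edges_between adj_sym[of _ v])

lemma pow4_abs_le:
  fixes D M :: real
  assumes "D^4 \<le> M^4" "0 \<le> M"
  shows "\<bar>D\<bar> \<le> M"
proof -
  have "\<bar>D\<bar>^4 = D^4" by (rule power_even_abs) simp
  then have "\<bar>D\<bar>^4 \<le> M^4" using assms by simp
  then show ?thesis using power_le_imp_le_base[of "\<bar>D\<bar>" 3 M] assms by simp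
qed

lemma sr_from_crit:
  fixes E :: "'a set set"
  assumes fX: "finite X" and fY: "finite Y" and disj: "X \<inter> Y = {}"
    and ne: "X \<noteq> {}" "Y \<noteq> {}"
    and d: "0 \<le> d" "d \<le> 1" and e: "0 < \<epsilon>" and th: "0 \<le> \<theta>" "\<theta> \<le> \<epsilon>"
    and small: "3 * \<delta> + 6 * \<theta>^2 \<le> \<epsilon>^12"
    and degX: "\<forall>v\<in>X. \<bar>(\<Sum>w\<in>Y. adj E v w) - d * real (card Y)\<bar> \<le> \<theta> * real (card Y)"
    and degY: "\<forall>w\<in>Y. \<bar>(\<Sum>u\<in>X. adj E u w) - d * real (card X)\<bar> \<le> \<theta> * real (card X)"
    and cod: "(\<Sum>w\<in>Y. \<Sum>w'\<in>Y. ((\<Sum>u\<in>X. adj E u w * adj E u w') - d^2 * real (card X))^2)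
              \<le> \<delta> * (real (card X))^2 * (real (card Y))^2"
  shows "super_regular (edges_between E X Y) X Y \<epsilon> d"
  unfolding super_regular_def
proof (intro conjI allI impI ballI)
  fix S T assume SX: "S \<subseteq> X" and TY: "T \<subseteq> Y"
    and cS: "\<epsilon> * real (card X) \<le> real (card S)" and cT: "\<epsilon> * real (card Y) \<le> real (card T)"
  define nX where "nX = real (card X)"
  define nY where "nY = real (card Y)"
  have nX: "nX > 0" using fX ne by (simp add: nX_def card_gt_0_iff)
  have nY: "nY > 0" using fY ne by (simp add: nY_def card_gt_0_iff)
  have fS: "finite S" using SX fX finite_subset by blast
  have fT: "finite T" using TY fY finite_subset by blast
  have dST: "S \<inter> T = {}" using SX TY disj by blast
  have sS: "real (card S) > 0" using cS mult_pos_pos[OF e nX] unfolding nX_def by linarith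
  have sT: "real (card T) > 0" using cT mult_pos_pos[OF e nY] unfolding nY_def by linarith
  define D where "D = (\<Sum>u\<in>S. \<Sum>w\<in>T. adj E u w - d)"
  have D4: "D^4 \<le> (3 * \<delta> + 6 * \<theta>^2) * nX^4 * nY^4"
    unfolding D_def nX_def nY_def
    by (rule crit_bound[OF fX fY SX TY d _ cod]) (use degY in auto)
  also have "\<dots> \<le> \<epsilon>^12 * nX^4 * nY^4"
    using small nX nY by (intro mult_right_mono) auto
  also have "\<dots> = (\<epsilon> * (\<epsilon> * nX) * (\<epsilon> * nY))^4"
  proof -
    have "\<epsilon>^12 = \<epsilon>^4 * \<epsilon>^4 * \<epsilon>^4" by (simp flip: power_add)
    then show ?thesis by (simp add: power_mult_distrib)
  qed
  also have "\<dots> \<le> (\<epsilon> * real (card S) * real (card T))^4"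
    using cS cT e nX nY unfolding nX_def nY_def
    by (intro power_mono mult_mono) (auto intro: mult_nonneg_nonneg)
  finally have "\<bar>D\<bar> \<le> \<epsilon> * real (card S) * real (card T)"
    by (rule pow4_abs_le) (use e in auto)
  moreover have "D = real (e_betw (edges_between E X Y) S T) - d * real (card S) * real (card T)"
  proof -
    have "real (e_betw (edges_between E X Y) S T) = (\<Sum>u\<in>S. \<Sum>w\<in>T. adj E u w)"
      unfolding e_betw_def edges_between_edges_between[OF SX TY]
      using e_betw_sum[OF dST fS fT, of E] unfolding e_betw_def by simp
    then show ?thesis unfolding D_def by (simp add: sum_subtractf)
  qed
  ultimately have "\<bar>real (e_betw (edges_between E X Y) S T) - d * (real (card S) * real (card T))\<bar>
      \<le> \<epsilon> * (real (card S) * real (card T))" by (simp add: algebra_simps)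
  then have "\<bar>real (e_betw (edges_between E X Y) S T) / (real (card S) * real (card T)) - d\<bar> \<le> \<epsilon>"
    using sS sT by (simp add: abs_le_iff field_simps)
  then show "\<bar>dens (edges_between E X Y) S T - d\<bar> \<le> \<epsilon>" unfolding dens_def .
next
  fix v assume v: "v \<in> X"
  show "\<bar>real (deg_into (edges_between E X Y) v Y) - d * real (card Y)\<bar> \<le> \<epsilon> * real (card Y)"
  proof -
    have "\<theta> * real (card Y) \<le> \<epsilon> * real (card Y)" using th by (intro mult_right_mono) auto
    then show ?thesis using degX v deg_into_eb1[OF v fY, of E] by auto
  qed
next
  fix v assume v: "v \<in> Y"
  show "\<bar>real (deg_into (edges_between E X Y) v X) - d * real (card X)\<bar> \<le> \<epsilon> * real (card X)"
  proof -
    have "\<theta> * real (card X) \<le> \<epsilon> * real (card X)" using th by (intro mult_right_mono) auto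
    then show ?thesis using degY v deg_into_eb2[OF v fX, of E] by auto
  qed
qed


lemma sr_dens:
  assumes sr: "super_regular (edges_between E X Y) X Y \<epsilon> d"
    and fX: "finite X" and fY: "finite Y" and disj: "X \<inter> Y = {}"
    and SX: "S \<subseteq> X" and TY: "T \<subseteq> Y"
    and cS: "\<epsilon> * real (card X) \<le> real (card S)" and cT: "\<epsilon> * real (card Y) \<le> real (card T)"
    and Sne: "S \<noteq> {}" and Tne: "T \<noteq> {}"
  shows "\<bar>(\<Sum>u\<in>S. \<Sum>w\<in>T. adj E u w) - d * real (card S) * real (card T)\<bar>
           \<le> \<epsilon> * real (card S) * real (card T)"
proof -
  have fS: "finite S" using SX fX finite_subset by blast
  have fT: "finite T" using TY fY finite_subset by blast
  have dST: "S \<inter> T = {}" using SX TY disj by blast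
  have pS: "real (card S) > 0" using fS Sne by (simp add: card_gt_0_iff)
  have pT: "real (card T) > 0" using fT Tne by (simp add: card_gt_0_iff)
  have "\<bar>dens (edges_between E X Y) S T - d\<bar> \<le> \<epsilon>"
    using sr SX TY cS cT unfolding super_regular_def by blast
  moreover have "dens (edges_between E X Y) S T = (\<Sum>u\<in>S. \<Sum>w\<in>T. adj E u w) / (real (card S) * real (card T))"
    unfolding dens_def e_betw_def edges_between_edges_between[OF SX TY]
    using e_betw_sum[OF dST fS fT, of E] unfolding e_betw_def by simp
  ultimately have "\<bar>(\<Sum>u\<in>S. \<Sum>w\<in>T. adj E u w) / (real (card S) * real (card T)) - d\<bar> \<le> \<epsilon>" by simp
  then show ?thesis using pS pT by (simp add: abs_le_iff field_simps)
qed

lemma sr_deg2: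
  assumes sr: "super_regular (edges_between E X Y) X Y \<epsilon> d" and fX: "finite X" and w: "w \<in> Y"
  shows "\<bar>(\<Sum>u\<in>X. adj E u w) - d * real (card X)\<bar> \<le> \<epsilon> * real (card X)"
  using sr w deg_into_eb2[OF w fX, of E] unfolding super_regular_def by auto

lemma sr_deg1:
  assumes sr: "super_regular (edges_between E X Y) X Y \<epsilon> d" and fY: "finite Y" and v: "v \<in> X"
  shows "\<bar>(\<Sum>w\<in>Y. adj E v w) - d * real (card Y)\<bar> \<le> \<epsilon> * real (card Y)"
  using sr v deg_into_eb1[OF v fY, of E] unfolding super_regular_def by auto

lemma G_cod:
  assumes sr: "super_regular (edges_between E X Y) X Y \<epsilon> d"
    and fX: "finite X" and fY: "finite Y" and disj: "X \<inter> Y = {}"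
    and e: "0 < \<epsilon>" and d: "2 * \<epsilon> \<le> d" "d \<le> 1"
  shows "(\<Sum>w\<in>Y. \<Sum>w'\<in>Y. ((\<Sum>u\<in>X. adj E u w * adj E u w') - d^2 * real (card X))^2)
           \<le> 4 * \<epsilon> * (real (card X))^2 * (real (card Y))^2"
proof -
  define nX where "nX = real (card X)"
  define nY where "nY = real (card Y)"
  define cod where "cod w w' = (\<Sum>u\<in>X. adj E u w * adj E u w')" for w w'
  have nX0: "nX \<ge> 0" "nY \<ge> 0" by (auto simp: nX_def nY_def)
  have e2: "\<epsilon> \<le> 1/2" using d by simp
  have per_w: "(\<Sum>w'\<in>Y. (cod w w' - d^2 * nX)^2) \<le> 4 * \<epsilon> * nX^2 * nY" if w: "w \<in> Y" for w
  proof -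
    define N where "N = {u\<in>X. adj E u w = 1}"
    have NX: "N \<subseteq> X" unfolding N_def by auto
    have fN: "finite N" using NX fX finite_subset by blast
    have adj_w: "adj E u w = (if u \<in> N then 1 else 0)" if "u \<in> X" for u
      using that unfolding N_def adj_def by auto
    have degN: "(\<Sum>u\<in>X. adj E u w) = real (card N)"
    proof -
      have "(\<Sum>u\<in>X. adj E u w) = (\<Sum>u\<in>X. if u \<in> N then 1 else 0)" by (intro sum.cong) (auto simp: adj_w)
      also have "\<dots> = real (card N)" using fX NX by (simp add: sum.If_cases Int_absorb1)
      finally show ?thesis .
    qed
    have codN: "cod w w' = (\<Sum>u\<in>N. adj E u w')" for w'
    proof -
      have "cod w w' = (\<Sum>u\<in>X. if u \<in> N then adj E u w' else 0)"
        unfolding cod_def by (intro sum.cong) (auto simp: adj_w)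
      also have "\<dots> = (\<Sum>u\<in>N. adj E u w')" using fX NX by (simp add: sum.If_cases Int_absorb1)
      finally show ?thesis .
    qed
    have dN: "\<bar>real (card N) - d * nX\<bar> \<le> \<epsilon> * nX" using sr_deg2[OF sr fX w] degN nX_def by simp
    have Nbig: "\<epsilon> * nX \<le> real (card N)"
    proof -
      have "2 * \<epsilon> * nX \<le> d * nX" using d nX0 by (intro mult_right_mono) auto
      then show ?thesis using dN by (simp add: abs_le_iff algebra_simps)
    qed
    have codX: "0 \<le> cod w w'" "cod w w' \<le> nX" for w'
    proof -
      show "0 \<le> cod w w'" unfolding codN by (intro sum_nonneg adj_01)
      have "cod w w' \<le> (\<Sum>u\<in>N. 1)" unfolding codN by (intro sum_mono adj_01)
      also have "\<dots> \<le> nX" using card_mono[OF fX NX] by (simp add: nX_def)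
      finally show "cod w w' \<le> nX" .
    qed
    define Tp where "Tp = {w'\<in>Y. cod w w' > (d + \<epsilon>) * real (card N)}"
    define Tm where "Tm = {w'\<in>Y. cod w w' < (d - \<epsilon>) * real (card N)}"
    have TpY: "Tp \<subseteq> Y" and TmY: "Tm \<subseteq> Y" unfolding Tp_def Tm_def by auto
    have fTp: "finite Tp" and fTm: "finite Tm" using TpY TmY fY finite_subset by blast+
    have sumT: "(\<Sum>u\<in>N. \<Sum>w'\<in>T. adj E u w') = (\<Sum>w'\<in>T. cod w w')" for T
      unfolding codN by (rule sum.swap)
    have Tp_small: "real (card Tp) < \<epsilon> * nY"
    proof (rule ccontr)
      assume "\<not> ?thesis"
      then have cT: "\<epsilon> * nY \<le> real (card Tp)" by simp
      have Tpne: "Tp \<noteq> {}"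
      proof
        assume "Tp = {}"
        with cT have "\<epsilon> * nY \<le> 0" by simp
        moreover have "nY > 0" using w fY by (auto simp: nY_def card_gt_0_iff)
        ultimately show False using e by (simp add: mult_le_0_iff)
      qed
      have Nne: "N \<noteq> {}"
      proof
        assume N0: "N = {}"
        obtain w' where "w' \<in> Tp" using Tpne by blast
        then have "cod w w' > 0" unfolding Tp_def using N0 by simp
        then show False unfolding codN N0 by simp
      qed
      have "\<bar>(\<Sum>u\<in>N. \<Sum>w'\<in>Tp. adj E u w') - d * real (card N) * real (card Tp)\<bar>
           \<le> \<epsilon> * real (card N) * real (card Tp)"
        by (rule sr_dens[OF sr fX fY disj NX TpY _ _ Nne Tpne]) (use Nbig cT in \<open>auto simp: nX_def nY_def\<close>)
      moreover have "(\<Sum>w'\<in>Tp. cod w w') > (\<Sum>w'\<in>Tp. (d + \<epsilon>) * real (card N))"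
        by (rule sum_strict_mono[OF fTp Tpne]) (auto simp: Tp_def)
      ultimately show False unfolding sumT by (simp add: algebra_simps)
    qed
    have Tm_small: "real (card Tm) < \<epsilon> * nY"
    proof (rule ccontr)
      assume "\<not> ?thesis"
      then have cT: "\<epsilon> * nY \<le> real (card Tm)" by simp
      have Tmne: "Tm \<noteq> {}"
      proof
        assume "Tm = {}"
        with cT have "\<epsilon> * nY \<le> 0" by simp
        moreover have "nY > 0" using w fY by (auto simp: nY_def card_gt_0_iff)
        ultimately show False using e by (simp add: mult_le_0_iff)
      qed
      have Nne: "N \<noteq> {}"
      proof
        assume N0: "N = {}"
        obtain w' where "w' \<in> Tm" using Tmne by blast
        then have "cod w w' < 0" unfolding Tm_def using N0 by simp
        then show False using codX(1)[of w'] by linarith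
      qed
      have "\<bar>(\<Sum>u\<in>N. \<Sum>w'\<in>Tm. adj E u w') - d * real (card N) * real (card Tm)\<bar>
           \<le> \<epsilon> * real (card N) * real (card Tm)"
        by (rule sr_dens[OF sr fX fY disj NX TmY _ _ Nne Tmne]) (use Nbig cT in \<open>auto simp: nX_def nY_def\<close>)
      moreover have "(\<Sum>w'\<in>Tm. cod w w') < (\<Sum>w'\<in>Tm. (d - \<epsilon>) * real (card N))"
        by (rule sum_strict_mono[OF fTm Tmne]) (auto simp: Tm_def)
      ultimately show False unfolding sumT by (simp add: algebra_simps)
    qed
    define Bad where "Bad = Tp \<union> Tm"
    have fBad: "finite Bad" using fTp fTm by (simp add: Bad_def)
    have BadY: "Bad \<subseteq> Y" using TpY TmY by (simp add: Bad_def)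
    have cBad: "real (card Bad) \<le> 2 * \<epsilon> * nY"
    proof -
      have "card Bad \<le> card Tp + card Tm" unfolding Bad_def by (rule card_Un_le)
      then show ?thesis using Tp_small Tm_small by linarith
    qed
    have good: "(cod w w' - d^2 * nX)^2 \<le> 4 * \<epsilon>^2 * nX^2" if "w' \<in> Y" "w' \<notin> Bad" for w'
    proof -
      have c1: "\<bar>cod w w' - d * real (card N)\<bar> \<le> \<epsilon> * real (card N)"
        using that unfolding Bad_def Tp_def Tm_def by (auto simp: algebra_simps abs_le_iff)
      have c2: "\<epsilon> * real (card N) \<le> \<epsilon> * nX"
        using card_mono[OF fX NX] e by (simp add: nX_def)
      have c3: "\<bar>d * real (card N) - d^2 * nX\<bar> \<le> \<epsilon> * nX"
      proof -
        have "d * real (card N) - d^2 * nX = d * (real (card N) - d * nX)"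
          by (simp add: power2_eq_square right_diff_distrib mult.assoc)
        then have "\<bar>d * real (card N) - d^2 * nX\<bar> = d * \<bar>real (card N) - d * nX\<bar>"
          using d e by (simp add: abs_mult)
        also have "\<dots> \<le> 1 * (\<epsilon> * nX)" using dN d e by (intro mult_mono) auto
        finally show ?thesis by simp
      qed
      have "\<bar>cod w w' - d^2 * nX\<bar> \<le> 2 * \<epsilon> * nX" using c1 c2 c3 by linarith
      then have "\<bar>cod w w' - d^2 * nX\<bar>^2 \<le> (2 * \<epsilon> * nX)^2" by (intro power_mono) auto
      then show ?thesis by (simp add: power_mult_distrib)
    qed
    have bad: "(cod w w' - d^2 * nX)^2 \<le> nX^2" for w'
    proof -
      have "0 \<le> d^2 * nX" using nX0 by simp
      moreover have "d^2 * nX \<le> 1 * nX" using d e nX0 by (intro mult_right_mono) (auto simp: power_le_one)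
      ultimately have "\<bar>cod w w' - d^2 * nX\<bar> \<le> nX" using codX[of w'] by linarith
      then have "\<bar>cod w w' - d^2 * nX\<bar>^2 \<le> nX^2" by (intro power_mono) auto
      then show ?thesis by simp
    qed
    have "(\<Sum>w'\<in>Y. (cod w w' - d^2 * nX)^2) \<le> (\<Sum>w'\<in>Y. 4 * \<epsilon>^2 * nX^2 + (if w' \<in> Bad then nX^2 else 0))"
    proof (intro sum_mono)
      fix w' assume "w' \<in> Y"
      then show "(cod w w' - d^2 * nX)^2 \<le> 4 * \<epsilon>^2 * nX^2 + (if w' \<in> Bad then nX^2 else 0)"
      proof (cases "w' \<in> Bad")
        case True
        have "0 \<le> 4 * \<epsilon>^2 * nX^2" by simp
        then show ?thesis using True bad[of w'] by (simp only: if_True)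
      next
        case False
        then show ?thesis using good[of w'] \<open>w' \<in> Y\<close> by simp
      qed
    qed
    also have "\<dots> = nY * 4 * \<epsilon>^2 * nX^2 + real (card Bad) * nX^2"
      using fY BadY by (simp add: sum.distrib sum.If_cases Int_absorb1 nY_def)
    also have "\<dots> \<le> nY * 4 * \<epsilon>^2 * nX^2 + 2 * \<epsilon> * nY * nX^2"
      using cBad nX0 by (intro add_left_mono mult_right_mono) auto
    also have "\<dots> \<le> 4 * \<epsilon> * nX^2 * nY"
    proof -
      have "4 * \<epsilon>^2 \<le> 2 * \<epsilon>" using e e2 by (simp add: power2_eq_square)
      then have "nY * nX^2 * (4 * \<epsilon>^2) \<le> nY * nX^2 * (2 * \<epsilon>)" using nX0 by (intro mult_left_mono) auto
      then show ?thesis by (simp add: algebra_simps)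
    qed
    finally show ?thesis .
  qed
  have "(\<Sum>w\<in>Y. \<Sum>w'\<in>Y. (cod w w' - d^2 * nX)^2) \<le> (\<Sum>w\<in>Y. 4 * \<epsilon> * nX^2 * nY)"
    by (intro sum_mono per_w)
  also have "\<dots> = 4 * \<epsilon> * nX^2 * nY^2" by (simp add: nY_def power2_eq_square)
  finally show ?thesis unfolding cod_def nX_def nY_def .
qed


lemma exists_weight_pmf:
  fixes q :: "'x \<Rightarrow> real"
  assumes fP: "finite P" and z: "z \<notin> P" and q0: "\<forall>x\<in>P. 0 \<le> q x" and qs: "(\<Sum>x\<in>P. q x) \<le> 1"
  shows "\<exists>\<pi>. (\<forall>x\<in>P. pmf \<pi> x = q x) \<and> set_pmf \<pi> \<subseteq> insert z P"
proof -
  define f where "f x = (if x \<in> P then q x else if x = z then 1 - (\<Sum>y\<in>P. q y) else 0)" for x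
  have nn: "\<And>x. 0 \<le> f x" unfolding f_def using q0 qs by auto
  have "(\<integral>\<^sup>+x. ennreal (f x) \<partial>count_space UNIV) = (\<Sum>x\<in>insert z P. ennreal (f x))"
    by (rule nn_integral_count_space') (use fP in \<open>auto simp: f_def\<close>)
  also have "\<dots> = ennreal (\<Sum>x\<in>insert z P. f x)" using nn by (simp add: sum_ennreal)
  also have "(\<Sum>x\<in>insert z P. f x) = 1"
  proof -
    have "(\<Sum>x\<in>insert z P. f x) = f z + (\<Sum>x\<in>P. f x)" using fP z by simp
    also have "(\<Sum>x\<in>P. f x) = (\<Sum>x\<in>P. q x)" by (intro sum.cong) (auto simp: f_def)
    finally show ?thesis using z by (simp add: f_def)
  qed
  finally have int1: "(\<integral>\<^sup>+x. ennreal (f x) \<partial>count_space UNIV) = 1" by simp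
  define \<pi> where "\<pi> = embed_pmf f"
  have pmf\<pi>: "pmf \<pi> x = f x" for x unfolding \<pi>_def by (rule pmf_embed_pmf[OF nn int1])
  have "set_pmf \<pi> \<subseteq> insert z P"
  proof
    fix x assume "x \<in> set_pmf \<pi>"
    then have "pmf \<pi> x \<noteq> 0" by (simp add: set_pmf_eq)
    then show "x \<in> insert z P" unfolding pmf\<pi> f_def by (auto split: if_splits)
  qed
  moreover have "\<forall>x\<in>P. pmf \<pi> x = q x" using pmf\<pi> by (simp add: f_def)
  ultimately show ?thesis by blast
qed

definition coins :: "'e set \<Rightarrow> ('e \<Rightarrow> real) \<Rightarrow> ('e \<Rightarrow> bool) pmf" where
  "coins M pr = Pi_pmf M False (\<lambda>e. bernoulli_pmf (pr e))"

definition cdist :: "'e set \<Rightarrow> ('e \<Rightarrow> 'x) \<Rightarrow> 'x pmf \<Rightarrow> real \<Rightarrow> 'e set pmf" where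
  "cdist M cls sig p = map_pmf (\<lambda>(s, b). {e\<in>M. cls e = s \<and> b e})
      (pair_pmf sig (coins M (\<lambda>e. p / pmf sig (cls e))))"

lemma coins_prob:
  assumes "finite M" "e \<in> M" "0 \<le> pr e" "pr e \<le> 1"
  shows "measure_pmf.prob (coins M pr) {b. b e} = pr e"
proof -
  have "measure_pmf.prob (coins M pr) {b. b e} = measure_pmf.prob (map_pmf (\<lambda>b. b e) (coins M pr)) {True}"
    by (simp add: vimage_def)
  also have "map_pmf (\<lambda>b. b e) (coins M pr) = bernoulli_pmf (pr e)"
    unfolding coins_def using assms by (simp add: Pi_pmf_component)
  finally show ?thesis using assms by (simp add: measure_pmf_single)
qed

lemma cdist_support:
  assumes "S \<in> set_pmf (cdist M cls sig p)"
  shows "S \<subseteq> M" "\<And>e f. e \<in> S \<Longrightarrow> f \<in> S \<Longrightarrow> cls e = cls f"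
  using assms unfolding cdist_def by auto

lemma cdist_prob:
  assumes fM: "finite M" and e: "e \<in> M" and p: "0 \<le> p" and pq: "p \<le> pmf sig (cls e)"
    and q0: "0 < pmf sig (cls e)"
  shows "measure_pmf.prob (cdist M cls sig p) {S. e \<in> S} = p"
proof -
  let ?c = "coins M (\<lambda>e. p / pmf sig (cls e))"
  have "measure_pmf.prob (cdist M cls sig p) {S. e \<in> S}
      = measure_pmf.prob (pair_pmf sig ?c) ({cls e} \<times> {b. b e})"
    unfolding cdist_def using e by (auto intro!: arg_cong[where f="measure_pmf.prob _"])
  also have "\<dots> = measure_pmf.prob (map_pmf (\<lambda>(s, b). (s, b e)) (pair_pmf sig ?c)) ({cls e} \<times> {True})"
    by (auto intro!: arg_cong[where f="measure_pmf.prob _"])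
  also have "\<dots> = measure_pmf.prob (pair_pmf sig (map_pmf (\<lambda>b. b e) ?c)) ({cls e} \<times> {True})"
    using map_pair[of id "\<lambda>b. b e" sig ?c] by (simp add: id_def)
  also have "\<dots> = pmf sig (cls e) * measure_pmf.prob (map_pmf (\<lambda>b. b e) ?c) {True}"
    by (subst measure_pmf_prob_product) (auto simp: measure_pmf_single)
  also have "measure_pmf.prob (map_pmf (\<lambda>b. b e) ?c) {True} = measure_pmf.prob ?c {b. b e}"
    by (simp add: vimage_def)
  also have "measure_pmf.prob ?c {b. b e} = p / pmf sig (cls e)"
    by (rule coins_prob[OF fM e]) (use p pq q0 in auto)
  finally show ?thesis using q0 by simp
qed

lemma coins_exp:
  assumes "finite M" "e \<in> M" "0 \<le> pr e" "pr e \<le> 1"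
  shows "measure_pmf.expectation (coins M pr) (\<lambda>b. of_bool (b e)) = pr e"
proof -
  have "(\<lambda>b. of_bool (b e) :: real) = indicator {b. b e}" by (auto simp: indicator_def)
  then show ?thesis using coins_prob[of M e pr] assms by simp
qed

lemma coins_hoeffding:
  assumes fM: "finite M" and KM: "K \<subseteq> M" and Kne: "K \<noteq> {}"
    and pr: "\<forall>e\<in>K. 0 \<le> pr e \<and> pr e \<le> 1" and t: "0 \<le> t"
  shows "measure_pmf.prob (coins M pr) {b. (\<Sum>e\<in>K. of_bool (b e)) \<ge> (\<Sum>e\<in>K. pr e) + t}
           \<le> exp (- 2 * t^2 / real (card K))"
proof -
  have fK: "finite K" using KM fM finite_subset by blast
  have ind0: "prob_space.indep_vars (measure_pmf (coins M pr)) (\<lambda>_. count_space UNIV) (\<lambda>x f. f x) M"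
    unfolding coins_def by (rule indep_vars_Pi_pmf[OF fM])
  have ind1: "prob_space.indep_vars (measure_pmf (coins M pr)) (\<lambda>_. count_space UNIV) (\<lambda>x f. f x) K"
    by (rule prob_space.indep_vars_subset[OF measure_pmf.prob_space_axioms ind0 KM])
  have ind: "prob_space.indep_vars (measure_pmf (coins M pr)) (\<lambda>_. borel) (\<lambda>e b. of_bool (b e) :: real) K"
    by (rule prob_space.indep_vars_compose2[OF measure_pmf.prob_space_axioms ind1]) auto
  interpret H: Hoeffding_ineq "measure_pmf (coins M pr)" K "\<lambda>e b. of_bool (b e) :: real" "\<lambda>_. 0" "\<lambda>_. 1"
      "(\<Sum>e\<in>K. measure_pmf.expectation (coins M pr) (\<lambda>b. of_bool (b e)))"
    by unfold_locales (use fK ind in auto)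
  have mu: "(\<Sum>e\<in>K. measure_pmf.expectation (coins M pr) (\<lambda>b. of_bool (b e))) = (\<Sum>e\<in>K. pr e)"
    by (intro sum.cong refl coins_exp[OF fM]) (use KM pr in auto)
  have "(\<Sum>e\<in>K. ((1::real) - 0)^2) = real (card K)" by simp
  moreover have "real (card K) > 0" using fK Kne by (simp add: card_gt_0_iff)
  ultimately show ?thesis using H.Hoeffding_ineq_ge[OF t] unfolding mu by simp
qed

lemma cdist_tail:
  assumes fM: "finite M" and p: "0 \<le> p" and q0: "0 < pmf sig x" and pq: "p \<le> pmf sig x"
    and Kne: "{e\<in>M. cls e = x} \<noteq> {}" and t: "0 \<le> t"
  shows "measure_pmf.prob (cdist M cls sig p)
           {S. real (card {e\<in>S. cls e = x}) \<ge> real (card {e\<in>M. cls e = x}) * (p / pmf sig x) + t}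
         \<le> exp (- 2 * t^2 / real (card {e\<in>M. cls e = x}))"
proof -
  define K where "K = {e\<in>M. cls e = x}"
  define pr where "pr e = p / pmf sig (cls e)" for e
  let ?c = "coins M pr"
  have fK: "finite K" using fM by (simp add: K_def)
  have KM: "K \<subseteq> M" by (auto simp: K_def)
  have prK: "\<forall>e\<in>K. 0 \<le> pr e \<and> pr e \<le> 1" using p q0 pq by (auto simp: K_def pr_def)
  have sumK: "(\<Sum>e\<in>K. pr e) = real (card K) * (p / pmf sig x)" by (simp add: K_def pr_def)
  let ?B = "{b. (\<Sum>e\<in>K. of_bool (b e)) \<ge> (\<Sum>e\<in>K. pr e) + t}"
  have sub: "(\<lambda>(s, b). {e\<in>M. cls e = s \<and> b e}) -`
        {S. real (card {e\<in>S. cls e = x}) \<ge> real (card K) * (p / pmf sig x) + t} \<subseteq> snd -` ?B"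
  proof (intro subsetI)
    fix y assume y: "y \<in> (\<lambda>(s, b). {e\<in>M. cls e = s \<and> b e}) -`
        {S. real (card {e\<in>S. cls e = x}) \<ge> real (card K) * (p / pmf sig x) + t}"
    obtain s b where ysb: "y = (s, b)" by (cases y)
    have h: "real (card K) * (p / pmf sig x) + t \<le> real (card {e \<in> {e \<in> M. cls e = s \<and> b e}. cls e = x})"
      using y ysb by simp
    have "card {e \<in> {e \<in> M. cls e = s \<and> b e}. cls e = x} \<le> card {e\<in>K. b e}"
      by (rule card_mono) (use fM in \<open>auto simp: K_def\<close>)
    moreover have "real (card {e\<in>K. b e}) = (\<Sum>e\<in>K. of_bool (b e))"
      using fK by (simp add: card_filter_sum of_bool_def)
    ultimately have "(\<Sum>e\<in>K. pr e) + t \<le> (\<Sum>e\<in>K. of_bool (b e))"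
      using h sumK by linarith
    then show "y \<in> snd -` ?B" using ysb by simp
  qed
  have "measure_pmf.prob (cdist M cls sig p)
           {S. real (card {e\<in>S. cls e = x}) \<ge> real (card K) * (p / pmf sig x) + t}
      \<le> measure_pmf.prob (pair_pmf sig ?c) (snd -` ?B)"
    unfolding cdist_def pr_def[symmetric] measure_map_pmf
    by (rule measure_pmf.finite_measure_mono[OF sub]) simp
  also have "\<dots> = measure_pmf.prob (map_pmf snd (pair_pmf sig ?c)) ?B" by simp
  also have "\<dots> = measure_pmf.prob ?c ?B" by (simp add: map_snd_pair_pmf)
  also have "\<dots> \<le> exp (- 2 * t^2 / real (card K))"
    by (rule coins_hoeffding[OF fM KM _ prK t]) (use Kne in \<open>simp add: K_def\<close>)
  finally show ?thesis unfolding K_def .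
qed


lemma Pi_pmf_finite_support:
  assumes "finite A" "\<forall>a\<in>A. finite (set_pmf (D a))"
  shows "finite (set_pmf (Pi_pmf A dflt D))"
proof -
  have "set_pmf (Pi_pmf A dflt D) = PiE_dflt A dflt (set_pmf \<circ> D)" by (rule set_Pi_pmf[OF assms(1)])
  moreover have "finite (PiE_dflt A dflt (set_pmf \<circ> D))"
    by (rule finite_PiE_dflt) (use assms in auto)
  ultimately show ?thesis by simp
qed

lemma Pi_pmf_exp_component:
  fixes f :: "_ \<Rightarrow> real"
  assumes "finite A" "a \<in> A"
  shows "measure_pmf.expectation (Pi_pmf A dflt D) (\<lambda>\<omega>. f (\<omega> a)) = measure_pmf.expectation (D a) f"
proof -
  have h: "D a = map_pmf (\<lambda>\<omega>. \<omega> a) (Pi_pmf A dflt D)" using Pi_pmf_component[OF assms(1), of a dflt D] assms(2) by simp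
  show ?thesis unfolding h by (rule integral_map_pmf[symmetric])
qed

lemma Pi_pmf_prob_component:
  assumes "finite A" "a \<in> A"
  shows "measure_pmf.prob (Pi_pmf A dflt D) {\<omega>. \<omega> a \<in> X} = measure_pmf.prob (D a) X"
proof -
  have "D a = map_pmf (\<lambda>\<omega>. \<omega> a) (Pi_pmf A dflt D)" using Pi_pmf_component[OF assms(1), of a dflt D] assms(2) by simp
  then show ?thesis by (simp add: vimage_def)
qed

lemma exp_prod_split:
  fixes G1 G2 :: "'a \<Rightarrow> 'b \<Rightarrow> real"
  assumes fA: "finite A" and fs: "\<forall>a\<in>A. finite (set_pmf (D a))"
    and nn1: "\<And>a S. 0 \<le> G1 a S" and nn2: "\<And>a S. 0 \<le> G2 a S"
    and one: "\<forall>a\<in>A. (\<forall>S. G1 a S = 1) \<or> (\<forall>S. G2 a S = 1)"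
  shows "measure_pmf.expectation (Pi_pmf A dflt D) (\<lambda>\<omega>. (\<Prod>a\<in>A. G1 a (\<omega> a)) * (\<Prod>a\<in>A. G2 a (\<omega> a)))
       = measure_pmf.expectation (Pi_pmf A dflt D) (\<lambda>\<omega>. \<Prod>a\<in>A. G1 a (\<omega> a)) *
         measure_pmf.expectation (Pi_pmf A dflt D) (\<lambda>\<omega>. \<Prod>a\<in>A. G2 a (\<omega> a))"
proof -
  have int: "integrable (measure_pmf (D a)) f" if "a \<in> A" for a and f :: "'b \<Rightarrow> real"
    using fs that by (intro integrable_measure_pmf_finite) auto
  have e1: "measure_pmf.expectation (Pi_pmf A dflt D) (\<lambda>\<omega>. \<Prod>a\<in>A. G1 a (\<omega> a)) =
      (\<Prod>a\<in>A. measure_pmf.expectation (D a) (G1 a))"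
    by (rule expectation_prod_Pi_pmf[OF fA]) (auto intro: int nn1)
  have e2: "measure_pmf.expectation (Pi_pmf A dflt D) (\<lambda>\<omega>. \<Prod>a\<in>A. G2 a (\<omega> a)) =
      (\<Prod>a\<in>A. measure_pmf.expectation (D a) (G2 a))"
    by (rule expectation_prod_Pi_pmf[OF fA]) (auto intro: int nn2)
  have "measure_pmf.expectation (Pi_pmf A dflt D) (\<lambda>\<omega>. (\<Prod>a\<in>A. G1 a (\<omega> a)) * (\<Prod>a\<in>A. G2 a (\<omega> a)))
      = measure_pmf.expectation (Pi_pmf A dflt D) (\<lambda>\<omega>. \<Prod>a\<in>A. G1 a (\<omega> a) * G2 a (\<omega> a))"
    by (simp add: prod.distrib)
  also have "\<dots> = (\<Prod>a\<in>A. measure_pmf.expectation (D a) (\<lambda>S. G1 a S * G2 a S))"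
    by (rule expectation_prod_Pi_pmf[OF fA]) (auto intro: int nn1 nn2 mult_nonneg_nonneg)
  also have "\<dots> = (\<Prod>a\<in>A. measure_pmf.expectation (D a) (G1 a) * measure_pmf.expectation (D a) (G2 a))"
  proof (intro prod.cong refl)
    fix a assume a: "a \<in> A"
    have o: "(\<forall>S. G1 a S = 1) \<or> (\<forall>S. G2 a S = 1)" using one a by blast
    show "measure_pmf.expectation (D a) (\<lambda>S. G1 a S * G2 a S) =
        measure_pmf.expectation (D a) (G1 a) * measure_pmf.expectation (D a) (G2 a)"
    proof (cases "\<forall>S. G1 a S = 1")
      case True
      then have "G1 a = (\<lambda>_. 1)" by auto
      then show ?thesis by simp
    next
      case False
      with o have "G2 a = (\<lambda>_. 1)" by auto
      then show ?thesis by simp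
    qed
  qed
  also have "\<dots> = (\<Prod>a\<in>A. measure_pmf.expectation (D a) (G1 a)) * (\<Prod>a\<in>A. measure_pmf.expectation (D a) (G2 a))"
    by (rule prod.distrib)
  finally show ?thesis using e1 e2 by simp
qed

lemma var_bound:
  fixes Y :: "'u \<Rightarrow> 'w \<Rightarrow> real" and M :: "'w pmf"
  assumes fM: "finite (set_pmf M)" and fU: "finite U"
    and Y01: "\<And>u w. 0 \<le> Y u w \<and> Y u w \<le> 1"
    and ind: "\<And>u v. u \<in> U \<Longrightarrow> v \<in> U \<Longrightarrow> \<not> R u v \<Longrightarrow>
       measure_pmf.expectation M (\<lambda>w. Y u w * Y v w) =
       measure_pmf.expectation M (Y u) * measure_pmf.expectation M (Y v)"
  shows "measure_pmf.expectation M (\<lambda>w. ((\<Sum>u\<in>U. Y u w) - (\<Sum>u\<in>U. measure_pmf.expectation M (Y u)))^2)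
       \<le> (\<Sum>u\<in>U. real (card {v\<in>U. R u v}))"
proof -
  define \<mu> where "\<mu> u = measure_pmf.expectation M (Y u)" for u
  have int: "integrable (measure_pmf M) f" for f :: "'w \<Rightarrow> real" using fM by (rule integrable_measure_pmf_finite)
  have mu01: "0 \<le> \<mu> u" "\<mu> u \<le> 1" for u
  proof -
    show "0 \<le> \<mu> u" unfolding \<mu>_def by (intro integral_nonneg_AE AE_pmfI) (use Y01 in auto)
    have "\<mu> u \<le> measure_pmf.expectation M (\<lambda>_. 1::real)" unfolding \<mu>_def
      by (intro integral_mono_AE AE_pmfI int) (use Y01 in auto)
    then show "\<mu> u \<le> 1" by simp
  qed
  have sq: "((\<Sum>u\<in>U. Y u w) - (\<Sum>u\<in>U. \<mu> u))^2 = (\<Sum>u\<in>U. \<Sum>v\<in>U. (Y u w - \<mu> u) * (Y v w - \<mu> v))" for w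
    by (simp add: power2_eq_square sum_product flip: sum_subtractf)
  have trm: "measure_pmf.expectation M (\<lambda>w. (Y u w - \<mu> u) * (Y v w - \<mu> v))
      = measure_pmf.expectation M (\<lambda>w. Y u w * Y v w) - \<mu> u * \<mu> v" for u v
  proof -
    have "(\<lambda>w. (Y u w - \<mu> u) * (Y v w - \<mu> v)) = (\<lambda>w. Y u w * Y v w - \<mu> v * Y u w - \<mu> u * Y v w + \<mu> u * \<mu> v)"
      by (auto simp: algebra_simps)
    then show ?thesis using int by (simp add: \<mu>_def)
  qed
  have "measure_pmf.expectation M (\<lambda>w. ((\<Sum>u\<in>U. Y u w) - (\<Sum>u\<in>U. \<mu> u))^2)
      = (\<Sum>u\<in>U. \<Sum>v\<in>U. measure_pmf.expectation M (\<lambda>w. Y u w * Y v w) - \<mu> u * \<mu> v)"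
    unfolding sq using int by (simp add: trm)
  also have "\<dots> \<le> (\<Sum>u\<in>U. \<Sum>v\<in>U. if R u v then 1 else 0)"
  proof (intro sum_mono)
    fix u v assume u: "u \<in> U" and v: "v \<in> U"
    show "measure_pmf.expectation M (\<lambda>w. Y u w * Y v w) - \<mu> u * \<mu> v \<le> (if R u v then 1 else 0)"
    proof (cases "R u v")
      case True
      have "measure_pmf.expectation M (\<lambda>w. Y u w * Y v w) \<le> measure_pmf.expectation M (\<lambda>_. 1::real)"
        by (intro integral_mono_AE AE_pmfI int) (use Y01 in \<open>auto intro: mult_le_one\<close>)
      moreover have "0 \<le> \<mu> u * \<mu> v" using mu01 by simp
      ultimately show ?thesis using True by simp
    next
      case False
      then show ?thesis using ind[OF u v False] by (simp add: \<mu>_def)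
    qed
  qed
  also have "\<dots> = (\<Sum>u\<in>U. real (card {v\<in>U. R u v}))"
    using fU by (simp add: card_filter_sum)
  finally show ?thesis unfolding \<mu>_def .
qed

lemma Pi_hoeffding:
  fixes F :: "'a \<Rightarrow> 'b \<Rightarrow> real"
  assumes fA: "finite A" and Fb: "\<And>a S. a \<in> A \<Longrightarrow> 0 \<le> F a S \<and> F a S \<le> k a"
    and pos: "(\<Sum>a\<in>A. (k a)^2) > 0" and t: "0 \<le> t"
  shows "measure_pmf.prob (Pi_pmf A dflt D)
           {\<omega>. \<bar>(\<Sum>a\<in>A. F a (\<omega> a)) - (\<Sum>a\<in>A. measure_pmf.expectation (D a) (F a))\<bar> \<ge> t}
         \<le> 2 * exp (- 2 * t^2 / (\<Sum>a\<in>A. (k a)^2))"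
proof -
  let ?M = "Pi_pmf A dflt D"
  have ind0: "prob_space.indep_vars (measure_pmf ?M) (\<lambda>_. count_space UNIV) (\<lambda>x f. f x) A"
    by (rule indep_vars_Pi_pmf[OF fA])
  have ind: "prob_space.indep_vars (measure_pmf ?M) (\<lambda>_. borel) (\<lambda>a \<omega>. F a (\<omega> a)) A"
    by (rule prob_space.indep_vars_compose2[OF measure_pmf.prob_space_axioms ind0]) auto
  have mu: "(\<Sum>a\<in>A. measure_pmf.expectation ?M (\<lambda>\<omega>. F a (\<omega> a))) = (\<Sum>a\<in>A. measure_pmf.expectation (D a) (F a))"
    by (intro sum.cong refl Pi_pmf_exp_component[OF fA])
  interpret H: Hoeffding_ineq "measure_pmf ?M" A "\<lambda>a \<omega>. F a (\<omega> a)" "\<lambda>_. 0" k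
      "(\<Sum>a\<in>A. measure_pmf.expectation ?M (\<lambda>\<omega>. F a (\<omega> a)))"
    by unfold_locales (use fA ind Fb in auto)
  show ?thesis using H.Hoeffding_ineq_abs_ge[OF t] pos unfolding mu by simp
qed


locale model =
  fixes XE :: "'b set set" and c :: "'b set \<Rightarrow> 'c" and Dist :: "'c \<Rightarrow> 'b set set pmf"
    and p :: real and \<Lambda> :: nat
  assumes fXE: "finite XE"
    and K1: "\<And>e. e \<in> XE \<Longrightarrow> measure_pmf.prob (Dist (c e)) {S. e \<in> S} = p"
    and fsupp: "\<And>\<alpha>. \<alpha> \<in> c ` XE \<Longrightarrow> finite (set_pmf (Dist \<alpha>))"
    and locb: "\<And>\<alpha> v. card {e\<in>XE. c e = \<alpha> \<and> v \<in> e} \<le> \<Lambda>"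
    and p01: "0 \<le> p" "p \<le> 1"
begin

definition Cs where "Cs = c ` XE"
definition \<Omega> where "\<Omega> = Pi_pmf Cs {} Dist"
definition Ind :: "'b set \<Rightarrow> ('c \<Rightarrow> 'b set set) \<Rightarrow> real" where
  "Ind e \<omega> = of_bool (e \<in> \<omega> (c e))"
definition Gp :: "('c \<Rightarrow> 'b set set) \<Rightarrow> 'b set set" where
  "Gp \<omega> = {e\<in>XE. e \<in> \<omega> (c e)}"

lemma fCs: "finite Cs" unfolding Cs_def using fXE by simp

lemma fOmega: "finite (set_pmf \<Omega>)"
  unfolding \<Omega>_def by (rule Pi_pmf_finite_support[OF fCs]) (use fsupp in \<open>auto simp: Cs_def\<close>)

lemma intO: "integrable (measure_pmf \<Omega>) (f :: _ \<Rightarrow> real)"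
  by (rule integrable_measure_pmf_finite[OF fOmega])

lemma exp_Ind: "e \<in> XE \<Longrightarrow> measure_pmf.expectation \<Omega> (Ind e) = p"
proof -
  assume e: "e \<in> XE"
  have "measure_pmf.expectation \<Omega> (Ind e) = measure_pmf.expectation (Dist (c e)) (\<lambda>S. of_bool (e \<in> S))"
    unfolding \<Omega>_def Ind_def by (rule Pi_pmf_exp_component[OF fCs]) (use e in \<open>auto simp: Cs_def\<close>)
  also have "(\<lambda>S. of_bool (e \<in> S) :: real) = indicator {S. e \<in> S}" by (auto simp: indicator_def)
  finally show ?thesis using K1[OF e] by simp
qed

lemma Ind01: "0 \<le> Ind e \<omega>" "Ind e \<omega> \<le> 1" unfolding Ind_def by auto

text \<open>Products of indicators factor over colours.\<close>
definition GK :: "'b set set \<Rightarrow> 'c \<Rightarrow> 'b set set \<Rightarrow> real" where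
  "GK K \<alpha> S = (\<Prod>e\<in>{e\<in>K. c e = \<alpha>}. of_bool (e \<in> S))"

lemma GK_nn: "0 \<le> GK K \<alpha> S" unfolding GK_def by (intro prod_nonneg) auto

lemma prod_Ind_GK:
  assumes "K \<subseteq> XE"
  shows "(\<Prod>e\<in>K. Ind e \<omega>) = (\<Prod>\<alpha>\<in>Cs. GK K \<alpha> (\<omega> \<alpha>))"
proof -
  have fK: "finite K" using assms fXE finite_subset by blast
  have "(\<Prod>\<alpha>\<in>Cs. GK K \<alpha> (\<omega> \<alpha>)) = (\<Prod>\<alpha>\<in>Cs. \<Prod>e\<in>{e\<in>K. c e = \<alpha>}. Ind e \<omega>)"
    unfolding GK_def Ind_def by (intro prod.cong refl) auto
  also have "\<dots> = (\<Prod>e\<in>K. Ind e \<omega>)"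
    by (rule prod.group[OF fK fCs]) (use assms in \<open>auto simp: Cs_def\<close>)
  finally show ?thesis by simp
qed

lemma GK_one: "\<alpha> \<notin> c ` K \<Longrightarrow> GK K \<alpha> S = 1"
  unfolding GK_def by (intro prod.neutral) auto

lemma exp_prod_indep:
  assumes K1: "K1 \<subseteq> XE" and K2: "K2 \<subseteq> XE" and disj: "c ` K1 \<inter> c ` K2 = {}"
  shows "measure_pmf.expectation \<Omega> (\<lambda>\<omega>. (\<Prod>e\<in>K1. Ind e \<omega>) * (\<Prod>e\<in>K2. Ind e \<omega>))
       = measure_pmf.expectation \<Omega> (\<lambda>\<omega>. \<Prod>e\<in>K1. Ind e \<omega>) * measure_pmf.expectation \<Omega> (\<lambda>\<omega>. \<Prod>e\<in>K2. Ind e \<omega>)"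
proof -
  have "measure_pmf.expectation \<Omega> (\<lambda>\<omega>. (\<Prod>\<alpha>\<in>Cs. GK K1 \<alpha> (\<omega> \<alpha>)) * (\<Prod>\<alpha>\<in>Cs. GK K2 \<alpha> (\<omega> \<alpha>)))
       = measure_pmf.expectation \<Omega> (\<lambda>\<omega>. \<Prod>\<alpha>\<in>Cs. GK K1 \<alpha> (\<omega> \<alpha>)) * measure_pmf.expectation \<Omega> (\<lambda>\<omega>. \<Prod>\<alpha>\<in>Cs. GK K2 \<alpha> (\<omega> \<alpha>))"
    unfolding \<Omega>_def
  proof (rule exp_prod_split[OF fCs])
    show "\<forall>a\<in>Cs. finite (set_pmf (Dist a))" using fsupp by (auto simp: Cs_def)
    show "\<forall>a\<in>Cs. (\<forall>S. GK K1 a S = 1) \<or> (\<forall>S. GK K2 a S = 1)"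
    proof
      fix a assume "a \<in> Cs"
      show "(\<forall>S. GK K1 a S = 1) \<or> (\<forall>S. GK K2 a S = 1)"
      proof (cases "a \<in> c ` K1")
        case True
        then have "a \<notin> c ` K2" using disj by auto
        then show ?thesis using GK_one[of a K2] by simp
      next
        case False
        then show ?thesis using GK_one[of a K1] by simp
      qed
    qed
  qed (auto intro: GK_nn)
  then show ?thesis by (simp add: prod_Ind_GK[OF K1] prod_Ind_GK[OF K2])
qed

lemma deg_conc:
  assumes Ev: "Ev \<subseteq> XE" "Ev \<noteq> {}" and kb: "\<And>\<alpha>. card {e\<in>Ev. c e = \<alpha>} \<le> \<Lambda>" and t: "0 \<le> t"
  shows "measure_pmf.prob \<Omega> {\<omega>. \<bar>(\<Sum>e\<in>Ev. Ind e \<omega>) - p * real (card Ev)\<bar> \<ge> t}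
         \<le> 2 * exp (- 2 * t^2 / (real \<Lambda> * real (card Ev)))"
proof -
  have fEv: "finite Ev" using Ev fXE finite_subset by blast
  define k where "k \<alpha> = real (card {e\<in>Ev. c e = \<alpha>})" for \<alpha>
  define F where "F \<alpha> S = (\<Sum>e\<in>{e\<in>Ev. c e = \<alpha>}. of_bool (e \<in> S) :: real)" for \<alpha> S
  have img: "c ` Ev \<subseteq> Cs" using Ev by (auto simp: Cs_def)
  have sumF: "(\<Sum>\<alpha>\<in>Cs. F \<alpha> (\<omega> \<alpha>)) = (\<Sum>e\<in>Ev. Ind e \<omega>)" for \<omega>
  proof -
    have "(\<Sum>\<alpha>\<in>Cs. F \<alpha> (\<omega> \<alpha>)) = (\<Sum>\<alpha>\<in>Cs. \<Sum>e\<in>{e\<in>Ev. c e = \<alpha>}. Ind e \<omega>)"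
      unfolding F_def Ind_def by (intro sum.cong refl) auto
    also have "\<dots> = (\<Sum>e\<in>Ev. Ind e \<omega>)" by (rule sum.group[OF fEv fCs img])
    finally show ?thesis .
  qed
  have sumk: "(\<Sum>\<alpha>\<in>Cs. k \<alpha>) = real (card Ev)"
  proof -
    have "(\<Sum>\<alpha>\<in>Cs. k \<alpha>) = (\<Sum>\<alpha>\<in>Cs. \<Sum>e\<in>{e\<in>Ev. c e = \<alpha>}. (1::real))"
      unfolding k_def by simp
    also have "\<dots> = (\<Sum>e\<in>Ev. (1::real))" by (rule sum.group[OF fEv fCs img])
    finally show ?thesis by simp
  qed
  have EF: "measure_pmf.expectation (Dist \<alpha>) (F \<alpha>) = p * k \<alpha>" if a: "\<alpha> \<in> Cs" for \<alpha>
  proof -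
    have fin: "finite (set_pmf (Dist \<alpha>))" using a fsupp by (auto simp: Cs_def)
    have "measure_pmf.expectation (Dist \<alpha>) (F \<alpha>) =
        (\<Sum>e\<in>{e\<in>Ev. c e = \<alpha>}. measure_pmf.expectation (Dist \<alpha>) (\<lambda>S. of_bool (e \<in> S) :: real))"
      unfolding F_def
      by (rule Bochner_Integration.integral_sum[where f="\<lambda>e S. of_bool (e \<in> S) :: real"]) (intro integrable_measure_pmf_finite fin)
    also have "\<dots> = (\<Sum>e\<in>{e\<in>Ev. c e = \<alpha>}. p)"
    proof (intro sum.cong refl)
      fix e assume e: "e \<in> {e\<in>Ev. c e = \<alpha>}"
      have "(\<lambda>S. of_bool (e \<in> S) :: real) = indicator {S. e \<in> S}" by (auto simp: indicator_def)
      then show "measure_pmf.expectation (Dist \<alpha>) (\<lambda>S. of_bool (e \<in> S) :: real) = p"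
        using K1[of e] e Ev by auto
    qed
    finally show ?thesis by (simp add: k_def)
  qed
  have sumk2: "(\<Sum>\<alpha>\<in>Cs. (k \<alpha>)^2) \<le> real \<Lambda> * real (card Ev)"
  proof -
    have "(\<Sum>\<alpha>\<in>Cs. (k \<alpha>)^2) \<le> (\<Sum>\<alpha>\<in>Cs. real \<Lambda> * k \<alpha>)"
    proof (intro sum_mono)
      fix \<alpha> show "(k \<alpha>)^2 \<le> real \<Lambda> * k \<alpha>"
        using kb[of \<alpha>] unfolding k_def power2_eq_square by (intro mult_right_mono) auto
    qed
    also have "\<dots> = real \<Lambda> * real (card Ev)" by (simp add: sum_distrib_left[symmetric] sumk)
    finally show ?thesis .
  qed
  have pos: "(\<Sum>\<alpha>\<in>Cs. (k \<alpha>)^2) > 0"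
  proof -
    obtain e where e: "e \<in> Ev" using Ev by blast
    have ce: "c e \<in> Cs" using e img by auto
    have "k (c e) \<ge> 1" unfolding k_def using e fEv
      by (simp add: Suc_le_eq card_gt_0_iff) blast
    then have "(k (c e))^2 > 0" by simp
    moreover have "(k (c e))^2 \<le> (\<Sum>\<alpha>\<in>Cs. (k \<alpha>)^2)"
      by (rule member_le_sum[OF ce]) (auto simp: fCs)
    ultimately show ?thesis by linarith
  qed
  have Fb: "\<And>\<alpha> S. \<alpha> \<in> Cs \<Longrightarrow> 0 \<le> F \<alpha> S \<and> F \<alpha> S \<le> k \<alpha>"
  proof -
    fix \<alpha> S
    have "F \<alpha> S \<le> (\<Sum>e\<in>{e\<in>Ev. c e = \<alpha>}. (1::real))" unfolding F_def by (intro sum_mono) auto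
    then show "0 \<le> F \<alpha> S \<and> F \<alpha> S \<le> k \<alpha>" unfolding F_def k_def by (auto intro: sum_nonneg)
  qed
  have H: "measure_pmf.prob \<Omega> {\<omega>. \<bar>(\<Sum>\<alpha>\<in>Cs. F \<alpha> (\<omega> \<alpha>)) - (\<Sum>\<alpha>\<in>Cs. measure_pmf.expectation (Dist \<alpha>) (F \<alpha>))\<bar> \<ge> t}
         \<le> 2 * exp (- 2 * t^2 / (\<Sum>\<alpha>\<in>Cs. (k \<alpha>)^2))"
    unfolding \<Omega>_def by (rule Pi_hoeffding[OF fCs Fb pos t])
  have mu: "(\<Sum>\<alpha>\<in>Cs. measure_pmf.expectation (Dist \<alpha>) (F \<alpha>)) = p * real (card Ev)"
    using EF by (simp add: sum_distrib_left[symmetric] sumk)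
  have ineq: "2 * exp (- 2 * t^2 / (\<Sum>\<alpha>\<in>Cs. (k \<alpha>)^2)) \<le> 2 * exp (- 2 * t^2 / (real \<Lambda> * real (card Ev)))"
  proof -
    have "2 * t^2 / (real \<Lambda> * real (card Ev)) \<le> 2 * t^2 / (\<Sum>\<alpha>\<in>Cs. (k \<alpha>)^2)"
    proof (rule divide_left_mono[OF sumk2])
      have "real \<Lambda> * real (card Ev) > 0" using pos sumk2 by linarith
      then show "0 < real \<Lambda> * real (card Ev) * (\<Sum>\<alpha>\<in>Cs. (k \<alpha>)^2)" using pos by simp
    qed simp
    then show ?thesis by simp
  qed
  show ?thesis using H ineq unfolding sumF mu by linarith
qed

end


context model
begin

lemma adj_Gp: "adj (Gp \<omega>) u w = (if {u, w} \<in> XE then Ind {u, w} \<omega> else 0)"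
  unfolding adj_def Gp_def Ind_def by auto

lemma Ind_sq: "Ind e \<omega> * Ind e \<omega> = Ind e \<omega>" unfolding Ind_def by auto

definition good :: "'b \<Rightarrow> 'b \<Rightarrow> 'b \<Rightarrow> bool" where
  "good w w' u \<longleftrightarrow> {u, w} \<in> XE \<and> {u, w'} \<in> XE"

definition YY :: "'b \<Rightarrow> 'b \<Rightarrow> 'b \<Rightarrow> ('c \<Rightarrow> 'b set set) \<Rightarrow> real" where
  "YY w w' u \<omega> = adj (Gp \<omega>) u w * adj (Gp \<omega>) u w'"

lemma YY_prod: "YY w w' u \<omega> = (if good w w' u then (\<Prod>e\<in>{{u, w}, {u, w'}}. Ind e \<omega>) else 0)"
proof (cases "good w w' u")
  case True
  show ?thesis
  proof (cases "{u, w} = {u, w'}")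
    case True
    then show ?thesis using \<open>good w w' u\<close> unfolding YY_def good_def adj_Gp by (simp add: Ind_sq)
  next
    case False
    then show ?thesis using \<open>good w w' u\<close> unfolding YY_def good_def adj_Gp by simp
  qed
next
  case False
  then show ?thesis unfolding YY_def good_def adj_Gp by auto
qed

lemma YY01: "0 \<le> YY w w' u \<omega> \<and> YY w w' u \<omega> \<le> 1"
  unfolding YY_def adj_def by auto

definition RR :: "'b \<Rightarrow> 'b \<Rightarrow> 'b \<Rightarrow> 'b \<Rightarrow> bool" where
  "RR w w' u v \<longleftrightarrow> good w w' u \<and> good w w' v \<and> c ` {{u, w}, {u, w'}} \<inter> c ` {{v, w}, {v, w'}} \<noteq> {}"

lemma YY_indep:
  assumes "\<not> RR w w' u v"
  shows "measure_pmf.expectation \<Omega> (\<lambda>\<omega>. YY w w' u \<omega> * YY w w' v \<omega>) =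
         measure_pmf.expectation \<Omega> (YY w w' u) * measure_pmf.expectation \<Omega> (YY w w' v)"
proof (cases "good w w' u \<and> good w w' v")
  case True
  then have disj: "c ` {{u, w}, {u, w'}} \<inter> c ` {{v, w}, {v, w'}} = {}" using assms unfolding RR_def by auto
  have K1: "{{u, w}, {u, w'}} \<subseteq> XE" and K2: "{{v, w}, {v, w'}} \<subseteq> XE" using True unfolding good_def by auto
  have "(\<lambda>\<omega>. YY w w' u \<omega> * YY w w' v \<omega>) = (\<lambda>\<omega>. (\<Prod>e\<in>{{u, w}, {u, w'}}. Ind e \<omega>) * (\<Prod>e\<in>{{v, w}, {v, w'}}. Ind e \<omega>))"
    using True by (simp add: YY_prod)
  moreover have "YY w w' u = (\<lambda>\<omega>. \<Prod>e\<in>{{u, w}, {u, w'}}. Ind e \<omega>)" using True by (simp add: YY_prod fun_eq_iff)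
  moreover have "YY w w' v = (\<lambda>\<omega>. \<Prod>e\<in>{{v, w}, {v, w'}}. Ind e \<omega>)" using True by (simp add: YY_prod fun_eq_iff)
  ultimately show ?thesis using exp_prod_indep[OF K1 K2 disj] by simp
next
  case False
  then have "YY w w' u = (\<lambda>_. 0) \<or> YY w w' v = (\<lambda>_. 0)" by (auto simp: YY_prod fun_eq_iff)
  then show ?thesis by auto
qed

lemma card_colour_nbrs:
  "card {v\<in>A. {v, w} \<in> XE \<and> c {v, w} = \<beta>} \<le> \<Lambda>"
proof -
  have "card {v\<in>A. {v, w} \<in> XE \<and> c {v, w} = \<beta>} \<le> card {e\<in>XE. c e = \<beta> \<and> w \<in> e}"
  proof (rule card_inj_on_le[where f="\<lambda>v. {v, w}"])
    show "inj_on (\<lambda>v. {v, w}) {v\<in>A. {v, w} \<in> XE \<and> c {v, w} = \<beta>}"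
      by (rule inj_onI) (auto simp: doubleton_eq_iff)
    show "(\<lambda>v. {v, w}) ` {v\<in>A. {v, w} \<in> XE \<and> c {v, w} = \<beta>} \<subseteq> {e\<in>XE. c e = \<beta> \<and> w \<in> e}" by auto
    show "finite {e\<in>XE. c e = \<beta> \<and> w \<in> e}" using fXE by simp
  qed
  also have "\<dots> \<le> \<Lambda>" by (rule locb)
  finally show ?thesis .
qed

lemma card_RR:
  assumes fA: "finite A"
  shows "card {v\<in>A. RR w w' u v} \<le> 4 * \<Lambda>"
proof -
  define Cu where "Cu = c ` {{u, w}, {u, w'}}"
  have "{v\<in>A. RR w w' u v} \<subseteq> (\<Union>\<beta>\<in>Cu. {v\<in>A. {v, w} \<in> XE \<and> c {v, w} = \<beta>} \<union> {v\<in>A. {v, w'} \<in> XE \<and> c {v, w'} = \<beta>})"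
    unfolding RR_def good_def Cu_def by auto
  then have "card {v\<in>A. RR w w' u v} \<le> card (\<Union>\<beta>\<in>Cu. {v\<in>A. {v, w} \<in> XE \<and> c {v, w} = \<beta>} \<union> {v\<in>A. {v, w'} \<in> XE \<and> c {v, w'} = \<beta>})"
    by (rule card_mono[rotated]) (auto simp: Cu_def fA)
  also have "\<dots> \<le> (\<Sum>\<beta>\<in>Cu. card ({v\<in>A. {v, w} \<in> XE \<and> c {v, w} = \<beta>} \<union> {v\<in>A. {v, w'} \<in> XE \<and> c {v, w'} = \<beta>}))"
    by (rule card_UN_le) (simp add: Cu_def)
  also have "\<dots> \<le> (\<Sum>\<beta>\<in>Cu. 2 * \<Lambda>)"
  proof (intro sum_mono)
    fix \<beta>
    have "card ({v\<in>A. {v, w} \<in> XE \<and> c {v, w} = \<beta>} \<union> {v\<in>A. {v, w'} \<in> XE \<and> c {v, w'} = \<beta>})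
        \<le> card {v\<in>A. {v, w} \<in> XE \<and> c {v, w} = \<beta>} + card {v\<in>A. {v, w'} \<in> XE \<and> c {v, w'} = \<beta>}"
      by (rule card_Un_le)
    also have "\<dots> \<le> \<Lambda> + \<Lambda>" by (intro add_mono card_colour_nbrs)
    finally show "card ({v\<in>A. {v, w} \<in> XE \<and> c {v, w} = \<beta>} \<union> {v\<in>A. {v, w'} \<in> XE \<and> c {v, w'} = \<beta>}) \<le> 2 * \<Lambda>" by simp
  qed
  also have "\<dots> = card Cu * (2 * \<Lambda>)" by simp
  also have "\<dots> \<le> 2 * (2 * \<Lambda>)"
  proof -
    have c2: "card {{u, w}, {u, w'}} \<le> 2" by (cases "{u, w} = {u, w'}") auto
    have "card Cu \<le> 2" unfolding Cu_def using card_image_le[of "{{u, w}, {u, w'}}" c] c2 by simp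
    then show ?thesis by simp
  qed
  finally show ?thesis by simp
qed

lemma YY_var:
  assumes fA: "finite A"
  shows "measure_pmf.expectation \<Omega> (\<lambda>\<omega>. ((\<Sum>u\<in>A. YY w w' u \<omega>) - (\<Sum>u\<in>A. measure_pmf.expectation \<Omega> (YY w w' u)))^2)
       \<le> 4 * real \<Lambda> * real (card A)"
proof -
  have "measure_pmf.expectation \<Omega> (\<lambda>\<omega>. ((\<Sum>u\<in>A. YY w w' u \<omega>) - (\<Sum>u\<in>A. measure_pmf.expectation \<Omega> (YY w w' u)))^2)
       \<le> (\<Sum>u\<in>A. real (card {v\<in>A. RR w w' u v}))"
    by (rule var_bound[OF fOmega fA YY01 YY_indep])
  also have "\<dots> \<le> (\<Sum>u\<in>A. 4 * real \<Lambda>)"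
  proof (intro sum_mono)
    fix u
    have "card {v\<in>A. RR w w' u v} \<le> 4 * \<Lambda>" by (rule card_RR[OF fA])
    then have "real (card {v\<in>A. RR w w' u v}) \<le> real (4 * \<Lambda>)" by (simp only: of_nat_le_iff)
    then show "real (card {v\<in>A. RR w w' u v}) \<le> 4 * real \<Lambda>" by simp
  qed
  finally show ?thesis by (simp add: mult_ac)
qed

lemma exp_sq_decomp:
  fixes X :: "_ \<Rightarrow> real"
  shows "measure_pmf.expectation \<Omega> (\<lambda>\<omega>. (X \<omega> - t)^2)
       = measure_pmf.expectation \<Omega> (\<lambda>\<omega>. (X \<omega> - measure_pmf.expectation \<Omega> X)^2)
         + (measure_pmf.expectation \<Omega> X - t)^2"
proof -
  define m where "m = measure_pmf.expectation \<Omega> X"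
  have "(\<lambda>\<omega>. (X \<omega> - t)^2) = (\<lambda>\<omega>. (X \<omega> - m)^2 + 2 * (m - t) * X \<omega> + ((m - t)^2 - 2 * (m - t) * m))"
    by (auto simp: power2_eq_square algebra_simps)
  then have "measure_pmf.expectation \<Omega> (\<lambda>\<omega>. (X \<omega> - t)^2)
      = measure_pmf.expectation \<Omega> (\<lambda>\<omega>. (X \<omega> - m)^2) + 2 * (m - t) * m + ((m - t)^2 - 2 * (m - t) * m)"
    using intO by (simp add: m_def)
  then show ?thesis by (simp add: m_def)
qed

lemma YY_mean:
  assumes fA: "finite A"
  shows "\<bar>(\<Sum>u\<in>A. measure_pmf.expectation \<Omega> (YY w w' u)) - p^2 * (\<Sum>u\<in>A. adj XE u w * adj XE u w')\<bar>
       \<le> real (card {u\<in>A. good w w' u \<and> c {u, w} = c {u, w'}})"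
proof -
  have each: "\<bar>measure_pmf.expectation \<Omega> (YY w w' u) - p^2 * (adj XE u w * adj XE u w')\<bar>
      \<le> (if good w w' u \<and> c {u, w} = c {u, w'} then 1 else 0)" for u
  proof (cases "good w w' u")
    case False
    then have "YY w w' u = (\<lambda>_. 0)" by (auto simp: YY_prod fun_eq_iff)
    moreover have "adj XE u w * adj XE u w' = 0" using False unfolding good_def adj_def by auto
    ultimately show ?thesis using False by simp
  next
    case True
    have a1: "adj XE u w * adj XE u w' = 1" using True unfolding good_def adj_def by auto
    show ?thesis
    proof (cases "c {u, w} = c {u, w'}")
      case True
      have m01: "0 \<le> measure_pmf.expectation \<Omega> (YY w w' u)" "measure_pmf.expectation \<Omega> (YY w w' u) \<le> 1"
      proof -
        show "0 \<le> measure_pmf.expectation \<Omega> (YY w w' u)" by (intro integral_nonneg_AE AE_pmfI) (use YY01 in auto)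
        have "measure_pmf.expectation \<Omega> (YY w w' u) \<le> measure_pmf.expectation \<Omega> (\<lambda>_. 1::real)"
          by (intro integral_mono_AE AE_pmfI intO) (use YY01 in auto)
        then show "measure_pmf.expectation \<Omega> (YY w w' u) \<le> 1" by simp
      qed
      have "0 \<le> p^2" "p^2 \<le> 1" using p01 by (auto simp: power_le_one)
      then show ?thesis using True \<open>good w w' u\<close> a1 m01
        by (simp add: abs_le_iff) (use zero_le_power2[of p] in linarith)
    next
      case False
      then have ne: "{u, w} \<noteq> {u, w'}" by auto
      have inx: "{u, w} \<in> XE" "{u, w'} \<in> XE" using \<open>good w w' u\<close> unfolding good_def by auto
      have "YY w w' u = (\<lambda>\<omega>. (\<Prod>e\<in>{{u, w}}. Ind e \<omega>) * (\<Prod>e\<in>{{u, w'}}. Ind e \<omega>))"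
        using \<open>good w w' u\<close> ne by (simp add: YY_prod fun_eq_iff)
      then have "measure_pmf.expectation \<Omega> (YY w w' u) =
          measure_pmf.expectation \<Omega> (\<lambda>\<omega>. \<Prod>e\<in>{{u, w}}. Ind e \<omega>) * measure_pmf.expectation \<Omega> (\<lambda>\<omega>. \<Prod>e\<in>{{u, w'}}. Ind e \<omega>)"
        using exp_prod_indep[of "{{u, w}}" "{{u, w'}}"] inx False by simp
      also have "\<dots> = p * p" using exp_Ind[OF inx(1)] exp_Ind[OF inx(2)] by simp
      finally show ?thesis using a1 by (simp add: power2_eq_square)
    qed
  qed
  have "\<bar>(\<Sum>u\<in>A. measure_pmf.expectation \<Omega> (YY w w' u)) - p^2 * (\<Sum>u\<in>A. adj XE u w * adj XE u w')\<bar>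
      = \<bar>\<Sum>u\<in>A. measure_pmf.expectation \<Omega> (YY w w' u) - p^2 * (adj XE u w * adj XE u w')\<bar>"
    by (simp add: sum_subtractf sum_distrib_left)
  also have "\<dots> \<le> (\<Sum>u\<in>A. \<bar>measure_pmf.expectation \<Omega> (YY w w' u) - p^2 * (adj XE u w * adj XE u w')\<bar>)"
    by (rule sum_abs)
  also have "\<dots> \<le> (\<Sum>u\<in>A. if good w w' u \<and> c {u, w} = c {u, w'} then 1 else 0)"
    by (intro sum_mono each)
  also have "\<dots> = real (card {u\<in>A. good w w' u \<and> c {u, w} = c {u, w'}})"
    using fA by (simp add: card_filter_sum)
  finally show ?thesis .
qed

lemma sq_sum2: "((x::real) + y)^2 \<le> 2 * x^2 + 2 * y^2"
proof -
  have "0 \<le> (x - y)^2" by simp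
  then show ?thesis by (simp add: power2_eq_square algebra_simps)
qed

lemma same_colour_sum:
  assumes fA: "finite A" and fB: "finite B"
  shows "(\<Sum>w\<in>B. \<Sum>w'\<in>B. (real (card {u\<in>A. good w w' u \<and> c {u, w} = c {u, w'}}))^2)
       \<le> real \<Lambda> * (real (card A))^2 * real (card B)"
proof -
  define s where "s w w' = real (card {u\<in>A. good w w' u \<and> c {u, w} = c {u, w'}})" for w w'
  have s_le: "s w w' \<le> real (card A)" for w w' unfolding s_def by (simp add: card_mono fA)
  have s_nn: "0 \<le> s w w'" for w w' unfolding s_def by simp
  have "(\<Sum>w\<in>B. \<Sum>w'\<in>B. (s w w')^2) \<le> (\<Sum>w\<in>B. \<Sum>w'\<in>B. real (card A) * s w w')"
    by (intro sum_mono) (simp add: power2_eq_square mult_right_mono s_le s_nn)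
  also have "\<dots> = real (card A) * (\<Sum>w\<in>B. \<Sum>w'\<in>B. s w w')" by (simp add: sum_distrib_left)
  also have "(\<Sum>w\<in>B. \<Sum>w'\<in>B. s w w') = (\<Sum>u\<in>A. \<Sum>w\<in>B. \<Sum>w'\<in>B. of_bool (good w w' u \<and> c {u, w} = c {u, w'}))"
  proof -
    have "(\<Sum>w\<in>B. \<Sum>w'\<in>B. s w w') = (\<Sum>w\<in>B. \<Sum>w'\<in>B. \<Sum>u\<in>A. of_bool (good w w' u \<and> c {u, w} = c {u, w'}))"
      unfolding s_def using fA by (simp add: card_filter_sum of_bool_def)
    also have "\<dots> = (\<Sum>w\<in>B. \<Sum>u\<in>A. \<Sum>w'\<in>B. of_bool (good w w' u \<and> c {u, w} = c {u, w'}))"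
      by (intro sum.cong refl sum.swap)
    also have "\<dots> = (\<Sum>u\<in>A. \<Sum>w\<in>B. \<Sum>w'\<in>B. of_bool (good w w' u \<and> c {u, w} = c {u, w'}))"
      by (rule sum.swap)
    finally show ?thesis .
  qed
  also have "\<dots> \<le> (\<Sum>u\<in>A. \<Sum>w\<in>B. real \<Lambda>)"
  proof (intro sum_mono)
    fix u w
    have "(\<Sum>w'\<in>B. of_bool (good w w' u \<and> c {u, w} = c {u, w'}) :: real)
        \<le> (\<Sum>w'\<in>B. of_bool ({w', u} \<in> XE \<and> c {w', u} = c {u, w}))"
      by (intro sum_mono) (auto simp: good_def insert_commute)
    also have "\<dots> = real (card {w'\<in>B. {w', u} \<in> XE \<and> c {w', u} = c {u, w}})"
      using fB by (simp add: card_filter_sum of_bool_def)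
    also have "\<dots> \<le> real \<Lambda>" using card_colour_nbrs[of B u "c {u, w}"] by simp
    finally show "(\<Sum>w'\<in>B. of_bool (good w w' u \<and> c {u, w} = c {u, w'}) :: real) \<le> real \<Lambda>" .
  qed
  also have "(\<Sum>u\<in>A. \<Sum>w\<in>B. real \<Lambda>) = real (card A) * real (card B) * real \<Lambda>" by simp
  finally have "(\<Sum>w\<in>B. \<Sum>w'\<in>B. (s w w')^2) \<le> real (card A) * (real (card A) * real (card B) * real \<Lambda>)"
    by (simp add: mult_left_mono)
  then show ?thesis unfolding s_def by (simp add: power2_eq_square mult_ac)
qed

lemma Q_exp:
  assumes fA: "finite A" and fB: "finite B"
  shows "measure_pmf.expectation \<Omega> (\<lambda>\<omega>. \<Sum>w\<in>B. \<Sum>w'\<in>B. ((\<Sum>u\<in>A. adj (Gp \<omega>) u w * adj (Gp \<omega>) u w') - t)^2)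
    \<le> 4 * real \<Lambda> * real (card A) * (real (card B))^2 + 2 * real \<Lambda> * (real (card A))^2 * real (card B)
       + 2 * (\<Sum>w\<in>B. \<Sum>w'\<in>B. (p^2 * (\<Sum>u\<in>A. adj XE u w * adj XE u w') - t)^2)"
proof -
  define s where "s w w' = real (card {u\<in>A. good w w' u \<and> c {u, w} = c {u, w'}})" for w w'
  define cod where "cod w w' = (\<Sum>u\<in>A. adj XE u w * adj XE u w')" for w w'
  define X where "X w w' \<omega> = (\<Sum>u\<in>A. YY w w' u \<omega>)" for w w' \<omega>
  have EX: "measure_pmf.expectation \<Omega> (X w w') = (\<Sum>u\<in>A. measure_pmf.expectation \<Omega> (YY w w' u))" for w w'
    unfolding X_def by (rule Bochner_Integration.integral_sum) (rule intO)
  have per: "measure_pmf.expectation \<Omega> (\<lambda>\<omega>. (X w w' \<omega> - t)^2)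
      \<le> 4 * real \<Lambda> * real (card A) + (2 * (s w w')^2 + 2 * (p^2 * cod w w' - t)^2)" for w w'
  proof -
    have "measure_pmf.expectation \<Omega> (\<lambda>\<omega>. (X w w' \<omega> - t)^2)
       = measure_pmf.expectation \<Omega> (\<lambda>\<omega>. (X w w' \<omega> - measure_pmf.expectation \<Omega> (X w w'))^2)
         + (measure_pmf.expectation \<Omega> (X w w') - t)^2" by (rule exp_sq_decomp)
    also have "measure_pmf.expectation \<Omega> (\<lambda>\<omega>. (X w w' \<omega> - measure_pmf.expectation \<Omega> (X w w'))^2)
        \<le> 4 * real \<Lambda> * real (card A)" unfolding EX unfolding X_def by (rule YY_var[OF fA])
    also have "(measure_pmf.expectation \<Omega> (X w w') - t)^2 \<le> 2 * (s w w')^2 + 2 * (p^2 * cod w w' - t)^2"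
    proof -
      have m: "\<bar>measure_pmf.expectation \<Omega> (X w w') - p^2 * cod w w'\<bar> \<le> s w w'"
        unfolding EX s_def cod_def by (rule YY_mean[OF fA])
      have "(measure_pmf.expectation \<Omega> (X w w') - t)^2
          = ((measure_pmf.expectation \<Omega> (X w w') - p^2 * cod w w') + (p^2 * cod w w' - t))^2" by simp
      also have "\<dots> \<le> 2 * (measure_pmf.expectation \<Omega> (X w w') - p^2 * cod w w')^2 + 2 * (p^2 * cod w w' - t)^2"
        by (rule sq_sum2)
      also have "(measure_pmf.expectation \<Omega> (X w w') - p^2 * cod w w')^2 \<le> (s w w')^2"
      proof -
        have "\<bar>measure_pmf.expectation \<Omega> (X w w') - p^2 * cod w w'\<bar>^2 \<le> (s w w')^2"
          by (rule power_mono[OF m]) simp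
        then show ?thesis by simp
      qed
      finally show ?thesis by simp
    qed
    finally show ?thesis by simp
  qed
  have "measure_pmf.expectation \<Omega> (\<lambda>\<omega>. \<Sum>w\<in>B. \<Sum>w'\<in>B. (X w w' \<omega> - t)^2)
      = (\<Sum>w\<in>B. \<Sum>w'\<in>B. measure_pmf.expectation \<Omega> (\<lambda>\<omega>. (X w w' \<omega> - t)^2))"
    by (simp add: Bochner_Integration.integral_sum intO)
  also have "\<dots> \<le> (\<Sum>w\<in>B. \<Sum>w'\<in>B. 4 * real \<Lambda> * real (card A) + (2 * (s w w')^2 + 2 * (p^2 * cod w w' - t)^2))"
    by (intro sum_mono per)
  also have "\<dots> = 4 * real \<Lambda> * real (card A) * (real (card B))^2 + 2 * (\<Sum>w\<in>B. \<Sum>w'\<in>B. (s w w')^2)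
      + 2 * (\<Sum>w\<in>B. \<Sum>w'\<in>B. (p^2 * cod w w' - t)^2)"
    by (simp add: sum.distrib sum_distrib_left power2_eq_square mult_ac)
  also have "\<dots> \<le> 4 * real \<Lambda> * real (card A) * (real (card B))^2 + 2 * (real \<Lambda> * (real (card A))^2 * real (card B))
      + 2 * (\<Sum>w\<in>B. \<Sum>w'\<in>B. (p^2 * cod w w' - t)^2)"
    using same_colour_sum[OF fA fB] unfolding s_def by simp
  finally show ?thesis unfolding X_def YY_def cod_def by (simp add: mult_ac)
qed

end


lemma cdist_finite_support:
  assumes "finite M" "finite (set_pmf sig)"
  shows "finite (set_pmf (cdist M cls sig p))"
proof -
  have "finite (set_pmf (coins M (\<lambda>e. p / pmf sig (cls e))))"
    unfolding coins_def by (rule Pi_pmf_finite_support[OF assms(1)]) auto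
  then show ?thesis unfolding cdist_def using assms(2) by simp
qed

locale inst =
  fixes VH :: "'a set" and EH :: "'a set set" and VG :: "'b set" and EG :: "'b set set"
    and r :: nat and X :: "nat \<Rightarrow> 'a set" and V :: "nat \<Rightarrow> 'b set"
    and c :: "'b set \<Rightarrow> 'c" and n :: nat
    and d :: real and \<Lambda> :: nat and \<Delta> :: nat and \<gamma> :: real and d' :: real and \<epsilon>' :: real and \<epsilon> :: real
  assumes blow: "blowup_instance VH EH VG EG r X V \<epsilon> d"
    and maxdeg: "max_degree_le VH EH \<Delta>"
    and eH: "\<forall>(i,j)\<in>pairs r. real (e_betw EH (X i) (X j)) \<ge> \<gamma>^2 * real n"
    and sizes: "\<forall>i\<in>{1..r}. \<bar>real (card (V i)) - real n\<bar> \<le> \<epsilon> * real n"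
    and locb0: "locally_bounded c EG \<Lambda>"
    and sumc: "\<forall>\<alpha>\<in>c ` EG. (\<Sum>(i,j)\<in>pairs r.
            real (e_col c \<alpha> EG (V i) (V j)) * real (e_betw EH (X i) (X j))) \<le> (1 - \<gamma>) * d * real n ^ 2"
    and d: "0 < d" "d \<le> 1" and r1: "1 \<le> r"
    and g: "0 < \<gamma>" "\<gamma> \<le> 1/2"
    and dp: "0 < d'" "d' \<le> d * \<gamma> / (16 * real r^2)"
    and ep: "0 < \<epsilon>'" "\<epsilon>' \<le> \<gamma> * d' / 16"
    and e: "0 < \<epsilon>" "\<epsilon> \<le> d / 2" "\<epsilon> \<le> \<epsilon>'^6 / 8" "\<epsilon> \<le> \<epsilon>'^12 / (512 * real r^2)" "\<epsilon> \<le> \<gamma> / 64"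
    and n1: "1 \<le> n"
    and L1: "1 \<le> \<Lambda>" and D1: "1 \<le> \<Delta>"
    and N1: "4 * real r^2 * real n * exp (- (\<epsilon>'^12 / (64 * real \<Lambda>)) * real n) \<le> 1/4"
    and N2: "4 * real r^4 * (real n)^2 * exp (- (\<gamma>^2 * d'^2 / (256 * (real \<Delta>)^2 * real \<Lambda>)) * real n) \<le> 1/4"
    and N3: "96 * real \<Lambda> * real r^2 \<le> real n * (\<epsilon>'^12 / 8)"
begin

definition "p = d' / d"
definition "\<theta> = \<epsilon>'^6 / 4"
definition "\<delta> = \<epsilon>'^12 / 8"
definition "P = pairs r"
definition EB :: "nat \<times> nat \<Rightarrow> 'b set set" where "EB x = edges_between EG (V (fst x)) (V (snd x))"
definition XE :: "'b set set" where "XE = (\<Union>x\<in>P. EB x)"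
definition cls :: "'b set \<Rightarrow> nat \<times> nat" where "cls e = (SOME x. x \<in> P \<and> e \<in> EB x)"

lemma sgG: "simple_graph VG EG" using blow unfolding blowup_instance_def by auto
lemma sgH: "simple_graph VH EH" using blow unfolding blowup_instance_def by auto
lemma fVG: "finite VG" using sgG unfolding simple_graph_def by auto
lemma VG_eq: "(\<Union>i\<in>{1..r}. V i) = VG" using blow unfolding blowup_instance_def by auto
lemma VH_eq: "(\<Union>i\<in>{1..r}. X i) = VH" using blow unfolding blowup_instance_def by auto
lemma Vdisj: "disjoint_family_on V {1..r}" using blow unfolding blowup_instance_def by auto
lemma cardXV: "\<forall>i\<in>{1..r}. card (X i) = card (V i)" using blow unfolding blowup_instance_def by auto
lemma srG: "\<And>i j. i \<in> {1..r} \<Longrightarrow> j \<in> {1..r} \<Longrightarrow> i \<noteq> j \<Longrightarrow>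
    super_regular (edges_between EG (V i) (V j)) (V i) (V j) \<epsilon> d"
  using blow unfolding blowup_instance_def by auto

lemma VsubG: "i \<in> {1..r} \<Longrightarrow> V i \<subseteq> VG" using VG_eq by blast
lemma fV: "i \<in> {1..r} \<Longrightarrow> finite (V i)" using fVG VsubG finite_subset by blast
lemma fX: "i \<in> {1..r} \<Longrightarrow> finite (X i)"
proof -
  assume i: "i \<in> {1..r}"
  have "finite VH" using sgH unfolding simple_graph_def by auto
  moreover have "X i \<subseteq> VH" using VH_eq i by blast
  ultimately show ?thesis using finite_subset by blast
qed

lemma Vdisj2: "i \<in> {1..r} \<Longrightarrow> j \<in> {1..r} \<Longrightarrow> i \<noteq> j \<Longrightarrow> V i \<inter> V j = {}"
  using Vdisj unfolding disjoint_family_on_def by auto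

lemma e_half: "\<epsilon> \<le> 1/2" using e d by linarith

lemma Nbounds: "i \<in> {1..r} \<Longrightarrow> (1 - \<epsilon>) * real n \<le> real (card (V i)) \<and> real (card (V i)) \<le> (1 + \<epsilon>) * real n"
  using sizes by (auto simp: abs_le_iff algebra_simps)

lemma Nlow: "i \<in> {1..r} \<Longrightarrow> real n / 2 \<le> real (card (V i))"
proof -
  assume i: "i \<in> {1..r}"
  have "(1/2) * real n \<le> (1 - \<epsilon>) * real n" using e_half by (intro mult_right_mono) auto
  then show ?thesis using Nbounds[OF i] by simp
qed

lemma Nup: "i \<in> {1..r} \<Longrightarrow> real (card (V i)) \<le> 2 * real n"
proof -
  assume i: "i \<in> {1..r}"
  have "(1 + \<epsilon>) * real n \<le> 2 * real n" using e_half by (intro mult_right_mono) auto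
  then show ?thesis using Nbounds[OF i] by simp
qed

lemma Vne: "i \<in> {1..r} \<Longrightarrow> V i \<noteq> {}"
proof
  assume i: "i \<in> {1..r}" and "V i = {}"
  then have "real n / 2 \<le> 0" using Nlow[OF i] by simp
  then show False using n1 by simp
qed

lemma p_pos: "0 < p" using dp d by (simp add: p_def)
lemma p_small: "p \<le> \<gamma> / (16 * real r^2)"
proof -
  have "p = d' / d" by (simp add: p_def)
  also have "\<dots> \<le> (d * \<gamma> / (16 * real r^2)) / d" using dp d by (intro divide_right_mono) auto
  also have "\<dots> = \<gamma> / (16 * real r^2)" using d by simp
  finally show ?thesis .
qed
lemma r2: "real r^2 \<ge> 1" using r1 by simp
lemma p_le1: "p \<le> 1"
proof -
  have "\<gamma> / (16 * real r^2) \<le> 1" using g r2 by (simp add: divide_le_eq)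
  then show ?thesis using p_small by linarith
qed
lemma pd: "p * d = d'" using d by (simp add: p_def)

lemma P_sub: "x \<in> P \<Longrightarrow> fst x \<in> {1..r} \<and> snd x \<in> {1..r} \<and> fst x < snd x"
  unfolding P_def pairs_def by auto

lemma fP: "finite P" unfolding P_def pairs_def
  by (rule finite_subset[of _ "{1..r} \<times> {1..r}"]) auto

lemma cardP: "real (card P) \<le> real r^2"
proof -
  have "card P \<le> card ({1..r} \<times> {1..r})" unfolding P_def pairs_def by (rule card_mono) auto
  then show ?thesis by (simp add: power2_eq_square flip: of_nat_mult)
qed

lemma z_notin: "(0, 0) \<notin> P" unfolding P_def pairs_def by auto

lemma EB_unique:
  assumes x: "x \<in> P" and y: "y \<in> P" and ex: "e \<in> EB x" and ey: "e \<in> EB y"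
  shows "x = y"
proof -
  obtain i j where xij: "x = (i, j)" by (cases x)
  obtain k l where ykl: "y = (k, l)" by (cases y)
  have ij: "i \<in> {1..r}" "j \<in> {1..r}" "i < j" using P_sub[OF x] xij by auto
  have kl: "k \<in> {1..r}" "l \<in> {1..r}" "k < l" using P_sub[OF y] ykl by auto
  obtain u v where uv: "u \<in> V i" "v \<in> V j" "e = {u, v}" using ex xij unfolding EB_def edges_between_def by auto
  obtain u' v' where uv': "u' \<in> V k" "v' \<in> V l" "e = {u', v'}" using ey ykl unfolding EB_def edges_between_def by auto
  have mem: "\<And>a s t. a \<in> V s \<Longrightarrow> a \<in> V t \<Longrightarrow> s \<in> {1..r} \<Longrightarrow> t \<in> {1..r} \<Longrightarrow> s = t"
    using Vdisj2 by blast
  from uv uv' have "(u = u' \<and> v = v') \<or> (u = v' \<and> v = u')" by (metis doubleton_eq_iff)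
  then show ?thesis
  proof
    assume "u = u' \<and> v = v'"
    then have "i = k" "j = l" using mem uv uv' ij kl by metis+
    then show ?thesis using xij ykl by simp
  next
    assume "u = v' \<and> v = u'"
    then have "i = l" "j = k" using mem uv uv' ij kl by metis+
    then show ?thesis using ij kl by simp
  qed
qed

lemma cls_eq: "x \<in> P \<Longrightarrow> e \<in> EB x \<Longrightarrow> cls e = x"
proof -
  assume x: "x \<in> P" and e: "e \<in> EB x"
  have "cls e \<in> P \<and> e \<in> EB (cls e)" unfolding cls_def by (rule someI[of _ x]) (use x e in auto)
  then show ?thesis using EB_unique x e by blast
qed

lemma XE_EG: "XE \<subseteq> EG" unfolding XE_def EB_def edges_between_def by auto
lemma fEG: "finite EG"
proof -
  have "EG \<subseteq> Pow VG" using sgG unfolding simple_graph_def by auto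
  then show ?thesis using fVG finite_subset by blast
qed
lemma fXE: "finite XE" using XE_EG fEG finite_subset by blast

lemma cls_XE: "e \<in> XE \<Longrightarrow> cls e \<in> P \<and> e \<in> EB (cls e)"
  unfolding XE_def using cls_eq by auto

end


context inst
begin

definition eHx :: "nat \<times> nat \<Rightarrow> real" where "eHx x = real (e_betw EH (X (fst x)) (X (snd x)))"
definition ecol :: "'c \<Rightarrow> nat \<times> nat \<Rightarrow> real" where "ecol \<alpha> x = real (e_col c \<alpha> EG (V (fst x)) (V (snd x)))"
definition qw :: "'c \<Rightarrow> nat \<times> nat \<Rightarrow> real" where
  "qw \<alpha> x = ecol \<alpha> x * eHx x / ((1 - 3 * \<gamma> / 4) * d * real n ^ 2) + p"

lemma den_pos: "(1 - 3 * \<gamma> / 4) * d * real n ^ 2 > 0" using g d n1 by simp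

lemma qw_ge_p: "p \<le> qw \<alpha> x"
proof -
  have "0 \<le> ecol \<alpha> x * eHx x / ((1 - 3 * \<gamma> / 4) * d * real n ^ 2)"
    using den_pos by (simp add: ecol_def eHx_def)
  then show ?thesis by (simp add: qw_def)
qed

lemma qw_sum: "\<alpha> \<in> c ` EG \<Longrightarrow> (\<Sum>x\<in>P. qw \<alpha> x) \<le> 1"
proof -
  assume a: "\<alpha> \<in> c ` EG"
  define D0 where "D0 = (1 - 3 * \<gamma> / 4) * d * real n ^ 2"
  have D0: "D0 > 0" using den_pos by (simp add: D0_def)
  have s1: "(\<Sum>x\<in>P. ecol \<alpha> x * eHx x) \<le> (1 - \<gamma>) * d * real n ^ 2"
  proof -
    obtain e0 where "e0 \<in> EG" "\<alpha> = c e0" using a by blast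
    then show ?thesis using sumc unfolding P_def ecol_def eHx_def by (auto simp: case_prod_beta)
  qed
  have "(\<Sum>x\<in>P. qw \<alpha> x) = (\<Sum>x\<in>P. ecol \<alpha> x * eHx x) / D0 + real (card P) * p"
    unfolding qw_def D0_def by (simp add: sum.distrib sum_divide_distrib)
  also have "\<dots> \<le> (1 - \<gamma>) * d * real n ^ 2 / D0 + real r^2 * (\<gamma> / (16 * real r^2))"
    using s1 D0 cardP p_small p_pos by (intro add_mono divide_right_mono mult_mono) auto
  also have "real r^2 * (\<gamma> / (16 * real r^2)) = \<gamma> / 16" using r1 by simp
  also have "(1 - \<gamma>) * d * real n ^ 2 / D0 = (1 - \<gamma>) / (1 - 3 * \<gamma> / 4)"
    using d n1 g unfolding D0_def by (simp add: field_simps)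
  also have "(1 - \<gamma>) / (1 - 3 * \<gamma> / 4) \<le> 1 - \<gamma> / 4"
  proof -
    have "(1 - \<gamma>) \<le> (1 - \<gamma> / 4) * (1 - 3 * \<gamma> / 4)" using g by (simp add: algebra_simps power2_eq_square)
    then show ?thesis using g by (simp add: divide_le_eq)
  qed
  finally show ?thesis using g by linarith
qed

definition sig :: "'c \<Rightarrow> (nat \<times> nat) pmf" where
  "sig \<alpha> = (SOME \<pi>. (\<forall>x\<in>P. pmf \<pi> x = qw \<alpha> x) \<and> set_pmf \<pi> \<subseteq> insert (0, 0) P)"

lemma sig_props: "\<alpha> \<in> c ` EG \<Longrightarrow> (\<forall>x\<in>P. pmf (sig \<alpha>) x = qw \<alpha> x) \<and> set_pmf (sig \<alpha>) \<subseteq> insert (0, 0) P"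
proof -
  assume a: "\<alpha> \<in> c ` EG"
  have "\<exists>\<pi>. (\<forall>x\<in>P. pmf \<pi> x = qw \<alpha> x) \<and> set_pmf \<pi> \<subseteq> insert (0, 0) P"
  proof (rule exists_weight_pmf[OF fP z_notin])
    show "\<forall>x\<in>P. 0 \<le> qw \<alpha> x" using qw_ge_p p_pos by (meson less_le_trans less_le)
    show "(\<Sum>x\<in>P. qw \<alpha> x) \<le> 1" by (rule qw_sum[OF a])
  qed
  then show ?thesis unfolding sig_def by (rule someI_ex)
qed

definition Dist :: "'c \<Rightarrow> 'b set set pmf" where
  "Dist \<alpha> = cdist {e\<in>XE. c e = \<alpha>} cls (sig \<alpha>) p"

lemma cXE: "e \<in> XE \<Longrightarrow> c e \<in> c ` EG" using XE_EG by auto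

lemma model_inst: "model XE c Dist p \<Lambda>"
proof
  show "finite XE" by (rule fXE)
next
  fix e assume e: "e \<in> XE"
  have clsP: "cls e \<in> P" using cls_XE[OF e] by simp
  have q: "pmf (sig (c e)) (cls e) = qw (c e) (cls e)" using sig_props[OF cXE[OF e]] clsP by simp
  show "measure_pmf.prob (Dist (c e)) {S. e \<in> S} = p"
    unfolding Dist_def
  proof (rule cdist_prob)
    show "finite {e' \<in> XE. c e' = c e}" using fXE by simp
    show "e \<in> {e' \<in> XE. c e' = c e}" using e by simp
    show "0 \<le> p" using p_pos by simp
    show "p \<le> pmf (sig (c e)) (cls e)" using q qw_ge_p by simp
    show "0 < pmf (sig (c e)) (cls e)" using q qw_ge_p[of "c e" "cls e"] p_pos by simp
  qed
next
  fix \<alpha> assume a: "\<alpha> \<in> c ` XE"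
  have "\<alpha> \<in> c ` EG" using a XE_EG by blast
  then have "set_pmf (sig \<alpha>) \<subseteq> insert (0, 0) P" using sig_props by blast
  then have "finite (set_pmf (sig \<alpha>))" using fP finite_subset by blast
  then show "finite (set_pmf (Dist \<alpha>))" unfolding Dist_def
    by (intro cdist_finite_support) (use fXE in simp_all)
next
  fix \<alpha> v
  have "card {e \<in> XE. c e = \<alpha> \<and> v \<in> e} \<le> card {e \<in> EG. c e = \<alpha> \<and> v \<in> e}"
    by (rule card_mono) (use fEG XE_EG in auto)
  also have "\<dots> \<le> \<Lambda>" using locb0 unfolding locally_bounded_def by auto
  finally show "card {e \<in> XE. c e = \<alpha> \<and> v \<in> e} \<le> \<Lambda>" .
next
  show "0 \<le> p" using p_pos by simp
  show "p \<le> 1" by (rule p_le1)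
qed

sublocale M: model XE c Dist p \<Lambda> by (rule model_inst)

end


context inst
begin

lemma adj_XE_EG:
  assumes i: "i \<in> {1..r}" and j: "j \<in> {1..r}" and ij: "i \<noteq> j" and v: "v \<in> V i" and w: "w \<in> V j"
  shows "adj XE v w = adj EG v w"
proof -
  have "{v, w} \<in> XE" if vw: "{v, w} \<in> EG"
  proof (cases "i < j")
    case True
    have "(i, j) \<in> P" using i j True by (simp add: P_def pairs_def)
    moreover have "{v, w} \<in> EB (i, j)" using vw v w unfolding EB_def edges_between_def by auto
    ultimately show ?thesis unfolding XE_def by blast
  next
    case False
    then have "j < i" using ij by simp
    then have "(j, i) \<in> P" using i j by (simp add: P_def pairs_def)
    moreover have "{v, w} \<in> EB (j, i)" using vw v w unfolding EB_def edges_between_def by (auto simp: insert_commute)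
    ultimately show ?thesis unfolding XE_def by blast
  qed
  then show ?thesis using XE_EG unfolding adj_def by auto
qed

lemma card_VG: "real (card VG) \<le> 2 * real r * real n"
proof -
  have "card VG \<le> (\<Sum>i\<in>{1..r}. card (V i))" unfolding VG_eq[symmetric] by (rule card_UN_le) simp
  then have "real (card VG) \<le> (\<Sum>i\<in>{1..r}. real (card (V i)))" by (simp flip: of_nat_sum)
  also have "\<dots> \<le> (\<Sum>i\<in>{1..r}. 2 * real n)" by (intro sum_mono Nup) auto
  finally show ?thesis by simp
qed

definition Ev :: "'b \<Rightarrow> nat \<Rightarrow> 'b set set" where
  "Ev v j = (\<lambda>w. {v, w}) ` {w\<in>V j. {v, w} \<in> XE}"

lemma Ev_sum:
  assumes j: "j \<in> {1..r}"
  shows "(\<Sum>w\<in>V j. adj (M.Gp \<omega>) v w) = (\<Sum>e\<in>Ev v j. M.Ind e \<omega>)"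
    and "real (card (Ev v j)) = (\<Sum>w\<in>V j. adj XE v w)"
proof -
  have inj: "inj_on (\<lambda>w. {v, w}) {w\<in>V j. {v, w} \<in> XE}" by (rule inj_onI) (auto simp: doubleton_eq_iff)
  have "(\<Sum>w\<in>V j. adj (M.Gp \<omega>) v w) = (\<Sum>w\<in>{w\<in>V j. {v, w} \<in> XE}. M.Ind {v, w} \<omega>)"
    using fV[OF j] by (simp add: M.adj_Gp sum.If_cases Int_def)
  also have "\<dots> = (\<Sum>e\<in>Ev v j. M.Ind e \<omega>)" unfolding Ev_def by (rule sum.reindex[OF inj, symmetric, unfolded comp_def])
  finally show "(\<Sum>w\<in>V j. adj (M.Gp \<omega>) v w) = (\<Sum>e\<in>Ev v j. M.Ind e \<omega>)" .
  have "real (card (Ev v j)) = real (card {w\<in>V j. {v, w} \<in> XE})" unfolding Ev_def using card_image[OF inj] by simp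
  also have "\<dots> = (\<Sum>w\<in>V j. adj XE v w)" using fV[OF j] by (simp add: card_filter_sum adj_def)
  finally show "real (card (Ev v j)) = (\<Sum>w\<in>V j. adj XE v w)" .
qed

lemma Ev_card_le: "j \<in> {1..r} \<Longrightarrow> real (card (Ev v j)) \<le> real (card (V j))"
proof -
  assume j: "j \<in> {1..r}"
  have "card (Ev v j) \<le> card {w\<in>V j. {v, w} \<in> XE}" unfolding Ev_def by (rule card_image_le) (simp add: fV[OF j])
  also have "\<dots> \<le> card (V j)" by (rule card_mono) (auto simp: fV[OF j])
  finally show ?thesis by simp
qed

definition B1 :: "('c \<Rightarrow> 'b set set) set" where
  "B1 = (\<Union>(v, j)\<in>{(v, j). j \<in> {1..r} \<and> v \<in> VG - V j}.
          {\<omega>. \<bar>(\<Sum>e\<in>Ev v j. M.Ind e \<omega>) - p * real (card (Ev v j))\<bar> \<ge> \<theta> * real (card (V j)) / 2})"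

lemma B1_prob: "measure_pmf.prob M.\<Omega> B1 \<le> 1/4"
proof -
  define I1 where "I1 = {(v, j). j \<in> {1..r} \<and> v \<in> VG - V j}"
  define a1 where "a1 = \<epsilon>'^12 / (64 * real \<Lambda>)"
  have fI1: "finite I1" unfolding I1_def by (rule finite_subset[of _ "VG \<times> {1..r}"]) (auto simp: fVG)
  have cI1: "real (card I1) \<le> 2 * real r^2 * real n"
  proof -
    have "card I1 \<le> card (VG \<times> {1..r})" unfolding I1_def by (rule card_mono) (auto simp: fVG)
    then have "real (card I1) \<le> real (card VG) * real r" by (simp add: card_cartesian_product flip: of_nat_mult)
    also have "\<dots> \<le> 2 * real r * real n * real r" using card_VG by (intro mult_right_mono) auto
    finally show ?thesis by (simp add: power2_eq_square mult_ac)
  qed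
  have each: "measure_pmf.prob M.\<Omega> {\<omega>. \<bar>(\<Sum>e\<in>Ev v j. M.Ind e \<omega>) - p * real (card (Ev v j))\<bar> \<ge> \<theta> * real (card (V j)) / 2}
      \<le> 2 * exp (- a1 * real n)" if vj: "(v, j) \<in> I1" for v j
  proof -
    have j: "j \<in> {1..r}" using vj by (simp add: I1_def)
    have Nj: "real n / 2 \<le> real (card (V j))" by (rule Nlow[OF j])
    have th: "\<theta> > 0" using ep by (simp add: \<theta>_def)
    have Vp: "real (card (V j)) > 0" using Nj n1 by linarith
    have tpos: "\<theta> * real (card (V j)) / 2 > 0" using th Vp by simp
    show ?thesis
    proof (cases "Ev v j = {}")
      case True
      then have "{\<omega>. \<bar>(\<Sum>e\<in>Ev v j. M.Ind e \<omega>) - p * real (card (Ev v j))\<bar> \<ge> \<theta> * real (card (V j)) / 2} = {}"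
        using tpos by simp
      then show ?thesis by simp
    next
      case False
      have EvX: "Ev v j \<subseteq> XE" unfolding Ev_def by auto
      have kb: "card {e\<in>Ev v j. c e = \<alpha>} \<le> \<Lambda>" for \<alpha>
      proof -
        have "card {e\<in>Ev v j. c e = \<alpha>} \<le> card {e\<in>XE. c e = \<alpha> \<and> v \<in> e}"
          by (rule card_mono) (auto simp: fXE Ev_def)
        also have "\<dots> \<le> \<Lambda>" by (rule M.locb)
        finally show ?thesis .
      qed
      have "measure_pmf.prob M.\<Omega> {\<omega>. \<bar>(\<Sum>e\<in>Ev v j. M.Ind e \<omega>) - p * real (card (Ev v j))\<bar> \<ge> \<theta> * real (card (V j)) / 2}
          \<le> 2 * exp (- 2 * (\<theta> * real (card (V j)) / 2)^2 / (real \<Lambda> * real (card (Ev v j))))"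
        by (rule M.deg_conc[OF EvX False kb]) (use tpos in simp)
      also have "\<dots> \<le> 2 * exp (- a1 * real n)"
      proof -
        have cE: "0 < real (card (Ev v j))" using False EvX fXE by (simp add: card_gt_0_iff finite_subset)
        have L: "real \<Lambda> \<ge> 1" using L1 by simp
        have "a1 * real n = (\<theta>^2 / (4 * real \<Lambda>)) * real n" by (simp add: a1_def \<theta>_def power2_eq_square field_simps)
        also have "\<dots> \<le> (\<theta>^2 / (4 * real \<Lambda>)) * (2 * real (card (V j)))"
          using Nj L by (intro mult_left_mono) auto
        also have "\<dots> = \<theta>^2 * real (card (V j)) / (2 * real \<Lambda>)" using L by (simp add: field_simps)
        also have "\<dots> = \<theta>^2 * real (card (V j))^2 / (2 * real \<Lambda> * real (card (V j)))"
          using Nj n1 by (simp add: power2_eq_square field_simps)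
        also have "\<dots> \<le> \<theta>^2 * real (card (V j))^2 / (2 * real \<Lambda> * real (card (Ev v j)))"
          using cE L Ev_card_le[OF j, of v] by (intro divide_left_mono mult_left_mono) auto
        also have "\<dots> = 2 * (\<theta> * real (card (V j)) / 2)^2 / (real \<Lambda> * real (card (Ev v j)))"
          by (simp add: power2_eq_square field_simps)
        finally show ?thesis by simp
      qed
      finally show ?thesis .
    qed
  qed
  have "measure_pmf.prob M.\<Omega> B1 \<le> (\<Sum>(v, j)\<in>I1. measure_pmf.prob M.\<Omega>
        {\<omega>. \<bar>(\<Sum>e\<in>Ev v j. M.Ind e \<omega>) - p * real (card (Ev v j))\<bar> \<ge> \<theta> * real (card (V j)) / 2})"
    unfolding B1_def I1_def[symmetric] case_prod_beta by (rule measure_UNION_le[OF fI1]) simp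
  also have "\<dots> \<le> (\<Sum>(v, j)\<in>I1. 2 * exp (- a1 * real n))"
    by (intro sum_mono) (use each in auto)
  also have "\<dots> = real (card I1) * (2 * exp (- a1 * real n))" by simp
  also have "\<dots> \<le> 2 * real r^2 * real n * (2 * exp (- a1 * real n))" using cI1 by (intro mult_right_mono) auto
  also have "\<dots> = 4 * real r^2 * real n * exp (- a1 * real n)" by simp
  also have "\<dots> \<le> 1/4" using N1 by (simp add: a1_def)
  finally show ?thesis .
qed

end


context inst
begin

definition mcol :: "'c \<Rightarrow> nat \<times> nat \<Rightarrow> nat" where
  "mcol \<alpha> x = card {e\<in>{e\<in>XE. c e = \<alpha>}. cls e = x}"
definition tt :: "nat \<times> nat \<Rightarrow> real" where
  "tt x = \<gamma> * d' * real n^2 / (8 * eHx x)"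

definition B2 :: "('c \<Rightarrow> 'b set set) set" where
  "B2 = (\<Union>(\<alpha>, x)\<in>{(\<alpha>, x). \<alpha> \<in> M.Cs \<and> x \<in> P \<and> mcol \<alpha> x > 0}.
          {\<omega>. real (card {e\<in>\<omega> \<alpha>. cls e = x}) \<ge> real (mcol \<alpha> x) * (p / pmf (sig \<alpha>) x) + tt x})"

lemma eHx_pos: "x \<in> P \<Longrightarrow> eHx x \<ge> \<gamma>^2 * real n"
  using eH unfolding eHx_def P_def by (cases x) auto

lemma eHx_up: "x \<in> P \<Longrightarrow> eHx x \<le> 2 * real \<Delta> * real n"
proof -
  assume x: "x \<in> P"
  define i where "i = fst x"
  define j where "j = snd x"
  have i: "i \<in> {1..r}" and j: "j \<in> {1..r}" using P_sub[OF x] by (auto simp: i_def j_def)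
  have XiH: "X i \<subseteq> VH" using VH_eq i by blast
  have "edges_between EH (X i) (X j) \<subseteq> (\<Union>a\<in>X i. {e\<in>EH. a \<in> e})" unfolding edges_between_def by auto
  then have "card (edges_between EH (X i) (X j)) \<le> card (\<Union>a\<in>X i. {e\<in>EH. a \<in> e})"
  proof (rule card_mono[rotated])
    have "finite EH"
    proof -
      have "EH \<subseteq> Pow VH" using sgH unfolding simple_graph_def by auto
      moreover have "finite VH" using sgH unfolding simple_graph_def by auto
      ultimately show ?thesis using finite_subset by blast
    qed
    then show "finite (\<Union>a\<in>X i. {e\<in>EH. a \<in> e})" using fX[OF i] by auto
  qed
  also have "\<dots> \<le> (\<Sum>a\<in>X i. card {e\<in>EH. a \<in> e})" by (rule card_UN_le[OF fX[OF i]])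
  also have "\<dots> \<le> (\<Sum>a\<in>X i. \<Delta>)" by (intro sum_mono) (use maxdeg XiH in \<open>auto simp: max_degree_le_def\<close>)
  also have "\<dots> = \<Delta> * card (V i)" using cardXV i by simp
  finally have "eHx x \<le> real \<Delta> * real (card (V i))"
    unfolding eHx_def e_betw_def i_def j_def by (simp flip: of_nat_mult)
  also have "\<dots> \<le> real \<Delta> * (2 * real n)" using Nup[OF i] by (intro mult_left_mono) auto
  finally show ?thesis by simp
qed

lemma mcol_up: "x \<in> P \<Longrightarrow> real (mcol \<alpha> x) \<le> 2 * real \<Lambda> * real n"
proof -
  assume x: "x \<in> P"
  define i where "i = fst x"
  have i: "i \<in> {1..r}" using P_sub[OF x] by (auto simp: i_def)
  have "{e\<in>{e\<in>XE. c e = \<alpha>}. cls e = x} \<subseteq> (\<Union>u\<in>V i. {e\<in>XE. c e = \<alpha> \<and> u \<in> e})"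
  proof
    fix e assume e: "e \<in> {e\<in>{e\<in>XE. c e = \<alpha>}. cls e = x}"
    then have "e \<in> EB x" using cls_XE by auto
    then obtain u v where "u \<in> V i" "e = {u, v}" unfolding EB_def edges_between_def i_def by auto
    then show "e \<in> (\<Union>u\<in>V i. {e\<in>XE. c e = \<alpha> \<and> u \<in> e})" using e by auto
  qed
  then have "mcol \<alpha> x \<le> card (\<Union>u\<in>V i. {e\<in>XE. c e = \<alpha> \<and> u \<in> e})"
    unfolding mcol_def by (rule card_mono[rotated]) (use fV[OF i] fXE in auto)
  also have "\<dots> \<le> (\<Sum>u\<in>V i. card {e\<in>XE. c e = \<alpha> \<and> u \<in> e})" by (rule card_UN_le[OF fV[OF i]])
  also have "\<dots> \<le> (\<Sum>u\<in>V i. \<Lambda>)" by (intro sum_mono M.locb)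
  also have "\<dots> = \<Lambda> * card (V i)" by simp
  finally have "real (mcol \<alpha> x) \<le> real \<Lambda> * real (card (V i))" by (simp flip: of_nat_mult)
  also have "\<dots> \<le> real \<Lambda> * (2 * real n)" using Nup[OF i] by (intro mult_left_mono) auto
  finally show ?thesis by simp
qed

lemma card_EG: "real (card EG) \<le> (real (card VG))^2"
proof -
  have "EG \<subseteq> (\<lambda>(u, v). {u, v}) ` (VG \<times> VG)"
  proof
    fix e assume "e \<in> EG"
    then obtain u v where "e = {u, v}" "u \<in> VG" "v \<in> VG" using sgG unfolding simple_graph_def by blast
    then show "e \<in> (\<lambda>(u, v). {u, v}) ` (VG \<times> VG)" by auto
  qed
  then have "card EG \<le> card ((\<lambda>(u, v). {u, v}) ` (VG \<times> VG))" by (rule card_mono[rotated]) (simp add: fVG)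
  also have "\<dots> \<le> card (VG \<times> VG)" by (rule card_image_le) (simp add: fVG)
  finally show ?thesis by (simp add: card_cartesian_product power2_eq_square flip: of_nat_mult)
qed

lemma B2_prob: "measure_pmf.prob M.\<Omega> B2 \<le> 1/4"
proof -
  define I2 where "I2 = {(\<alpha>, x). \<alpha> \<in> M.Cs \<and> x \<in> P \<and> mcol \<alpha> x > 0}"
  define a2 where "a2 = \<gamma>^2 * d'^2 / (256 * (real \<Delta>)^2 * real \<Lambda>)"
  have fI2: "finite I2" unfolding I2_def by (rule finite_subset[of _ "M.Cs \<times> P"]) (auto simp: M.fCs fP)
  have cI2: "real (card I2) \<le> 4 * real r^4 * (real n)^2"
  proof -
    have "card I2 \<le> card (M.Cs \<times> P)" unfolding I2_def by (rule card_mono) (auto simp: M.fCs fP)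
    then have "real (card I2) \<le> real (card M.Cs) * real (card P)" by (simp add: card_cartesian_product flip: of_nat_mult)
    also have "\<dots> \<le> (2 * real r * real n)^2 * real r^2"
    proof (rule mult_mono)
      have "card M.Cs \<le> card XE" unfolding M.Cs_def by (rule card_image_le[OF fXE])
      also have "\<dots> \<le> card EG" by (rule card_mono[OF fEG XE_EG])
      finally have "real (card M.Cs) \<le> real (card EG)" by simp
      also have "\<dots> \<le> (real (card VG))^2" by (rule card_EG)
      also have "\<dots> \<le> (2 * real r * real n)^2" by (rule power_mono[OF card_VG]) simp
      finally show "real (card M.Cs) \<le> (2 * real r * real n)^2" .
    qed (use cardP in auto)
    finally show ?thesis by (simp add: power2_eq_square power4_eq_xxxx mult_ac)
  qed
  have each: "measure_pmf.prob M.\<Omega> {\<omega>. real (card {e\<in>\<omega> \<alpha>. cls e = x}) \<ge> real (mcol \<alpha> x) * (p / pmf (sig \<alpha>) x) + tt x}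
      \<le> exp (- a2 * real n)" if ax: "(\<alpha>, x) \<in> I2" for \<alpha> x
  proof -
    have a: "\<alpha> \<in> M.Cs" and x: "x \<in> P" and m0: "mcol \<alpha> x > 0" using ax by (auto simp: I2_def)
    have aG: "\<alpha> \<in> c ` EG" using a XE_EG by (auto simp: M.Cs_def)
    have q: "pmf (sig \<alpha>) x = qw \<alpha> x" using sig_props[OF aG] x by simp
    have eh: "eHx x \<ge> \<gamma>^2 * real n" by (rule eHx_pos[OF x])
    have "\<gamma>^2 * real n > 0" using g n1 by simp
    then have ehp: "eHx x > 0" using eh by linarith
    have tt0: "0 \<le> tt x" unfolding tt_def using g dp ehp by simp
    have "measure_pmf.prob M.\<Omega> {\<omega>. real (card {e\<in>\<omega> \<alpha>. cls e = x}) \<ge> real (mcol \<alpha> x) * (p / pmf (sig \<alpha>) x) + tt x}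
        = measure_pmf.prob (Dist \<alpha>) {S. real (card {e\<in>S. cls e = x}) \<ge> real (mcol \<alpha> x) * (p / pmf (sig \<alpha>) x) + tt x}"
      unfolding M.\<Omega>_def using Pi_pmf_prob_component[OF M.fCs a, of "{}" Dist
          "{S. real (card {e\<in>S. cls e = x}) \<ge> real (mcol \<alpha> x) * (p / pmf (sig \<alpha>) x) + tt x}"] by simp
    also have "\<dots> \<le> exp (- 2 * (tt x)^2 / real (mcol \<alpha> x))"
      unfolding Dist_def mcol_def
    proof (rule cdist_tail)
      show "finite {e \<in> XE. c e = \<alpha>}" using fXE by simp
      show "0 \<le> p" using p_pos by simp
      show "0 < pmf (sig \<alpha>) x" using q qw_ge_p[of \<alpha> x] p_pos by simp
      show "p \<le> pmf (sig \<alpha>) x" using q qw_ge_p by simp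
      show "{e \<in> {e \<in> XE. c e = \<alpha>}. cls e = x} \<noteq> {}" using m0 unfolding mcol_def by (metis card.empty less_irrefl)
      show "0 \<le> tt x" by (rule tt0)
    qed
    also have "\<dots> \<le> exp (- a2 * real n)"
    proof -
      have mp: "real (mcol \<alpha> x) > 0" using m0 by simp
      have mu: "real (mcol \<alpha> x) \<le> 2 * real \<Lambda> * real n" by (rule mcol_up[OF x])
      have ehu: "eHx x \<le> 2 * real \<Delta> * real n" by (rule eHx_up[OF x])
      have ttl: "tt x \<ge> \<gamma> * d' * real n / (16 * real \<Delta>)"
      proof -
        have "\<gamma> * d' * real n / (16 * real \<Delta>) = \<gamma> * d' * real n^2 / (8 * (2 * real \<Delta> * real n))"
          using n1 by (simp add: power2_eq_square)
        also have "\<dots> \<le> \<gamma> * d' * real n^2 / (8 * eHx x)"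
          using ehu ehp g dp n1 D1 by (intro divide_left_mono mult_left_mono) auto
        finally show ?thesis unfolding tt_def .
      qed
      have ttl0: "\<gamma> * d' * real n / (16 * real \<Delta>) \<ge> 0" using g dp by simp
      have "a2 * real n = 2 * (\<gamma> * d' * real n / (16 * real \<Delta>))^2 / (2 * real \<Lambda> * real n)"
        using n1 D1 L1 by (simp add: a2_def power2_eq_square field_simps)
      also have "\<dots> \<le> 2 * (tt x)^2 / (2 * real \<Lambda> * real n)"
        using ttl ttl0 L1 n1 by (intro divide_right_mono mult_left_mono power_mono) auto
      also have "\<dots> \<le> 2 * (tt x)^2 / real (mcol \<alpha> x)"
        using mp mu by (intro divide_left_mono) auto
      finally show ?thesis by simp
    qed
    finally show ?thesis .
  qed
  have "measure_pmf.prob M.\<Omega> B2 \<le> (\<Sum>(\<alpha>, x)\<in>I2. measure_pmf.prob M.\<Omega>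
        {\<omega>. real (card {e\<in>\<omega> \<alpha>. cls e = x}) \<ge> real (mcol \<alpha> x) * (p / pmf (sig \<alpha>) x) + tt x})"
    unfolding B2_def I2_def[symmetric] case_prod_beta by (rule measure_UNION_le[OF fI2]) simp
  also have "\<dots> \<le> (\<Sum>(\<alpha>, x)\<in>I2. exp (- a2 * real n))"
    by (intro sum_mono) (use each in auto)
  also have "\<dots> = real (card I2) * exp (- a2 * real n)" by simp
  also have "\<dots> \<le> 4 * real r^4 * (real n)^2 * exp (- a2 * real n)" using cI2 by (intro mult_right_mono) auto
  also have "\<dots> \<le> 1/4" using N2 by (simp add: a2_def)
  finally show ?thesis .
qed

end


context inst
begin

definition Qf :: "nat \<Rightarrow> nat \<Rightarrow> ('c \<Rightarrow> 'b set set) \<Rightarrow> real" where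
  "Qf i j \<omega> = (\<Sum>w\<in>V j. \<Sum>w'\<in>V j. ((\<Sum>u\<in>V i. adj (M.Gp \<omega>) u w * adj (M.Gp \<omega>) u w') - d'^2 * real (card (V i)))^2)"

definition B3 :: "('c \<Rightarrow> 'b set set) set" where
  "B3 = (\<Union>(i, j)\<in>{(i, j). i \<in> {1..r} \<and> j \<in> {1..r} \<and> i \<noteq> j}.
          {\<omega>. Qf i j \<omega> \<ge> \<delta> * (real (card (V i)))^2 * (real (card (V j)))^2})"

lemma Qf_exp:
  assumes i: "i \<in> {1..r}" and j: "j \<in> {1..r}" and ij: "i \<noteq> j"
  shows "measure_pmf.expectation M.\<Omega> (Qf i j) \<le>
     4 * real \<Lambda> * real (card (V i)) * (real (card (V j)))^2 + 2 * real \<Lambda> * (real (card (V i)))^2 * real (card (V j))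
     + 8 * \<epsilon> * (real (card (V i)))^2 * (real (card (V j)))^2"
proof -
  define Ni where "Ni = real (card (V i))"
  define Nj where "Nj = real (card (V j))"
  have "measure_pmf.expectation M.\<Omega> (Qf i j) \<le>
     4 * real \<Lambda> * Ni * Nj^2 + 2 * real \<Lambda> * Ni^2 * Nj
     + 2 * (\<Sum>w\<in>V j. \<Sum>w'\<in>V j. (p^2 * (\<Sum>u\<in>V i. adj XE u w * adj XE u w') - d'^2 * Ni)^2)"
    unfolding Qf_def Ni_def Nj_def by (rule M.Q_exp[OF fV[OF i] fV[OF j]])
  also have "(\<Sum>w\<in>V j. \<Sum>w'\<in>V j. (p^2 * (\<Sum>u\<in>V i. adj XE u w * adj XE u w') - d'^2 * Ni)^2)
      \<le> (\<Sum>w\<in>V j. \<Sum>w'\<in>V j. ((\<Sum>u\<in>V i. adj EG u w * adj EG u w') - d^2 * Ni)^2)"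
  proof (intro sum_mono)
    fix w w' assume w: "w \<in> V j" and w': "w' \<in> V j"
    have eq: "(\<Sum>u\<in>V i. adj XE u w * adj XE u w') = (\<Sum>u\<in>V i. adj EG u w * adj EG u w')"
      by (intro sum.cong refl) (simp add: adj_XE_EG[OF i j ij _ w] adj_XE_EG[OF i j ij _ w'])
    have "p^2 * (\<Sum>u\<in>V i. adj XE u w * adj XE u w') - d'^2 * Ni
        = p^2 * ((\<Sum>u\<in>V i. adj EG u w * adj EG u w') - d^2 * Ni)"
    proof -
      have d2: "d'^2 = p^2 * d^2" using pd by (metis power_mult_distrib)
      show ?thesis unfolding eq d2 by (simp add: right_diff_distrib mult.assoc)
    qed
    then have "(p^2 * (\<Sum>u\<in>V i. adj XE u w * adj XE u w') - d'^2 * Ni)^2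
        = p^4 * ((\<Sum>u\<in>V i. adj EG u w * adj EG u w') - d^2 * Ni)^2"
      by (simp add: power_mult_distrib flip: power_mult)
    also have "\<dots> \<le> 1 * ((\<Sum>u\<in>V i. adj EG u w * adj EG u w') - d^2 * Ni)^2"
      using p_pos p_le1 by (intro mult_right_mono) (auto simp: power_le_one)
    finally show "(p^2 * (\<Sum>u\<in>V i. adj XE u w * adj XE u w') - d'^2 * Ni)^2
        \<le> ((\<Sum>u\<in>V i. adj EG u w * adj EG u w') - d^2 * Ni)^2" by simp
  qed
  also have "\<dots> \<le> 4 * \<epsilon> * Ni^2 * Nj^2"
    unfolding Ni_def Nj_def
    by (rule G_cod[OF srG[OF i j ij] fV[OF i] fV[OF j] Vdisj2[OF i j ij] e(1) _ d(2)]) (use e in simp)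
  finally show ?thesis unfolding Ni_def Nj_def by simp
qed

lemma Qf_nn: "0 \<le> Qf i j \<omega>" unfolding Qf_def by (intro sum_nonneg) auto

lemma B3_prob: "measure_pmf.prob M.\<Omega> B3 \<le> 1/4"
proof -
  define I3 where "I3 = {(i, j). i \<in> {1..r} \<and> j \<in> {1..r} \<and> i \<noteq> j}"
  have fI3: "finite I3" unfolding I3_def by (rule finite_subset[of _ "{1..r} \<times> {1..r}"]) auto
  have cI3: "real (card I3) \<le> real r^2"
  proof -
    have "card I3 \<le> card ({1..r} \<times> {1..r})" unfolding I3_def by (rule card_mono) auto
    then show ?thesis by (simp add: power2_eq_square flip: of_nat_mult)
  qed
  have dl: "\<delta> > 0" using ep by (simp add: \<delta>_def)
  define bnd where "bnd = (12 * real \<Lambda> / real n + 8 * \<epsilon>) / \<delta>"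
  have each: "measure_pmf.prob M.\<Omega> {\<omega>. Qf i j \<omega> \<ge> \<delta> * (real (card (V i)))^2 * (real (card (V j)))^2} \<le> bnd"
    if ij: "(i, j) \<in> I3" for i j
  proof -
    have i: "i \<in> {1..r}" and j: "j \<in> {1..r}" and ne: "i \<noteq> j" using ij by (auto simp: I3_def)
    define Ni where "Ni = real (card (V i))"
    define Nj where "Nj = real (card (V j))"
    have Nil: "real n / 2 \<le> Ni" and Njl: "real n / 2 \<le> Nj" using Nlow[OF i] Nlow[OF j] by (auto simp: Ni_def Nj_def)
    have np: "real n > 0" using n1 by simp
    have Nip: "Ni > 0" and Njp: "Nj > 0" using Nil Njl np by linarith+
    have cpos: "\<delta> * Ni^2 * Nj^2 > 0" using dl Nip Njp by simp
    have "measure_pmf.prob M.\<Omega> {\<omega>. Qf i j \<omega> \<ge> \<delta> * Ni^2 * Nj^2}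
        = measure (measure_pmf M.\<Omega>) {\<omega> \<in> space (measure_pmf M.\<Omega>). Qf i j \<omega> \<ge> \<delta> * Ni^2 * Nj^2}" by simp
    also have "\<dots> \<le> measure_pmf.expectation M.\<Omega> (Qf i j) / (\<delta> * Ni^2 * Nj^2)"
      by (rule integral_Markov_inequality_measure[where A=UNIV]) (auto simp: M.intO Qf_nn cpos)
    also have "\<dots> \<le> (4 * real \<Lambda> * Ni * Nj^2 + 2 * real \<Lambda> * Ni^2 * Nj + 8 * \<epsilon> * Ni^2 * Nj^2) / (\<delta> * Ni^2 * Nj^2)"
      using Qf_exp[OF i j ne] cpos unfolding Ni_def Nj_def by (intro divide_right_mono) auto
    also have "\<dots> = (4 * real \<Lambda> / Ni + 2 * real \<Lambda> / Nj + 8 * \<epsilon>) / \<delta>"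
      using Nip Njp dl by (simp add: field_simps power2_eq_square)
    also have "\<dots> \<le> bnd" unfolding bnd_def
    proof (rule divide_right_mono)
      have a: "4 * real \<Lambda> / Ni \<le> 4 * real \<Lambda> / (real n / 2)" using Nil np by (intro divide_left_mono) auto
      have b: "2 * real \<Lambda> / Nj \<le> 2 * real \<Lambda> / (real n / 2)" using Njl np by (intro divide_left_mono) auto
      have "4 * real \<Lambda> / Ni + 2 * real \<Lambda> / Nj \<le> 4 * real \<Lambda> / (real n / 2) + 2 * real \<Lambda> / (real n / 2)"
        by (rule add_mono[OF a b])
      also have "\<dots> = 12 * real \<Lambda> / real n" using np by (simp add: field_simps)
      finally show "4 * real \<Lambda> / Ni + 2 * real \<Lambda> / Nj + 8 * \<epsilon> \<le> 12 * real \<Lambda> / real n + 8 * \<epsilon>"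
        by (rule add_right_mono)
    qed (use dl in auto)
    finally show ?thesis unfolding Ni_def Nj_def .
  qed
  have "measure_pmf.prob M.\<Omega> B3 \<le> (\<Sum>(i, j)\<in>I3. measure_pmf.prob M.\<Omega>
        {\<omega>. Qf i j \<omega> \<ge> \<delta> * (real (card (V i)))^2 * (real (card (V j)))^2})"
    unfolding B3_def I3_def[symmetric] case_prod_beta by (rule measure_UNION_le[OF fI3]) simp
  also have "\<dots> \<le> (\<Sum>(i, j)\<in>I3. bnd)" by (intro sum_mono) (use each in auto)
  also have "\<dots> = real (card I3) * bnd" by simp
  also have "\<dots> \<le> real r^2 * bnd"
  proof (rule mult_right_mono[OF cI3])
    show "0 \<le> bnd" unfolding bnd_def using dl e by (intro divide_nonneg_pos) auto
  qed
  also have "\<dots> \<le> 1/4"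
  proof -
    have np: "real n > 0" using n1 by simp
    have h1: "real r^2 * (12 * real \<Lambda> / real n) \<le> \<delta> / 8"
    proof -
      have "real r^2 * (12 * real \<Lambda> / real n) = (12 * real \<Lambda> * real r^2) / real n" by simp
      also have "\<dots> \<le> \<delta> / 8" using N3 np by (simp add: \<delta>_def divide_le_eq mult_ac)
      finally show ?thesis .
    qed
    have h2: "real r^2 * (8 * \<epsilon>) \<le> \<delta> / 8"
    proof -
      have pos: "0 < 512 * real r^2" using r1 by simp
      have "\<epsilon> * (512 * real r^2) \<le> \<epsilon>'^12" using e(4) pos by (simp add: le_divide_eq)
      then have "\<epsilon> * real r^2 \<le> \<epsilon>'^12 / 512" by simp
      then show ?thesis by (simp add: \<delta>_def mult_ac)
    qed
    have "real r^2 * bnd = (real r^2 * (12 * real \<Lambda> / real n) + real r^2 * (8 * \<epsilon>)) / \<delta>"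
      unfolding bnd_def by (simp add: distrib_left)
    also have "\<dots> \<le> (\<delta> / 8 + \<delta> / 8) / \<delta>" using h1 h2 dl by (intro divide_right_mono add_mono) auto
    also have "\<dots> = 1/4" using dl by simp
    finally show ?thesis .
  qed
  finally show ?thesis .
qed

end


lemma edges_between_sym: "edges_between E S T = edges_between E T S"
  unfolding edges_between_def by (auto simp: insert_commute)

context inst
begin

lemma exists_good: "\<exists>\<omega>\<in>set_pmf M.\<Omega>. \<omega> \<notin> B1 \<and> \<omega> \<notin> B2 \<and> \<omega> \<notin> B3"
proof -
  define U where "U = B1 \<union> B2 \<union> B3"
  have "measure_pmf.prob M.\<Omega> U \<le> measure_pmf.prob M.\<Omega> (B1 \<union> B2) + measure_pmf.prob M.\<Omega> B3"
    unfolding U_def by (rule measure_Un_le) auto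
  also have "measure_pmf.prob M.\<Omega> (B1 \<union> B2) \<le> measure_pmf.prob M.\<Omega> B1 + measure_pmf.prob M.\<Omega> B2"
    by (rule measure_Un_le) auto
  finally have "measure_pmf.prob M.\<Omega> U \<le> 3/4" using B1_prob B2_prob B3_prob by linarith
  moreover have "measure_pmf.prob M.\<Omega> (UNIV - U) = 1 - measure_pmf.prob M.\<Omega> U"
    using measure_pmf.prob_compl[of U "M.\<Omega>"] by simp
  ultimately have "measure_pmf.prob M.\<Omega> (UNIV - U) \<noteq> 0" by linarith
  then have "set_pmf M.\<Omega> \<inter> (UNIV - U) \<noteq> {}" using measure_pmf_zero_iff by blast
  then show ?thesis unfolding U_def by blast
qed

lemma dp_le1: "d' \<le> 1"
proof -
  have "d * \<gamma> \<le> 1" using d g by (simp add: mult_le_one)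
  moreover have "16 \<le> 16 * real r^2" using r2 by simp
  ultimately have "d * \<gamma> / (16 * real r^2) \<le> 1" using r2 by (simp add: divide_le_eq)
  then show ?thesis using dp by linarith
qed

lemma e_le_th: "\<epsilon> \<le> \<theta> / 2" using e(3) by (simp add: \<theta>_def)
lemma ep_le1: "\<epsilon>' \<le> 1"
proof -
  have "d' \<le> 1" by (rule dp_le1)
  then have "\<gamma> * d' \<le> 1" using g dp by (simp add: mult_le_one)
  then have "\<gamma> * d' / 16 \<le> 1" by simp
  then show ?thesis using ep by linarith
qed
lemma th_pos: "0 < \<theta>" using ep by (simp add: \<theta>_def)
lemma th_le: "\<theta> \<le> \<epsilon>' / 4"
proof -
  have "\<epsilon>'^6 \<le> \<epsilon>'^1" using ep ep_le1 by (intro power_decreasing) auto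
  then show ?thesis by (simp add: \<theta>_def)
qed

context
  fixes \<omega> assumes \<omega>: "\<omega> \<in> set_pmf M.\<Omega>" and nB1: "\<omega> \<notin> B1" and nB2: "\<omega> \<notin> B2" and nB3: "\<omega> \<notin> B3"
begin

definition "EG' = M.Gp \<omega>"

lemma EG'_sub: "EG' \<subseteq> XE" unfolding EG'_def M.Gp_def by auto
lemma EG'_EG: "EG' \<subseteq> EG" using EG'_sub XE_EG by blast

lemma deg_good:
  assumes j: "j \<in> {1..r}" and v: "v \<in> VG" "v \<notin> V j"
  shows "\<bar>(\<Sum>w\<in>V j. adj EG' v w) - d' * real (card (V j))\<bar> \<le> \<theta> * real (card (V j))"
proof -
  obtain i where i: "i \<in> {1..r}" and vi: "v \<in> V i" using v VG_eq by blast
  have ij: "i \<noteq> j" using vi v by auto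
  have h1: "\<bar>(\<Sum>e\<in>Ev v j. M.Ind e \<omega>) - p * real (card (Ev v j))\<bar> < \<theta> * real (card (V j)) / 2"
  proof -
    have mem: "(v, j) \<in> {(v, j). j \<in> {1..r} \<and> v \<in> VG - V j}" using j v by simp
    have "\<omega> \<notin> {\<omega>. \<bar>(\<Sum>e\<in>Ev v j. M.Ind e \<omega>) - p * real (card (Ev v j))\<bar> \<ge> \<theta> * real (card (V j)) / 2}"
      using nB1 mem unfolding B1_def by blast
    then show ?thesis by simp
  qed
  have s1: "(\<Sum>w\<in>V j. adj EG' v w) = (\<Sum>e\<in>Ev v j. M.Ind e \<omega>)" unfolding EG'_def by (rule Ev_sum(1)[OF j])
  have s2: "real (card (Ev v j)) = (\<Sum>w\<in>V j. adj EG v w)"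
    unfolding Ev_sum(2)[OF j] by (intro sum.cong refl adj_XE_EG[OF i j ij vi])
  have h2: "\<bar>(\<Sum>w\<in>V j. adj EG v w) - d * real (card (V j))\<bar> \<le> \<epsilon> * real (card (V j))"
    by (rule sr_deg1[OF srG[OF i j ij] fV[OF j] vi])
  have "\<bar>p * (\<Sum>w\<in>V j. adj EG v w) - d' * real (card (V j))\<bar> = p * \<bar>(\<Sum>w\<in>V j. adj EG v w) - d * real (card (V j))\<bar>"
  proof -
    have dd: "d' * real (card (V j)) = p * (d * real (card (V j)))" using pd by (simp add: mult.assoc[symmetric])
    have "p * (\<Sum>w\<in>V j. adj EG v w) - d' * real (card (V j)) = p * ((\<Sum>w\<in>V j. adj EG v w) - d * real (card (V j)))"
      unfolding dd by (simp add: right_diff_distrib)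
    then show ?thesis using p_pos by (simp add: abs_mult)
  qed
  also have "\<dots> \<le> 1 * (\<epsilon> * real (card (V j)))" using h2 p_le1 p_pos by (intro mult_mono) auto
  also have "\<dots> \<le> \<theta> / 2 * real (card (V j))"
  proof -
    have "\<epsilon> * real (card (V j)) \<le> \<theta> / 2 * real (card (V j))" by (rule mult_right_mono[OF e_le_th]) simp
    then show ?thesis by simp
  qed
  finally have h3: "\<bar>p * (\<Sum>w\<in>V j. adj EG v w) - d' * real (card (V j))\<bar> \<le> \<theta> / 2 * real (card (V j))" by simp
  show ?thesis using h1 h3 unfolding s1 s2 abs_le_iff abs_less_iff by linarith
qed

lemma sr_good:
  assumes i: "i \<in> {1..r}" and j: "j \<in> {1..r}" and ij: "i \<noteq> j"
  shows "super_regular (edges_between EG' (V i) (V j)) (V i) (V j) \<epsilon>' d'"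
proof (rule sr_from_crit[where \<theta>=\<theta> and \<delta>=\<delta>])
  show "finite (V i)" "finite (V j)" using fV i j by auto
  show "V i \<inter> V j = {}" by (rule Vdisj2[OF i j ij])
  show "V i \<noteq> {}" "V j \<noteq> {}" using Vne i j by auto
  show "0 \<le> d'" using dp by simp
  show "d' \<le> 1" by (rule dp_le1)
  show "0 < \<epsilon>'" by (rule ep(1))
  show "0 \<le> \<theta>" using th_pos by simp
  show "\<theta> \<le> \<epsilon>'" using th_le ep by simp
  show "3 * \<delta> + 6 * \<theta>^2 \<le> \<epsilon>'^12" by (simp add: \<delta>_def \<theta>_def power2_eq_square power_add[symmetric])
  show "\<forall>v\<in>V i. \<bar>(\<Sum>w\<in>V j. adj EG' v w) - d' * real (card (V j))\<bar> \<le> \<theta> * real (card (V j))"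
  proof
    fix v assume v: "v \<in> V i"
    have "v \<notin> V j" using v Vdisj2[OF i j ij] by auto
    then show "\<bar>(\<Sum>w\<in>V j. adj EG' v w) - d' * real (card (V j))\<bar> \<le> \<theta> * real (card (V j))"
      using deg_good[OF j] v VsubG[OF i] by auto
  qed
  show "\<forall>w\<in>V j. \<bar>(\<Sum>u\<in>V i. adj EG' u w) - d' * real (card (V i))\<bar> \<le> \<theta> * real (card (V i))"
  proof
    fix w assume w: "w \<in> V j"
    have "w \<notin> V i" using w Vdisj2[OF i j ij] by auto
    then have "\<bar>(\<Sum>u\<in>V i. adj EG' w u) - d' * real (card (V i))\<bar> \<le> \<theta> * real (card (V i))"
      using deg_good[OF i] w VsubG[OF j] by auto
    then show "\<bar>(\<Sum>u\<in>V i. adj EG' u w) - d' * real (card (V i))\<bar> \<le> \<theta> * real (card (V i))"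
      by (simp add: adj_sym[of _ w])
  qed
  have "Qf i j \<omega> < \<delta> * (real (card (V i)))^2 * (real (card (V j)))^2"
  proof -
    have mem: "(i, j) \<in> {(i, j). i \<in> {1..r} \<and> j \<in> {1..r} \<and> i \<noteq> j}" using i j ij by simp
    have "\<omega> \<notin> {\<omega>. Qf i j \<omega> \<ge> \<delta> * (real (card (V i)))^2 * (real (card (V j)))^2}"
      using nB3 mem unfolding B3_def by blast
    then show ?thesis by simp
  qed
  then show "(\<Sum>w\<in>V j. \<Sum>w'\<in>V j. ((\<Sum>u\<in>V i. adj EG' u w * adj EG' u w') - d'^2 * real (card (V i)))^2)
      \<le> \<delta> * (real (card (V i)))^2 * (real (card (V j)))^2"
    unfolding Qf_def EG'_def by simp
qed

end

end


context inst
begin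

context
  fixes \<omega> assumes \<omega>: "\<omega> \<in> set_pmf M.\<Omega>" and nB1: "\<omega> \<notin> B1" and nB2: "\<omega> \<notin> B2" and nB3: "\<omega> \<notin> B3"
begin

lemma blow_good: "blowup_instance VH EH VG (EG' \<omega>) r X V \<epsilon>' d'"
  unfolding blowup_instance_def
proof (intro conjI)
  show "simple_graph VG (EG' \<omega>)" using sgG EG'_EG[OF \<omega> nB1 nB2 nB3] unfolding simple_graph_def by blast
  show "\<forall>i\<in>{1..r}. \<forall>j\<in>{1..r}. i \<noteq> j \<longrightarrow> super_regular (edges_between (EG' \<omega>) (V i) (V j)) (V i) (V j) \<epsilon>' d'"
    using sr_good[OF \<omega> nB1 nB2 nB3] by blast
qed (use blow in \<open>auto simp: blowup_instance_def\<close>)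

lemma omega_supp: "\<alpha> \<in> M.Cs \<Longrightarrow> \<omega> \<alpha> \<in> set_pmf (Dist \<alpha>)"
proof -
  assume a: "\<alpha> \<in> M.Cs"
  have "\<omega> \<in> PiE_dflt M.Cs {} (set_pmf \<circ> Dist)" using \<omega> unfolding M.\<Omega>_def set_Pi_pmf[OF M.fCs] .
  then show ?thesis using a unfolding PiE_dflt_def by auto
qed

lemma supp_cls: "e \<in> EG' \<omega> \<Longrightarrow> f \<in> EG' \<omega> \<Longrightarrow> c e = c f \<Longrightarrow> cls e = cls f"
proof -
  assume e: "e \<in> EG' \<omega>" and f: "f \<in> EG' \<omega>" and cef: "c e = c f"
  have eX: "e \<in> XE" and ew: "e \<in> \<omega> (c e)" using e unfolding EG'_def[OF \<omega> nB1 nB2 nB3] M.Gp_def by auto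
  have fw: "f \<in> \<omega> (c e)" using f cef unfolding EG'_def[OF \<omega> nB1 nB2 nB3] M.Gp_def by auto
  have "c e \<in> M.Cs" using eX by (simp add: M.Cs_def)
  then have "\<omega> (c e) \<in> set_pmf (Dist (c e))" by (rule omega_supp)
  then show "cls e = cls f" using cdist_support(2)[of "\<omega> (c e)"] ew fw unfolding Dist_def by blast
qed

lemma eb_pair:
  assumes i: "i \<in> {1..r}" and j: "j \<in> {1..r}" and ij: "i \<noteq> j" and e: "e \<in> edges_between EG (V i) (V j)"
  shows "e \<in> EB (min i j, max i j)" "(min i j, max i j) \<in> P"
proof -
  show "(min i j, max i j) \<in> P" using i j ij by (auto simp: P_def pairs_def min_def max_def)
  show "e \<in> EB (min i j, max i j)"
  proof (cases "i < j")
    case True then show ?thesis using e by (simp add: EB_def min_def max_def)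
  next
    case False
    then have "min i j = j" "max i j = i" using ij by auto
    then show ?thesis using e by (simp add: EB_def edges_between_sym)
  qed
qed

lemma split_good: "colour_split c (EG' \<omega>) r V"
  unfolding colour_split_def
proof (intro ballI impI)
  fix i j e f assume i: "i \<in> {1..r}" and j: "j \<in> {1..r}" and ij: "i \<noteq> j"
    and e: "e \<in> edges_between (EG' \<omega>) (V i) (V j)" and f: "f \<in> EG' \<omega> - edges_between (EG' \<omega>) (V i) (V j)"
  show "c e \<noteq> c f"
  proof
    assume cef: "c e = c f"
    have eG: "e \<in> EG' \<omega>" using e unfolding edges_between_def by auto
    have fG: "f \<in> EG' \<omega>" using f by auto
    have eEG: "e \<in> edges_between EG (V i) (V j)" using e EG'_EG[OF \<omega> nB1 nB2 nB3] unfolding edges_between_def by auto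
    have x: "(min i j, max i j) \<in> P" and ex: "e \<in> EB (min i j, max i j)" using eb_pair[OF i j ij eEG] by auto
    have "cls e = (min i j, max i j)" by (rule cls_eq[OF x ex])
    moreover have "cls e = cls f" by (rule supp_cls[OF eG fG cef])
    moreover have "f \<in> XE" using fG EG'_sub[OF \<omega> nB1 nB2 nB3] by auto
    ultimately have "f \<in> EB (min i j, max i j)" using cls_XE by metis
    then have "f \<in> edges_between EG (V i) (V j)"
    proof (cases "i < j")
      case True then show ?thesis using \<open>f \<in> EB (min i j, max i j)\<close> by (simp add: EB_def min_def max_def)
    next
      case False
      then have "min i j = j" "max i j = i" using ij by auto
      then show ?thesis using \<open>f \<in> EB (min i j, max i j)\<close> by (simp add: EB_def edges_between_sym)
    qed
    then have "f \<in> edges_between (EG' \<omega>) (V i) (V j)" using fG unfolding edges_between_def by auto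
    then show False using f by auto
  qed
qed

end

end


lemma one_minus_prod: "0 \<le> (a::real) \<Longrightarrow> 0 \<le> b \<Longrightarrow> 1 - a - b \<le> (1 - a) * (1 - b)"
  by (simp add: algebra_simps)

context inst
begin

lemma th_le2: "\<theta> \<le> \<gamma> * d' / 64" using th_le ep by simp

lemma th_le_dp: "\<theta> \<le> d'"
proof -
  have "\<gamma> * d' \<le> 64 * d'" using g dp by (intro mult_right_mono) auto
  then show ?thesis using th_le2 by linarith
qed

lemma arith_kb:
  "(1 - 5 * \<gamma> / 8) * d' * real n^2
     \<le> (1 - \<gamma> / 2) * ((d' - \<theta>) * ((1 - \<epsilon>) * real n) * ((1 - \<epsilon>) * real n))"
proof -
  have n0: "0 \<le> real n^2" by simp
  have s1: "(1 - \<gamma> / 64) * d' \<le> d' - \<theta>" using th_le2 by (simp add: algebra_simps)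
  have s2: "(1 - \<gamma> / 32) * real n^2 \<le> ((1 - \<epsilon>) * real n) * ((1 - \<epsilon>) * real n)"
  proof -
    have "1 - \<gamma> / 32 \<le> 1 - \<epsilon> - \<epsilon>" using e(5) by simp
    also have "\<dots> \<le> (1 - \<epsilon>) * (1 - \<epsilon>)" by (rule one_minus_prod) (use e in auto)
    finally have "(1 - \<gamma> / 32) * real n^2 \<le> (1 - \<epsilon>) * (1 - \<epsilon>) * real n^2" by (rule mult_right_mono) simp
    then show ?thesis by (simp add: power2_eq_square mult_ac)
  qed
  have s3: "(1 - \<gamma> / 64) * d' * ((1 - \<gamma> / 32) * real n^2) \<le> (d' - \<theta>) * (((1 - \<epsilon>) * real n) * ((1 - \<epsilon>) * real n))"
    by (rule mult_mono[OF s1 s2]) (use g dp th_le_dp in auto)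
  have s4: "1 - 5 * \<gamma> / 8 \<le> (1 - \<gamma> / 2) * ((1 - \<gamma> / 64) * (1 - \<gamma> / 32))"
  proof -
    have "1 - \<gamma>/64 - \<gamma>/32 \<le> (1 - \<gamma>/64) * (1 - \<gamma>/32)" by (rule one_minus_prod) (use g in auto)
    then have "(1 - \<gamma>/2) * (1 - \<gamma>/64 - \<gamma>/32) \<le> (1 - \<gamma>/2) * ((1 - \<gamma>/64) * (1 - \<gamma>/32))"
      by (rule mult_left_mono) (use g in auto)
    moreover have "1 - \<gamma>/2 - (\<gamma>/64 + \<gamma>/32) \<le> (1 - \<gamma>/2) * (1 - (\<gamma>/64 + \<gamma>/32))"
      by (rule one_minus_prod) (use g in auto)
    ultimately show ?thesis using g by (simp add: algebra_simps)
  qed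
  have "(1 - 5 * \<gamma> / 8) * d' * real n^2 \<le> ((1 - \<gamma> / 2) * ((1 - \<gamma> / 64) * (1 - \<gamma> / 32))) * (d' * real n^2)"
  proof -
    have "(1 - 5 * \<gamma> / 8) * (d' * real n^2) \<le> ((1 - \<gamma> / 2) * ((1 - \<gamma> / 64) * (1 - \<gamma> / 32))) * (d' * real n^2)"
      by (rule mult_right_mono[OF s4]) (use dp in simp)
    then show ?thesis by (simp add: mult.assoc)
  qed
  also have "\<dots> = (1 - \<gamma> / 2) * ((1 - \<gamma> / 64) * d' * ((1 - \<gamma> / 32) * real n^2))" by (simp add: mult_ac)
  also have "\<dots> \<le> (1 - \<gamma> / 2) * ((d' - \<theta>) * (((1 - \<epsilon>) * real n) * ((1 - \<epsilon>) * real n)))"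
    by (rule mult_left_mono[OF s3]) (use g in auto)
  finally show ?thesis by (simp add: mult_ac)
qed

context
  fixes \<omega> assumes \<omega>: "\<omega> \<in> set_pmf M.\<Omega>" and nB1: "\<omega> \<notin> B1" and nB2: "\<omega> \<notin> B2" and nB3: "\<omega> \<notin> B3"
begin

lemma eG'_low:
  assumes i: "i \<in> {1..r}" and j: "j \<in> {1..r}" and ij: "i \<noteq> j"
  shows "real (e_betw (EG' \<omega>) (V i) (V j)) \<ge> (d' - \<theta>) * real (card (V i)) * real (card (V j))"
proof -
  have "real (e_betw (EG' \<omega>) (V i) (V j)) = (\<Sum>u\<in>V i. \<Sum>w\<in>V j. adj (EG' \<omega>) u w)"
    by (rule e_betw_sum[OF Vdisj2[OF i j ij] fV[OF i] fV[OF j]])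
  also have "\<dots> \<ge> (\<Sum>u\<in>V i. (d' - \<theta>) * real (card (V j)))"
  proof (intro sum_mono)
    fix u assume u: "u \<in> V i"
    have "u \<notin> V j" using u Vdisj2[OF i j ij] by auto
    then have "\<bar>(\<Sum>w\<in>V j. adj (EG' \<omega>) u w) - d' * real (card (V j))\<bar> \<le> \<theta> * real (card (V j))"
      using deg_good[OF \<omega> nB1 nB2 nB3 j] u VsubG[OF i] by auto
    then show "(d' - \<theta>) * real (card (V j)) \<le> (\<Sum>w\<in>V j. adj (EG' \<omega>) u w)"
      by (simp add: abs_le_iff left_diff_distrib)
  qed
  finally show ?thesis by (simp add: mult_ac)
qed

lemma kb_good:
  assumes x: "(i, j) \<in> pairs r"
  shows "k_bounded c (edges_between (EG' \<omega>) (V i) (V j))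
           ((1 - \<gamma>/2) * real (e_betw (EG' \<omega>) (V i) (V j)) / real (e_betw EH (X i) (X j)))"
  unfolding k_bounded_def
proof
  fix \<alpha>
  have xP: "(i, j) \<in> P" using x by (simp add: P_def)
  have i: "i \<in> {1..r}" and j: "j \<in> {1..r}" and ij: "i \<noteq> j" using P_sub[OF xP] by auto
  define K where "K = {e\<in>edges_between (EG' \<omega>) (V i) (V j). c e = \<alpha>}"
  have eh: "eHx (i, j) \<ge> \<gamma>^2 * real n" by (rule eHx_pos[OF xP])
  have "\<gamma>^2 * real n > 0" using g n1 by simp
  then have ehp: "eHx (i, j) > 0" using eh by linarith
  have ehe: "real (e_betw EH (X i) (X j)) = eHx (i, j)" by (simp add: eHx_def)
  have Ni: "(1 - \<epsilon>) * real n \<le> real (card (V i))" and Nj: "(1 - \<epsilon>) * real n \<le> real (card (V j))"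
    using Nbounds[OF i] Nbounds[OF j] by auto
  have "\<gamma> * d' \<le> 64 * d'" using g dp by (intro mult_right_mono) auto
  then have dth: "0 \<le> d' - \<theta>" using th_le2 by linarith
  have eGl: "(d' - \<theta>) * ((1 - \<epsilon>) * real n) * ((1 - \<epsilon>) * real n) \<le> real (e_betw (EG' \<omega>) (V i) (V j))"
  proof -
    have "(d' - \<theta>) * ((1 - \<epsilon>) * real n) * ((1 - \<epsilon>) * real n) \<le> (d' - \<theta>) * real (card (V i)) * real (card (V j))"
      using Ni Nj dth e_half by (intro mult_mono) auto
    also have "\<dots> \<le> real (e_betw (EG' \<omega>) (V i) (V j))" by (rule eG'_low[OF i j ij])
    finally show ?thesis .
  qed
  have rhs_low: "(1 - 5 * \<gamma> / 8) * d' * real n^2 / eHx (i, j)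
      \<le> (1 - \<gamma>/2) * real (e_betw (EG' \<omega>) (V i) (V j)) / real (e_betw EH (X i) (X j))"
  proof -
    have "(1 - 5 * \<gamma> / 8) * d' * real n^2 \<le> (1 - \<gamma> / 2) * real (e_betw (EG' \<omega>) (V i) (V j))"
      using arith_kb mult_left_mono[OF eGl, of "1 - \<gamma>/2"] g by linarith
    then show ?thesis unfolding ehe using ehp by (intro divide_right_mono) auto
  qed
  show "real (card K) \<le> (1 - \<gamma>/2) * real (e_betw (EG' \<omega>) (V i) (V j)) / real (e_betw EH (X i) (X j))"
  proof (cases "K = {}")
    case True
    have "0 \<le> (1 - \<gamma>/2) * real (e_betw (EG' \<omega>) (V i) (V j)) / real (e_betw EH (X i) (X j))"
      using g by simp
    then show ?thesis using True by simp
  next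
    case False
    then obtain e0 where e0: "e0 \<in> K" by blast
    have e0G: "e0 \<in> EG' \<omega>" using e0 unfolding K_def edges_between_def by auto
    have e0X: "e0 \<in> XE" using e0G EG'_sub[OF \<omega> nB1 nB2 nB3] by auto
    have aC: "\<alpha> \<in> M.Cs" using e0 e0X unfolding K_def M.Cs_def by auto
    have aG: "\<alpha> \<in> c ` EG" using aC XE_EG unfolding M.Cs_def by auto
    have inEB: "e \<in> EB (i, j)" if "e \<in> K" for e
      using that EG'_EG[OF \<omega> nB1 nB2 nB3] unfolding K_def EB_def edges_between_def by auto
    have Ksub: "K \<subseteq> {e\<in>\<omega> \<alpha>. cls e = (i, j)}"
    proof
      fix e assume e: "e \<in> K"
      have "e \<in> EG' \<omega>" using e unfolding K_def edges_between_def by auto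
      then have "e \<in> \<omega> (c e)" unfolding EG'_def[OF \<omega> nB1 nB2 nB3] M.Gp_def by auto
      moreover have "c e = \<alpha>" using e unfolding K_def by auto
      moreover have "cls e = (i, j)" by (rule cls_eq[OF xP inEB[OF e]])
      ultimately show "e \<in> {e\<in>\<omega> \<alpha>. cls e = (i, j)}" by simp
    qed
    have fin: "finite {e\<in>\<omega> \<alpha>. cls e = (i, j)}"
    proof -
      have "\<omega> \<alpha> \<subseteq> {e\<in>XE. c e = \<alpha>}" using cdist_support(1)[of "\<omega> \<alpha>"] omega_supp[OF \<omega> nB1 nB2 nB3 aC] unfolding Dist_def by blast
      then show ?thesis using fXE finite_subset by (metis (no_types, lifting) mem_Collect_eq rev_finite_subset subsetI)
    qed
    have mset: "{e\<in>{e\<in>XE. c e = \<alpha>}. cls e = (i, j)} = {e\<in>edges_between EG (V i) (V j). c e = \<alpha>}"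
    proof
      show "{e\<in>{e\<in>XE. c e = \<alpha>}. cls e = (i, j)} \<subseteq> {e\<in>edges_between EG (V i) (V j). c e = \<alpha>}"
      proof
        fix e assume e: "e \<in> {e\<in>{e\<in>XE. c e = \<alpha>}. cls e = (i, j)}"
        then have "e \<in> XE" "cls e = (i, j)" "c e = \<alpha>" by auto
        then have "e \<in> EB (i, j)" using cls_XE by metis
        then show "e \<in> {e\<in>edges_between EG (V i) (V j). c e = \<alpha>}" using \<open>c e = \<alpha>\<close> by (simp add: EB_def)
      qed
      show "{e\<in>edges_between EG (V i) (V j). c e = \<alpha>} \<subseteq> {e\<in>{e\<in>XE. c e = \<alpha>}. cls e = (i, j)}"
      proof
        fix e assume e: "e \<in> {e\<in>edges_between EG (V i) (V j). c e = \<alpha>}"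
        then have "e \<in> EB (i, j)" by (simp add: EB_def)
        then show "e \<in> {e\<in>{e\<in>XE. c e = \<alpha>}. cls e = (i, j)}" using e xP cls_eq unfolding XE_def by auto
      qed
    qed
    have mcol_eq: "real (mcol \<alpha> (i, j)) = ecol \<alpha> (i, j)"
      unfolding mcol_def ecol_def e_col_def mset by simp
    have m0: "mcol \<alpha> (i, j) > 0"
    proof -
      have "e0 \<in> {e\<in>{e\<in>XE. c e = \<alpha>}. cls e = (i, j)}" using e0 e0X cls_eq[OF xP inEB[OF e0]] unfolding K_def by auto
      then show ?thesis unfolding mcol_def using fXE by (auto simp: card_gt_0_iff)
    qed
    have lt: "real (card {e\<in>\<omega> \<alpha>. cls e = (i, j)}) < real (mcol \<alpha> (i, j)) * (p / pmf (sig \<alpha>) (i, j)) + tt (i, j)"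
    proof -
      have mem: "(\<alpha>, (i, j)) \<in> {(\<alpha>, x). \<alpha> \<in> M.Cs \<and> x \<in> P \<and> mcol \<alpha> x > 0}" using aC xP m0 by simp
      have "\<omega> \<notin> {\<omega>. real (card {e\<in>\<omega> \<alpha>. cls e = (i, j)}) \<ge> real (mcol \<alpha> (i, j)) * (p / pmf (sig \<alpha>) (i, j)) + tt (i, j)}"
        using nB2 mem unfolding B2_def by blast
      then show ?thesis by simp
    qed
    have mean: "real (mcol \<alpha> (i, j)) * (p / pmf (sig \<alpha>) (i, j)) \<le> (1 - 3 * \<gamma> / 4) * d' * real n^2 / eHx (i, j)"
    proof -
      define D0 where "D0 = (1 - 3 * \<gamma> / 4) * d * real n ^ 2"
      define m where "m = real (mcol \<alpha> (i, j))"
      have D0p: "D0 > 0" using den_pos by (simp add: D0_def)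
      have mp: "m > 0" using m0 by (simp add: m_def)
      have q: "pmf (sig \<alpha>) (i, j) = m * eHx (i, j) / D0 + p"
        using sig_props[OF aG] xP mcol_eq unfolding qw_def D0_def m_def by simp
      have qlow: "m * eHx (i, j) / D0 \<le> pmf (sig \<alpha>) (i, j)" using q p_pos by simp
      have qpos: "0 < m * eHx (i, j) / D0" using mp ehp D0p by simp
      have qp: "0 < pmf (sig \<alpha>) (i, j)" using qlow qpos by linarith
      have "p / pmf (sig \<alpha>) (i, j) \<le> p / (m * eHx (i, j) / D0)"
        by (rule divide_left_mono[OF qlow]) (use p_pos mult_pos_pos[OF qp qpos] in simp_all)
      then have "m * (p / pmf (sig \<alpha>) (i, j)) \<le> m * (p / (m * eHx (i, j) / D0))"
        using mp by (intro mult_left_mono) auto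
      also have "\<dots> = p * D0 / eHx (i, j)" using mp ehp D0p by (simp add: field_simps)
      also have "p * D0 = (1 - 3 * \<gamma> / 4) * d' * real n^2" unfolding D0_def using pd by (simp add: mult_ac)
      finally show ?thesis unfolding m_def .
    qed
    have "real (card K) \<le> real (card {e\<in>\<omega> \<alpha>. cls e = (i, j)})" using card_mono[OF fin Ksub] by simp
    also have "\<dots> \<le> (1 - 3 * \<gamma> / 4) * d' * real n^2 / eHx (i, j) + tt (i, j)" using lt mean by linarith
    also have "\<dots> = (1 - 5 * \<gamma> / 8) * d' * real n^2 / eHx (i, j)"
      unfolding tt_def using ehp by (simp add: field_simps)
    also have "\<dots> \<le> (1 - \<gamma>/2) * real (e_betw (EG' \<omega>) (V i) (V j)) / real (e_betw EH (X i) (X j))" by (rule rhs_low)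
    finally show ?thesis unfolding K_def .
  qed
qed

end

theorem inst_conclusion:
  "\<exists>EG'. EG' \<subseteq> EG \<and> blowup_instance VH EH VG EG' r X V \<epsilon>' d' \<and> colour_split c EG' r V \<and>
     (\<forall>(i,j)\<in>pairs r. k_bounded c (edges_between EG' (V i) (V j))
        ((1 - \<gamma>/2) * real (e_betw EG' (V i) (V j)) / real (e_betw EH (X i) (X j))))"
proof -
  obtain \<omega> where \<omega>: "\<omega> \<in> set_pmf M.\<Omega>" and n1: "\<omega> \<notin> B1" and n2: "\<omega> \<notin> B2" and n3: "\<omega> \<notin> B3"
    using exists_good by blast
  show ?thesis
    by (rule exI[of _ "EG' \<omega>"])
       (use EG'_EG[OF \<omega> n1 n2 n3] blow_good[OF \<omega> n1 n2 n3] split_good[OF \<omega> n1 n2 n3] kb_good[OF \<omega> n1 n2 n3] in auto)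
qed

end


lemma exp_x4: "0 \<le> (x::real) \<Longrightarrow> (x / 4)^4 \<le> exp x"
proof -
  assume x: "0 \<le> x"
  have "exp x = exp (x / 4)^4" using exp_of_nat_mult[of 4 "x/4"] by simp
  moreover have "(x / 4)^4 \<le> exp (x / 4)^4"
  proof (rule power_mono)
    have "x / 4 \<le> 1 + x / 4" by simp
    also have "\<dots> \<le> exp (x / 4)" by (rule exp_ge_add_one_self)
    finally show "x / 4 \<le> exp (x / 4)" .
  qed (use x in simp)
  ultimately show ?thesis by simp
qed

lemma exp_poly_bound:
  fixes a K :: real
  assumes a: "0 < a" and K: "0 \<le> K"
  shows "\<exists>N::nat. \<forall>n\<ge>N. K * (real n)^2 * exp (- a * real n) \<le> 1/4"
proof (intro exI allI impI)
  fix n :: nat assume nN: "nat \<lceil>1024 * K / a^4\<rceil> + 1 \<le> n"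
  have n1: "real n \<ge> 1" using nN by simp
  have nb: "1024 * K / a^4 \<le> real n" using nN by linarith
  have a4: "a^4 > 0" using a by simp
  define x where "x = a * real n"
  have xp: "x > 0" using a n1 by (simp add: x_def)
  have ex: "(x / 4)^4 \<le> exp x" by (rule exp_x4) (use xp in simp)
  have x4p: "(x / 4)^4 > 0" using xp by simp
  have "K * (real n)^2 * exp (- a * real n) = K * (real n)^2 / exp x"
    by (simp add: x_def exp_minus field_simps)
  also have "\<dots> \<le> K * (real n)^2 / (x / 4)^4"
    using ex x4p K by (intro divide_left_mono) auto
  also have "\<dots> = 256 * K / (a^4 * (real n)^2)"
    using a n1 by (simp add: x_def field_simps power2_eq_square power4_eq_xxxx)
  also have "\<dots> \<le> 256 * K / (a^4 * real n)"
  proof (rule divide_left_mono)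
    show "a^4 * real n \<le> a^4 * (real n)^2" using a4 n1 by (intro mult_left_mono) (auto simp: power2_eq_square)
  qed (use K a4 n1 in auto)
  also have "\<dots> \<le> 1/4"
  proof -
    have "1024 * K \<le> real n * a^4" using nb a4 by (simp add: divide_le_eq)
    then show ?thesis using a4 n1 by (simp add: divide_le_eq mult.commute)
  qed
  finally show "K * (real n)^2 * exp (- a * real n) \<le> 1/4" .
qed

theorem lemma5p2:
  "\<forall>(d::real) (\<Lambda>::nat) (r::nat) (\<Delta>::nat). 0 < d \<and> d \<le> 1 \<and> 1 \<le> \<Lambda> \<and> 1 \<le> r \<and> 1 \<le> \<Delta> \<longrightarrow>
   (\<exists>\<gamma>0>0. \<forall>\<gamma>. 0 < \<gamma> \<and> \<gamma> \<le> \<gamma>0 \<longrightarrow>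
   (\<exists>d'0>0. \<forall>d'. 0 < d' \<and> d' \<le> d'0 \<longrightarrow>
   (\<exists>\<epsilon>'0>0. \<forall>\<epsilon>'. 0 < \<epsilon>' \<and> \<epsilon>' \<le> \<epsilon>'0 \<longrightarrow>
   (\<exists>\<epsilon>0>0. \<forall>\<epsilon>. 0 < \<epsilon> \<and> \<epsilon> \<le> \<epsilon>0 \<longrightarrow>
   (\<exists>n0::nat. \<forall>n\<ge>n0.
     \<forall>(VH::'a set) EH (VG::'b set) EG (X::nat \<Rightarrow> 'a set) (V::nat \<Rightarrow> 'b set)
       (c::'b set \<Rightarrow> 'c) (C::'c set).
       blowup_instance VH EH VG EG r X V \<epsilon> d \<and>
       max_degree_le VH EH \<Delta> \<and>
       (\<forall>(i,j)\<in>pairs r. real (e_betw EH (X i) (X j)) \<ge> \<gamma>^2 * real n) \<and>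
       (\<forall>i\<in>{1..r}. \<bar>real (card (V i)) - real n\<bar> \<le> \<epsilon> * real n) \<and>
       (\<forall>e\<in>EG. c e \<in> C) \<and> locally_bounded c EG \<Lambda> \<and>
       (\<forall>\<alpha>\<in>C. (\<Sum>(i,j)\<in>pairs r.
            real (e_col c \<alpha> EG (V i) (V j)) * real (e_betw EH (X i) (X j)))
          \<le> (1 - \<gamma>) * d * real n ^ 2)
       \<longrightarrow>
       (\<exists>EG'. EG' \<subseteq> EG \<and>
          blowup_instance VH EH VG EG' r X V \<epsilon>' d' \<and>
          colour_split c EG' r V \<and>
          (\<forall>(i,j)\<in>pairs r.
             k_bounded c (edges_between EG' (V i) (V j))
               ((1 - \<gamma>/2) * real (e_betw EG' (V i) (V j)) / real (e_betw EH (X i) (X j))))))))))"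
proof (intro allI impI)
  fix d :: real and \<Lambda> r \<Delta> :: nat
  assume h0: "0 < d \<and> d \<le> 1 \<and> 1 \<le> \<Lambda> \<and> 1 \<le> r \<and> 1 \<le> \<Delta>"
  then have d: "0 < d" "d \<le> 1" and L1: "1 \<le> \<Lambda>" and r1: "1 \<le> r" and D1: "1 \<le> \<Delta>" by auto
  have r2: "real r^2 \<ge> 1" using r1 by simp
  show "\<exists>\<gamma>0>0. \<forall>\<gamma>. 0 < \<gamma> \<and> \<gamma> \<le> \<gamma>0 \<longrightarrow>
   (\<exists>d'0>0. \<forall>d'. 0 < d' \<and> d' \<le> d'0 \<longrightarrow>
   (\<exists>\<epsilon>'0>0. \<forall>\<epsilon>'. 0 < \<epsilon>' \<and> \<epsilon>' \<le> \<epsilon>'0 \<longrightarrow>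
   (\<exists>\<epsilon>0>0. \<forall>\<epsilon>. 0 < \<epsilon> \<and> \<epsilon> \<le> \<epsilon>0 \<longrightarrow>
   (\<exists>n0::nat. \<forall>n\<ge>n0.
     \<forall>(VH::'a set) EH (VG::'b set) EG (X::nat \<Rightarrow> 'a set) (V::nat \<Rightarrow> 'b set)
       (c::'b set \<Rightarrow> 'c) (C::'c set).
       blowup_instance VH EH VG EG r X V \<epsilon> d \<and>
       max_degree_le VH EH \<Delta> \<and>
       (\<forall>(i,j)\<in>pairs r. real (e_betw EH (X i) (X j)) \<ge> \<gamma>^2 * real n) \<and>
       (\<forall>i\<in>{1..r}. \<bar>real (card (V i)) - real n\<bar> \<le> \<epsilon> * real n) \<and>
       (\<forall>e\<in>EG. c e \<in> C) \<and> locally_bounded c EG \<Lambda> \<and>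
       (\<forall>\<alpha>\<in>C. (\<Sum>(i,j)\<in>pairs r.
            real (e_col c \<alpha> EG (V i) (V j)) * real (e_betw EH (X i) (X j)))
          \<le> (1 - \<gamma>) * d * real n ^ 2)
       \<longrightarrow>
       (\<exists>EG'. EG' \<subseteq> EG \<and>
          blowup_instance VH EH VG EG' r X V \<epsilon>' d' \<and>
          colour_split c EG' r V \<and>
          (\<forall>(i,j)\<in>pairs r.
             k_bounded c (edges_between EG' (V i) (V j))
               ((1 - \<gamma>/2) * real (e_betw EG' (V i) (V j)) / real (e_betw EH (X i) (X j)))))))))"
  proof (rule exI[of _ "1/2"], intro conjI allI impI)
    fix \<gamma> :: real assume hg: "0 < \<gamma> \<and> \<gamma> \<le> 1/2"
    show "\<exists>d'0>0. \<forall>d'. 0 < d' \<and> d' \<le> d'0 \<longrightarrow>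
   (\<exists>\<epsilon>'0>0. \<forall>\<epsilon>'. 0 < \<epsilon>' \<and> \<epsilon>' \<le> \<epsilon>'0 \<longrightarrow>
   (\<exists>\<epsilon>0>0. \<forall>\<epsilon>. 0 < \<epsilon> \<and> \<epsilon> \<le> \<epsilon>0 \<longrightarrow>
   (\<exists>n0::nat. \<forall>n\<ge>n0.
     \<forall>(VH::'a set) EH (VG::'b set) EG (X::nat \<Rightarrow> 'a set) (V::nat \<Rightarrow> 'b set)
       (c::'b set \<Rightarrow> 'c) (C::'c set).
       blowup_instance VH EH VG EG r X V \<epsilon> d \<and>
       max_degree_le VH EH \<Delta> \<and>
       (\<forall>(i,j)\<in>pairs r. real (e_betw EH (X i) (X j)) \<ge> \<gamma>^2 * real n) \<and>
       (\<forall>i\<in>{1..r}. \<bar>real (card (V i)) - real n\<bar> \<le> \<epsilon> * real n) \<and>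
       (\<forall>e\<in>EG. c e \<in> C) \<and> locally_bounded c EG \<Lambda> \<and>
       (\<forall>\<alpha>\<in>C. (\<Sum>(i,j)\<in>pairs r.
            real (e_col c \<alpha> EG (V i) (V j)) * real (e_betw EH (X i) (X j)))
          \<le> (1 - \<gamma>) * d * real n ^ 2)
       \<longrightarrow>
       (\<exists>EG'. EG' \<subseteq> EG \<and>
          blowup_instance VH EH VG EG' r X V \<epsilon>' d' \<and>
          colour_split c EG' r V \<and>
          (\<forall>(i,j)\<in>pairs r.
             k_bounded c (edges_between EG' (V i) (V j))
               ((1 - \<gamma>/2) * real (e_betw EG' (V i) (V j)) / real (e_betw EH (X i) (X j))))))))"
    proof (rule exI[of _ "d * \<gamma> / (16 * real r^2)"], intro conjI allI impI)
      have g0: "0 < \<gamma>" using hg by simp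
      show "0 < d * \<gamma> / (16 * real r^2)" using d g0 r1 by simp
      fix d' :: real assume hd: "0 < d' \<and> d' \<le> d * \<gamma> / (16 * real r^2)"
      show "\<exists>\<epsilon>'0>0. \<forall>\<epsilon>'. 0 < \<epsilon>' \<and> \<epsilon>' \<le> \<epsilon>'0 \<longrightarrow>
   (\<exists>\<epsilon>0>0. \<forall>\<epsilon>. 0 < \<epsilon> \<and> \<epsilon> \<le> \<epsilon>0 \<longrightarrow>
   (\<exists>n0::nat. \<forall>n\<ge>n0.
     \<forall>(VH::'a set) EH (VG::'b set) EG (X::nat \<Rightarrow> 'a set) (V::nat \<Rightarrow> 'b set)
       (c::'b set \<Rightarrow> 'c) (C::'c set).
       blowup_instance VH EH VG EG r X V \<epsilon> d \<and>
       max_degree_le VH EH \<Delta> \<and>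
       (\<forall>(i,j)\<in>pairs r. real (e_betw EH (X i) (X j)) \<ge> \<gamma>^2 * real n) \<and>
       (\<forall>i\<in>{1..r}. \<bar>real (card (V i)) - real n\<bar> \<le> \<epsilon> * real n) \<and>
       (\<forall>e\<in>EG. c e \<in> C) \<and> locally_bounded c EG \<Lambda> \<and>
       (\<forall>\<alpha>\<in>C. (\<Sum>(i,j)\<in>pairs r.
            real (e_col c \<alpha> EG (V i) (V j)) * real (e_betw EH (X i) (X j)))
          \<le> (1 - \<gamma>) * d * real n ^ 2)
       \<longrightarrow>
       (\<exists>EG'. EG' \<subseteq> EG \<and>
          blowup_instance VH EH VG EG' r X V \<epsilon>' d' \<and>
          colour_split c EG' r V \<and>
          (\<forall>(i,j)\<in>pairs r.
             k_bounded c (edges_between EG' (V i) (V j))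
               ((1 - \<gamma>/2) * real (e_betw EG' (V i) (V j)) / real (e_betw EH (X i) (X j)))))))"
      proof (rule exI[of _ "\<gamma> * d' / 16"], intro conjI allI impI)
        show "0 < \<gamma> * d' / 16" using hg hd by simp
        fix \<epsilon>' :: real assume he': "0 < \<epsilon>' \<and> \<epsilon>' \<le> \<gamma> * d' / 16"
        define \<epsilon>0 where "\<epsilon>0 = min (d / 2) (min (\<epsilon>'^6 / 8) (min (\<epsilon>'^12 / (512 * real r^2)) (\<gamma> / 64)))"
        show "\<exists>\<epsilon>0>0. \<forall>\<epsilon>. 0 < \<epsilon> \<and> \<epsilon> \<le> \<epsilon>0 \<longrightarrow>
   (\<exists>n0::nat. \<forall>n\<ge>n0.
     \<forall>(VH::'a set) EH (VG::'b set) EG (X::nat \<Rightarrow> 'a set) (V::nat \<Rightarrow> 'b set)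
       (c::'b set \<Rightarrow> 'c) (C::'c set).
       blowup_instance VH EH VG EG r X V \<epsilon> d \<and>
       max_degree_le VH EH \<Delta> \<and>
       (\<forall>(i,j)\<in>pairs r. real (e_betw EH (X i) (X j)) \<ge> \<gamma>^2 * real n) \<and>
       (\<forall>i\<in>{1..r}. \<bar>real (card (V i)) - real n\<bar> \<le> \<epsilon> * real n) \<and>
       (\<forall>e\<in>EG. c e \<in> C) \<and> locally_bounded c EG \<Lambda> \<and>
       (\<forall>\<alpha>\<in>C. (\<Sum>(i,j)\<in>pairs r.
            real (e_col c \<alpha> EG (V i) (V j)) * real (e_betw EH (X i) (X j)))
          \<le> (1 - \<gamma>) * d * real n ^ 2)
       \<longrightarrow>
       (\<exists>EG'. EG' \<subseteq> EG \<and>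
          blowup_instance VH EH VG EG' r X V \<epsilon>' d' \<and>
          colour_split c EG' r V \<and>
          (\<forall>(i,j)\<in>pairs r.
             k_bounded c (edges_between EG' (V i) (V j))
               ((1 - \<gamma>/2) * real (e_betw EG' (V i) (V j)) / real (e_betw EH (X i) (X j))))))"
        proof (rule exI[of _ \<epsilon>0], intro conjI allI impI)
          have ep0: "0 < \<epsilon>'" using he' by simp
          have g0': "0 < \<gamma>" using hg by simp
          show "0 < \<epsilon>0" unfolding \<epsilon>0_def using d ep0 g0' r1 by simp
          fix \<epsilon> :: real assume he: "0 < \<epsilon> \<and> \<epsilon> \<le> \<epsilon>0"
          define a1 where "a1 = \<epsilon>'^12 / (64 * real \<Lambda>)"
          define a2 where "a2 = \<gamma>^2 * d'^2 / (256 * (real \<Delta>)^2 * real \<Lambda>)"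
          have a1p: "a1 > 0" using he' L1 by (simp add: a1_def)
          have a2p: "a2 > 0" using hg hd L1 D1 by (simp add: a2_def)
          obtain N1 where N1: "\<forall>n\<ge>N1. (4 * real r^2) * (real n)^2 * exp (- a1 * real n) \<le> 1/4"
            using exp_poly_bound[OF a1p, of "4 * real r^2"] by auto
          obtain N2 where N2: "\<forall>n\<ge>N2. (4 * real r^4) * (real n)^2 * exp (- a2 * real n) \<le> 1/4"
            using exp_poly_bound[OF a2p, of "4 * real r^4"] by auto
          define N3 where "N3 = nat \<lceil>96 * real \<Lambda> * real r^2 / (\<epsilon>'^12 / 8)\<rceil>"
          show "\<exists>n0::nat. \<forall>n\<ge>n0.
     \<forall>(VH::'a set) EH (VG::'b set) EG (X::nat \<Rightarrow> 'a set) (V::nat \<Rightarrow> 'b set)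
       (c::'b set \<Rightarrow> 'c) (C::'c set).
       blowup_instance VH EH VG EG r X V \<epsilon> d \<and>
       max_degree_le VH EH \<Delta> \<and>
       (\<forall>(i,j)\<in>pairs r. real (e_betw EH (X i) (X j)) \<ge> \<gamma>^2 * real n) \<and>
       (\<forall>i\<in>{1..r}. \<bar>real (card (V i)) - real n\<bar> \<le> \<epsilon> * real n) \<and>
       (\<forall>e\<in>EG. c e \<in> C) \<and> locally_bounded c EG \<Lambda> \<and>
       (\<forall>\<alpha>\<in>C. (\<Sum>(i,j)\<in>pairs r.
            real (e_col c \<alpha> EG (V i) (V j)) * real (e_betw EH (X i) (X j)))
          \<le> (1 - \<gamma>) * d * real n ^ 2)
       \<longrightarrow>
       (\<exists>EG'. EG' \<subseteq> EG \<and>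
          blowup_instance VH EH VG EG' r X V \<epsilon>' d' \<and>
          colour_split c EG' r V \<and>
          (\<forall>(i,j)\<in>pairs r.
             k_bounded c (edges_between EG' (V i) (V j))
               ((1 - \<gamma>/2) * real (e_betw EG' (V i) (V j)) / real (e_betw EH (X i) (X j)))))"
          proof (intro exI[of _ "max 1 (max N1 (max N2 N3))"] allI impI)
            fix n :: nat and VH :: "'a set" and EH :: "'a set set" and VG :: "'b set" and EG :: "'b set set"
              and X :: "nat \<Rightarrow> 'a set" and V :: "nat \<Rightarrow> 'b set" and c :: "'b set \<Rightarrow> 'c" and C :: "'c set"
            assume nge: "max 1 (max N1 (max N2 N3)) \<le> n"
            assume H: "blowup_instance VH EH VG EG r X V \<epsilon> d \<and>
       max_degree_le VH EH \<Delta> \<and>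
       (\<forall>(i,j)\<in>pairs r. real (e_betw EH (X i) (X j)) \<ge> \<gamma>^2 * real n) \<and>
       (\<forall>i\<in>{1..r}. \<bar>real (card (V i)) - real n\<bar> \<le> \<epsilon> * real n) \<and>
       (\<forall>e\<in>EG. c e \<in> C) \<and> locally_bounded c EG \<Lambda> \<and>
       (\<forall>\<alpha>\<in>C. (\<Sum>(i,j)\<in>pairs r.
            real (e_col c \<alpha> EG (V i) (V j)) * real (e_betw EH (X i) (X j)))
          \<le> (1 - \<gamma>) * d * real n ^ 2)"
            have n1: "1 \<le> n" using nge by simp
            have N1n: "4 * real r^2 * real n * exp (- (\<epsilon>'^12 / (64 * real \<Lambda>)) * real n) \<le> 1/4"
            proof -
              have "4 * real r^2 * real n * exp (- a1 * real n) \<le> 4 * real r^2 * (real n)^2 * exp (- a1 * real n)"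
                using n1 by (intro mult_right_mono mult_left_mono) (auto simp: power2_eq_square)
              also have "\<dots> \<le> 1/4" using N1 nge by auto
              finally show ?thesis by (simp add: a1_def)
            qed
            have N2n: "4 * real r^4 * (real n)^2 * exp (- (\<gamma>^2 * d'^2 / (256 * (real \<Delta>)^2 * real \<Lambda>)) * real n) \<le> 1/4"
              using N2 nge by (auto simp: a2_def)
            have N3n: "96 * real \<Lambda> * real r^2 \<le> real n * (\<epsilon>'^12 / 8)"
            proof -
              have "96 * real \<Lambda> * real r^2 / (\<epsilon>'^12 / 8) \<le> real N3" unfolding N3_def by linarith
              also have "\<dots> \<le> real n" using nge by simp
              finally show ?thesis using he' by (simp add: divide_le_eq mult_ac)
            qed
            interpret I: inst VH EH VG EG r X V c n d \<Lambda> \<Delta> \<gamma> d' \<epsilon>' \<epsilon>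
            proof
              show "\<forall>\<alpha>\<in>c ` EG. (\<Sum>(i,j)\<in>pairs r.
                  real (e_col c \<alpha> EG (V i) (V j)) * real (e_betw EH (X i) (X j))) \<le> (1 - \<gamma>) * d * real n ^ 2"
                using H by blast
              show "\<epsilon> \<le> d / 2" "\<epsilon> \<le> \<epsilon>'^6 / 8" "\<epsilon> \<le> \<epsilon>'^12 / (512 * real r^2)" "\<epsilon> \<le> \<gamma> / 64"
                using he unfolding \<epsilon>0_def by auto
            qed (use H h0 hg hd he' he n1 N1n N2n N3n in auto)
            show "\<exists>EG'. EG' \<subseteq> EG \<and>
          blowup_instance VH EH VG EG' r X V \<epsilon>' d' \<and>
          colour_split c EG' r V \<and>
          (\<forall>(i,j)\<in>pairs r.
             k_bounded c (edges_between EG' (V i) (V j))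
               ((1 - \<gamma>/2) * real (e_betw EG' (V i) (V j)) / real (e_betw EH (X i) (X j))))"
              by (rule I.inst_conclusion)
          qed
        qed
      qed
    qed
  qed (simp)
qed


end
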